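(* The operators $\tau,\bar\tau\in\operatorname{End}(\check H^{\otimes 2})$ satisfy: (i) the pentagon identity in $\operatorname{End}(\check H^{\otimes3})$: $\tau_{23}\tau_{13}\tau_{12}=\tau_{12}\tau_{23}\,({}^\bullet\pi)_{21}$; (ii) the inversion relations in $\operatorname{End}(\check H^{\otimes2})$: $\tau_{21}\bar\tau=\pi^\bullet$ and $\bar\tau\,\tau_{21}={}^\bullet\pi$.
   Context: Let $\mathcal C$ be a strict monoidal category with tensor product $\boxtimes$ and unit object $\mathbb I$ which is an Ab-category (all Hom-sets are abelian groups, composition and $\boxtimes$ are biadditive) whose ground ring $\mathsf k=\operatorname{End}(\mathbb I)$ is a field; each $\operatorname{Hom}(V,W)$ is a $\mathsf k$-vector space via $kf=k\boxtimes f$, and $\boxtimes$ is $\mathsf k$-bilinear on morphisms. An object $V$ is simple if $\operatorname{End}(V)=\mathsf k\,\mathrm{Id}_V$; for such $V$ and $f\in\operatorname{End}(V)$, $\langle f\rangle\in\mathsf k$ denotes the scalar with $f=\langle f\rangle\mathrm{Id}_V$. For objects $V_i$ write $H^{ij}_k=\operatorname{Hom}(V_k,V_i\boxtimes V_j)$ and $H^k_{ij}=\operatorname{Hom}(V_i\boxtimes V_j,V_k)$. A $\Psi$-system in $\mathcal C$ consists of (1) a family of simple objects $\{V_i\}_{i\in I}$ with $\operatorname{Hom}(V_i,V_j)=0$ for $i\neq j$; (2) an involution $i\mapsto i^*$ of $I$; (3) morphisms $b_i:\mathbb I\to V_i\boxtimes V_{i^*}$, $d_i:V_i\boxtimes V_{i^*}\to\mathbb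 I$ ($i\in I$) with $(\mathrm{Id}_{V_i}\boxtimes d_{i^*})(b_i\boxtimes\mathrm{Id}_{V_i})=\mathrm{Id}_{V_i}$ and $(d_i\boxtimes\mathrm{Id}_{V_i})(\mathrm{Id}_{V_i}\boxtimes b_{i^*})=\mathrm{Id}_{V_i}$; (4) for all $i,j\in I$ such that $H^{ij}_k\neq0$ for some $k\in I$, the morphism $\mathrm{Id}_{V_i\boxtimes V_j}$ lies in the image of the linear map $\bigoplus_{k\in I}H^{ij}_k\otimes_{\mathsf k}H^k_{ij}\to\operatorname{End}(V_i\boxtimes V_j)$, $x\otimes y\mapsto x\circ y$. Fix a $\Psi$-system in $\mathcal C$. (The spaces $H^{ij}_k,H^k_{ij}$ are finite-dimensional and the pairing $H^k_{ij}\otimes H^{ij}_k\to\mathsf k$, $x\otimes y\mapsto\langle x\circ y\rangle$, is non-degenerate.) Let $\check H=\bigoplus_{i,j,k\in I}H^{ij}_k$ with projections $\pi^{ij}_k:\check H\to H^{ij}_k$. For all $i,j,k$ choose a basis $(e^{ij}_{k\alpha})_\alpha$ of $H^{ij}_k$ and the dual basis $(e^{k\alpha}_{ij})_\alpha$ of $H^k_{ij}$, i.e. $\langle e^{k\alpha}_{ij}\circ e^{ij}_{k\beta}\rangle=\delta_{\alpha\beta}$. Define $\tau,\bar\tau\in\operatorname{End}(\check H\otimes\check H)$ by $\tau(x\otimes y)=\sum_{i,j,k,l,m,n\in I}\sum_\alpha\big((e^{k\alpha}_{ij}\boxtimes\mathrm{Id}_{V_l})\circ(\mathrm{Id}_{V_i}\boxtimes\pi^{jl}_nx)\circ\pi^{in}_my\big)\otimes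 e^{ij}_{k\alpha}$, $\bar\tau(x\otimes y)=\sum_{i,j,k,l,m,n\in I}\sum_\alpha\big((\mathrm{Id}_{V_i}\boxtimes e^{n\alpha}_{jl})\circ(\pi^{ij}_kx\boxtimes\mathrm{Id}_{V_l})\circ\pi^{kl}_my\big)\otimes e^{jl}_{n\alpha}$ (independent of the bases). For $i,j\in I$ let $g_{i,j}=1$ if $H^{ij}_k\neq0$ for some $k\in I$ and $g_{i,j}=0$ otherwise. Let ${}^\bullet\pi=\sum_{i,j,k,l,m\in I}g_{i,j}\,\pi^{il}_m\otimes\pi^{jk}_l$ and $\pi^\bullet=\sum_{i,j,k,l,m\in I}g_{j,l}\,\pi^{ij}_k\otimes\pi^{kl}_m$ in $\operatorname{End}(\check H^{\otimes2})$. For $F\in\operatorname{End}(\check H^{\otimes 2})$ and $1\le r<s\le n$, $F_{rs}\in\operatorname{End}(\check H^{\otimes n})$ acts as $F$ on the $r$-th and $s$-th tensor factors and as the identity on the others; $F_{sr}=P_{(rs)}F_{rs}P_{(rs)}$ where $P_{(rs)}$ swaps the $r$-th and $s$-th tensor factors. In particular $\tau_{21}=P_{(12)}\tau P_{(12)}$ on $\check H^{\otimes 2}$. *)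

theory Defs
  imports Main
begin

text \<open>A category is given by its type of objects 'o and type of morphisms 'm
(every element of 'm is a morphism with a domain and a codomain).  cCmp g f is g \<circ> f.
The ground ring End(I) is identified with a field 'k via c \<mapsto> c \<cdot> Id_I (a bijection
onto End(I)), and the k-vector-space structure on Hom-sets is k f = k \<boxtimes> f.\<close>

record ('o,'m,'k) mcat =
  cDom :: "'m \<Rightarrow> 'o"
  cCod :: "'m \<Rightarrow> 'o"
  cCmp :: "'m \<Rightarrow> 'm \<Rightarrow> 'm"
  cId  :: "'o \<Rightarrow> 'm"
  cTob :: "'o \<Rightarrow> 'o \<Rightarrow> 'o"
  cTmo :: "'m \<Rightarrow> 'm \<Rightarrow> 'm"
  cUn  :: "'o"
  cAdd :: "'m \<Rightarrow> 'm \<Rightarrow> 'm"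
  cZer :: "'o \<Rightarrow> 'o \<Rightarrow> 'm"
  cSml :: "'k \<Rightarrow> 'm \<Rightarrow> 'm"

definition hom :: "('o,'m,'k) mcat \<Rightarrow> 'o \<Rightarrow> 'o \<Rightarrow> 'm set" where
  "hom C A B = {f. cDom C f = A \<and> cCod C f = B}"

definition strict_monoidal_abcat :: "('o,'m,'k::field) mcat \<Rightarrow> bool" where
  "strict_monoidal_abcat C \<longleftrightarrow>
    \<comment> \<open>category\<close>
    (\<forall>A. cId C A \<in> hom C A A) \<and>
    (\<forall>f g. cDom C g = cCod C f \<longrightarrow> cCmp C g f \<in> hom C (cDom C f) (cCod C g)) \<and>
    (\<forall>f. cCmp C f (cId C (cDom C f)) = f \<and> cCmp C (cId C (cCod C f)) f = f) \<and>
    (\<forall>f g h. cDom C g = cCod C f \<and> cDom C h = cCod C g \<longrightarrow>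
        cCmp C h (cCmp C g f) = cCmp C (cCmp C h g) f) \<and>
    \<comment> \<open>strict monoidal structure\<close>
    (\<forall>f g. cTmo C f g \<in> hom C (cTob C (cDom C f) (cDom C g)) (cTob C (cCod C f) (cCod C g))) \<and>
    (\<forall>A B. cTmo C (cId C A) (cId C B) = cId C (cTob C A B)) \<and>
    (\<forall>f g f' g'. cDom C g = cCod C f \<and> cDom C g' = cCod C f' \<longrightarrow>
        cTmo C (cCmp C g f) (cCmp C g' f') = cCmp C (cTmo C g g') (cTmo C f f')) \<and>
    (\<forall>A B D. cTob C (cTob C A B) D = cTob C A (cTob C B D)) \<and>
    (\<forall>f g h. cTmo C (cTmo C f g) h = cTmo C f (cTmo C g h)) \<and>
    (\<forall>A. cTob C (cUn C) A = A \<and> cTob C A (cUn C) = A) \<and>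
    (\<forall>f. cTmo C (cId C (cUn C)) f = f \<and> cTmo C f (cId C (cUn C)) = f) \<and>
    \<comment> \<open>Hom-sets are 'k-vector spaces\<close>
    (\<forall>A B. cZer C A B \<in> hom C A B) \<and>
    (\<forall>A B f g. f \<in> hom C A B \<and> g \<in> hom C A B \<longrightarrow> cAdd C f g \<in> hom C A B) \<and>
    (\<forall>A B c f. f \<in> hom C A B \<longrightarrow> cSml C c f \<in> hom C A B) \<and>
    (\<forall>A B f g h. f \<in> hom C A B \<and> g \<in> hom C A B \<and> h \<in> hom C A B \<longrightarrow>
        cAdd C (cAdd C f g) h = cAdd C f (cAdd C g h)) \<and>
    (\<forall>A B f g. f \<in> hom C A B \<and> g \<in> hom C A B \<longrightarrow> cAdd C f g = cAdd C g f) \<and>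
    (\<forall>A B f. f \<in> hom C A B \<longrightarrow> cAdd C f (cZer C A B) = f) \<and>
    (\<forall>A B f. f \<in> hom C A B \<longrightarrow> cAdd C f (cSml C (-1) f) = cZer C A B) \<and>
    (\<forall>A B c f g. f \<in> hom C A B \<and> g \<in> hom C A B \<longrightarrow>
        cSml C c (cAdd C f g) = cAdd C (cSml C c f) (cSml C c g)) \<and>
    (\<forall>A B c d f. f \<in> hom C A B \<longrightarrow> cSml C (c + d) f = cAdd C (cSml C c f) (cSml C d f)) \<and>
    (\<forall>A B c d f. f \<in> hom C A B \<longrightarrow> cSml C (c * d) f = cSml C c (cSml C d f)) \<and>
    (\<forall>A B f. f \<in> hom C A B \<longrightarrow> cSml C 1 f = f) \<and>
    \<comment> \<open>composition is biadditive and k-bilinear\<close>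
    (\<forall>A B D f g g'. f \<in> hom C A B \<and> g \<in> hom C B D \<and> g' \<in> hom C B D \<longrightarrow>
        cCmp C (cAdd C g g') f = cAdd C (cCmp C g f) (cCmp C g' f)) \<and>
    (\<forall>A B D f f' g. f \<in> hom C A B \<and> f' \<in> hom C A B \<and> g \<in> hom C B D \<longrightarrow>
        cCmp C g (cAdd C f f') = cAdd C (cCmp C g f) (cCmp C g f')) \<and>
    (\<forall>c f g. cDom C g = cCod C f \<longrightarrow>
        cCmp C (cSml C c g) f = cSml C c (cCmp C g f) \<and> cCmp C g (cSml C c f) = cSml C c (cCmp C g f)) \<and>
    \<comment> \<open>tensor product is biadditive and k-bilinear\<close>
    (\<forall>A B f f' g. f \<in> hom C A B \<and> f' \<in> hom C A B \<longrightarrow>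
        cTmo C (cAdd C f f') g = cAdd C (cTmo C f g) (cTmo C f' g)) \<and>
    (\<forall>A B f g g'. g \<in> hom C A B \<and> g' \<in> hom C A B \<longrightarrow>
        cTmo C f (cAdd C g g') = cAdd C (cTmo C f g) (cTmo C f g')) \<and>
    (\<forall>c f g. cTmo C (cSml C c f) g = cSml C c (cTmo C f g) \<and> cTmo C f (cSml C c g) = cSml C c (cTmo C f g)) \<and>
    \<comment> \<open>ground field: k f = k \<boxtimes> f, and k \<mapsto> k Id_I is a bijection onto End(I)\<close>
    (\<forall>c f. cSml C c f = cTmo C (cSml C c (cId C (cUn C))) f) \<and>
    bij_betw (\<lambda>c. cSml C c (cId C (cUn C))) UNIV (hom C (cUn C) (cUn C))"

definition msum :: "('o,'m,'k) mcat \<Rightarrow> 'o \<Rightarrow> 'o \<Rightarrow> 'm list \<Rightarrow> 'm" where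
  "msum C A B fs = foldr (cAdd C) fs (cZer C A B)"

definition lcomb :: "('o,'m,'k) mcat \<Rightarrow> 'o \<Rightarrow> 'o \<Rightarrow> nat \<Rightarrow> (nat \<Rightarrow> 'k) \<Rightarrow> (nat \<Rightarrow> 'm) \<Rightarrow> 'm" where
  "lcomb C A B n c e = msum C A B (map (\<lambda>a. cSml C (c a) (e a)) [0..<n])"

definition is_basis :: "('o,'m,'k::field) mcat \<Rightarrow> 'o \<Rightarrow> 'o \<Rightarrow> nat \<Rightarrow> (nat \<Rightarrow> 'm) \<Rightarrow> bool" where
  "is_basis C A B n e \<longleftrightarrow>
     (\<forall>a<n. e a \<in> hom C A B) \<and>
     (\<forall>f\<in>hom C A B. \<exists>c. f = lcomb C A B n c e) \<and>
     (\<forall>c. lcomb C A B n c e = cZer C A B \<longrightarrow> (\<forall>a<n. c a = 0))"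

definition simple_obj :: "('o,'m,'k::field) mcat \<Rightarrow> 'o \<Rightarrow> bool" where
  "simple_obj C V \<longleftrightarrow> cId C V \<noteq> cZer C V V \<and> hom C V V = {cSml C c (cId C V) | c. True}"

definition scal :: "('o,'m,'k::field) mcat \<Rightarrow> 'o \<Rightarrow> 'm \<Rightarrow> 'k" where
  "scal C V f = (THE c. f = cSml C c (cId C V))"

text \<open>H^{ij}_k = Hom(V_k, V_i \<boxtimes> V_j) and H^k_{ij} = Hom(V_i \<boxtimes> V_j, V_k).\<close>
definition Hup :: "('o,'m,'k) mcat \<Rightarrow> ('i \<Rightarrow> 'o) \<Rightarrow> 'i \<Rightarrow> 'i \<Rightarrow> 'i \<Rightarrow> 'm set" where
  "Hup C V i j k = hom C (V k) (cTob C (V i) (V j))"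

definition Hdn :: "('o,'m,'k) mcat \<Rightarrow> ('i \<Rightarrow> 'o) \<Rightarrow> 'i \<Rightarrow> 'i \<Rightarrow> 'i \<Rightarrow> 'm set" where
  "Hdn C V i j k = hom C (cTob C (V i) (V j)) (V k)"

definition psi_system :: "('o,'m,'k::field) mcat \<Rightarrow> 'i set \<Rightarrow> ('i \<Rightarrow> 'o) \<Rightarrow> ('i \<Rightarrow> 'i)
    \<Rightarrow> ('i \<Rightarrow> 'm) \<Rightarrow> ('i \<Rightarrow> 'm) \<Rightarrow> bool" where
  "psi_system C I V st b d \<longleftrightarrow>
     strict_monoidal_abcat C \<and>
     (\<forall>i\<in>I. simple_obj C (V i)) \<and>
     (\<forall>i\<in>I. \<forall>j\<in>I. i \<noteq> j \<longrightarrow> hom C (V i) (V j) = {cZer C (V i) (V j)}) \<and>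
     (\<forall>i\<in>I. st i \<in> I \<and> st (st i) = i) \<and>
     (\<forall>i\<in>I. b i \<in> hom C (cUn C) (cTob C (V i) (V (st i))) \<and>
             d i \<in> hom C (cTob C (V i) (V (st i))) (cUn C)) \<and>
     (\<forall>i\<in>I. cCmp C (cTmo C (cId C (V i)) (d (st i))) (cTmo C (b i) (cId C (V i))) = cId C (V i) \<and>
             cCmp C (cTmo C (d i) (cId C (V i))) (cTmo C (cId C (V i)) (b (st i))) = cId C (V i)) \<and>
     (\<forall>i\<in>I. \<forall>j\<in>I. (\<exists>k\<in>I. Hup C V i j k \<noteq> {cZer C (V k) (cTob C (V i) (V j))}) \<longrightarrow>
        (\<exists>xs. set xs \<subseteq> {(x, y). \<exists>k\<in>I. x \<in> Hup C V i j k \<and> y \<in> Hdn C V i j k} \<and>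
              cId C (cTob C (V i) (V j)) =
                msum C (cTob C (V i) (V j)) (cTob C (V i) (V j)) (map (\<lambda>(x, y). cCmp C x y) xs)))"

text \<open>Chosen bases (e^{ij}_{k\<alpha>})_{\<alpha> < N i j k} of H^{ij}_k and dual bases (e^{k\<alpha>}_{ij}) of H^k_{ij}.\<close>
definition dual_bases :: "('o,'m,'k::field) mcat \<Rightarrow> 'i set \<Rightarrow> ('i \<Rightarrow> 'o) \<Rightarrow> ('i \<Rightarrow> 'i \<Rightarrow> 'i \<Rightarrow> nat)
    \<Rightarrow> ('i \<Rightarrow> 'i \<Rightarrow> 'i \<Rightarrow> nat \<Rightarrow> 'm) \<Rightarrow> ('i \<Rightarrow> 'i \<Rightarrow> 'i \<Rightarrow> nat \<Rightarrow> 'm) \<Rightarrow> bool" where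
  "dual_bases C I V N eb ed \<longleftrightarrow>
     (\<forall>i\<in>I. \<forall>j\<in>I. \<forall>k\<in>I.
        is_basis C (V k) (cTob C (V i) (V j)) (N i j k) (eb i j k) \<and>
        is_basis C (cTob C (V i) (V j)) (V k) (N i j k) (ed i j k) \<and>
        (\<forall>a<N i j k. \<forall>b<N i j k. scal C (V k) (cCmp C (ed i j k a) (eb i j k b)) = (if a = b then 1 else 0)))"

text \<open>\<check>H has the basis e^{ij}_{k\<alpha>}, indexed by (i,j,k,\<alpha>) \<in> bidx I N.  An element of
\<check>H^{\<otimes>n} is represented by its (finitely supported) coefficient function on n-tuples of
basis indices.\<close>

definition bidx :: "'i set \<Rightarrow> ('i \<Rightarrow> 'i \<Rightarrow> 'i \<Rightarrow> nat) \<Rightarrow> ('i \<times> 'i \<times> 'i \<times> nat) set" where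
  "bidx I N = {(i, j, k, a). i \<in> I \<and> j \<in> I \<and> k \<in> I \<and> a < N i j k}"

definition inT2 :: "'i set \<Rightarrow> ('i \<Rightarrow> 'i \<Rightarrow> 'i \<Rightarrow> nat) \<Rightarrow> (('i\<times>'i\<times>'i\<times>nat) \<Rightarrow> ('i\<times>'i\<times>'i\<times>nat) \<Rightarrow> 'k::zero) \<Rightarrow> bool" where
  "inT2 I N v \<longleftrightarrow> finite {(p, q). v p q \<noteq> 0} \<and>
     (\<forall>p q. v p q \<noteq> 0 \<longrightarrow> p \<in> bidx I N \<and> q \<in> bidx I N)"

definition inT3 :: "'i set \<Rightarrow> ('i \<Rightarrow> 'i \<Rightarrow> 'i \<Rightarrow> nat)
    \<Rightarrow> (('i\<times>'i\<times>'i\<times>nat) \<Rightarrow> ('i\<times>'i\<times>'i\<times>nat) \<Rightarrow> ('i\<times>'i\<times>'i\<times>nat) \<Rightarrow> 'k::zero) \<Rightarrow> bool" where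
  "inT3 I N v \<longleftrightarrow> finite {(p, q, r). v p q r \<noteq> 0} \<and>
     (\<forall>p q r. v p q r \<noteq> 0 \<longrightarrow> p \<in> bidx I N \<and> q \<in> bidx I N \<and> r \<in> bidx I N)"

definition fsum :: "('s \<Rightarrow> 'k::comm_monoid_add) \<Rightarrow> 's set \<Rightarrow> 'k" where
  "fsum f S = sum f {s \<in> S. f s \<noteq> 0}"

text \<open>Inclusion H^{ab}_c \<rightarrow> \<check>H in coordinates: the coefficient of e^{ab}_{c\<delta>} in f is
\<langle>e^{c\<delta>}_{ab} \<circ> f\<rangle>.\<close>
definition hc :: "('o,'m,'k::field) mcat \<Rightarrow> ('i \<Rightarrow> 'o) \<Rightarrow> ('i \<Rightarrow> 'i \<Rightarrow> 'i \<Rightarrow> nat)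
    \<Rightarrow> ('i \<Rightarrow> 'i \<Rightarrow> 'i \<Rightarrow> nat \<Rightarrow> 'm) \<Rightarrow> 'i \<Rightarrow> 'i \<Rightarrow> 'i \<Rightarrow> 'm \<Rightarrow> ('i\<times>'i\<times>'i\<times>nat) \<Rightarrow> 'k" where
  "hc C V N ed a b c f = (\<lambda>(a', b', c', d).
     if a' = a \<and> b' = b \<and> c' = c \<and> d < N a b c
     then scal C (V c) (cCmp C (ed a b c d) f) else 0)"

definition proj :: "('o,'m,'k::field) mcat \<Rightarrow> ('i \<Rightarrow> 'o) \<Rightarrow> ('i \<Rightarrow> 'i \<Rightarrow> 'i \<Rightarrow> nat)
    \<Rightarrow> ('i \<Rightarrow> 'i \<Rightarrow> 'i \<Rightarrow> nat \<Rightarrow> 'm) \<Rightarrow> (('i\<times>'i\<times>'i\<times>nat) \<Rightarrow> 'k) \<Rightarrow> 'i \<Rightarrow> 'i \<Rightarrow> 'i \<Rightarrow> 'm" where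
  "proj C V N eb x i j k = lcomb C (V k) (cTob C (V i) (V j)) (N i j k) (\<lambda>a. x (i, j, k, a)) (eb i j k)"

definition tens :: "('b \<Rightarrow> 'k::times) \<Rightarrow> ('b \<Rightarrow> 'k) \<Rightarrow> 'b \<Rightarrow> 'b \<Rightarrow> 'k" where
  "tens u w = (\<lambda>p q. u p * w q)"

definition ev :: "'b \<Rightarrow> 'b \<Rightarrow> 'k::{zero,one}" where
  "ev b = (\<lambda>b'. if b' = b then 1 else 0)"

text \<open>Linear extension to \<check>H^{\<otimes>2} of an operator given on pure tensors of basis vectors.\<close>
definition linext :: "(('b \<Rightarrow> 'k) \<Rightarrow> ('b \<Rightarrow> 'k) \<Rightarrow> 'b \<Rightarrow> 'b \<Rightarrow> 'k::field) \<Rightarrow> ('b \<Rightarrow> 'b \<Rightarrow> 'k) \<Rightarrow> 'b \<Rightarrow> 'b \<Rightarrow> 'k" where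
  "linext F v = (\<lambda>p q. fsum (\<lambda>(b, c). v b c * F (ev b) (ev c) p q) UNIV)"

definition idx7 :: "'i set \<Rightarrow> ('i \<Rightarrow> 'i \<Rightarrow> 'i \<Rightarrow> 'i \<Rightarrow> 'i \<Rightarrow> 'i \<Rightarrow> nat) \<Rightarrow> ('i\<times>'i\<times>'i\<times>'i\<times>'i\<times>'i\<times>nat) set" where
  "idx7 I M = {(i, j, k, l, m, n, a). i \<in> I \<and> j \<in> I \<and> k \<in> I \<and> l \<in> I \<and> m \<in> I \<and> n \<in> I \<and> a < M i j k l m n}"

text \<open>\<tau>(x \<otimes> y) = \<Sum> ((e^{k\<alpha>}_{ij} \<boxtimes> Id_{V_l}) \<circ> (Id_{V_i} \<boxtimes> \<pi>^{jl}_n x) \<circ> \<pi>^{in}_m y) \<otimes> e^{ij}_{k\<alpha>}\<close>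
definition tau_pure :: "('o,'m,'k::field) mcat \<Rightarrow> 'i set \<Rightarrow> ('i \<Rightarrow> 'o) \<Rightarrow> ('i \<Rightarrow> 'i \<Rightarrow> 'i \<Rightarrow> nat)
    \<Rightarrow> ('i \<Rightarrow> 'i \<Rightarrow> 'i \<Rightarrow> nat \<Rightarrow> 'm) \<Rightarrow> ('i \<Rightarrow> 'i \<Rightarrow> 'i \<Rightarrow> nat \<Rightarrow> 'm)
    \<Rightarrow> (('i\<times>'i\<times>'i\<times>nat) \<Rightarrow> 'k) \<Rightarrow> (('i\<times>'i\<times>'i\<times>nat) \<Rightarrow> 'k) \<Rightarrow> ('i\<times>'i\<times>'i\<times>nat) \<Rightarrow> ('i\<times>'i\<times>'i\<times>nat) \<Rightarrow> 'k" where
  "tau_pure C I V N eb ed x y = (\<lambda>p q. fsum (\<lambda>(i, j, k, l, m, n, a).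
      tens (hc C V N ed k l m
              (cCmp C (cCmp C (cTmo C (ed i j k a) (cId C (V l)))
                               (cTmo C (cId C (V i)) (proj C V N eb x j l n)))
                      (proj C V N eb y i n m)))
           (hc C V N ed i j k (eb i j k a)) p q)
      (idx7 I (\<lambda>i j k l m n. N i j k)))"

text \<open>\<bar>\<tau>(x \<otimes> y) = \<Sum> ((Id_{V_i} \<boxtimes> e^{n\<alpha>}_{jl}) \<circ> (\<pi>^{ij}_k x \<boxtimes> Id_{V_l}) \<circ> \<pi>^{kl}_m y) \<otimes> e^{jl}_{n\<alpha>}\<close>
definition taubar_pure :: "('o,'m,'k::field) mcat \<Rightarrow> 'i set \<Rightarrow> ('i \<Rightarrow> 'o) \<Rightarrow> ('i \<Rightarrow> 'i \<Rightarrow> 'i \<Rightarrow> nat)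
    \<Rightarrow> ('i \<Rightarrow> 'i \<Rightarrow> 'i \<Rightarrow> nat \<Rightarrow> 'm) \<Rightarrow> ('i \<Rightarrow> 'i \<Rightarrow> 'i \<Rightarrow> nat \<Rightarrow> 'm)
    \<Rightarrow> (('i\<times>'i\<times>'i\<times>nat) \<Rightarrow> 'k) \<Rightarrow> (('i\<times>'i\<times>'i\<times>nat) \<Rightarrow> 'k) \<Rightarrow> ('i\<times>'i\<times>'i\<times>nat) \<Rightarrow> ('i\<times>'i\<times>'i\<times>nat) \<Rightarrow> 'k" where
  "taubar_pure C I V N eb ed x y = (\<lambda>p q. fsum (\<lambda>(i, j, k, l, m, n, a).
      tens (hc C V N ed i n m
              (cCmp C (cCmp C (cTmo C (cId C (V i)) (ed j l n a))
                               (cTmo C (proj C V N eb x i j k) (cId C (V l))))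
                      (proj C V N eb y k l m)))
           (hc C V N ed j l n (eb j l n a)) p q)
      (idx7 I (\<lambda>i j k l m n. N j l n)))"

definition tau where
  "tau C I V N eb ed = linext (tau_pure C I V N eb ed)"

definition taubar where
  "taubar C I V N eb ed = linext (taubar_pure C I V N eb ed)"

definition gg :: "('o,'m,'k) mcat \<Rightarrow> 'i set \<Rightarrow> ('i \<Rightarrow> 'o) \<Rightarrow> 'i \<Rightarrow> 'i \<Rightarrow> bool" where
  "gg C I V i j \<longleftrightarrow> (\<exists>k\<in>I. Hup C V i j k \<noteq> {cZer C (V k) (cTob C (V i) (V j))})"

text \<open>^\<bullet>\<pi> = \<Sum> g_{i,j} \<pi>^{il}_m \<otimes> \<pi>^{jk}_l  and  \<pi>^\<bullet> = \<Sum> g_{j,l} \<pi>^{ij}_k \<otimes> \<pi>^{kl}_m, in coordinates.\<close>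
definition lpi :: "('o,'m,'k::zero) mcat \<Rightarrow> 'i set \<Rightarrow> ('i \<Rightarrow> 'o) \<Rightarrow> ('i \<Rightarrow> 'i \<Rightarrow> 'i \<Rightarrow> nat)
    \<Rightarrow> ('i\<times>'i\<times>'i\<times>nat \<Rightarrow> 'i\<times>'i\<times>'i\<times>nat \<Rightarrow> 'k) \<Rightarrow> 'i\<times>'i\<times>'i\<times>nat \<Rightarrow> 'i\<times>'i\<times>'i\<times>nat \<Rightarrow> 'k" where
  "lpi C I V N v = (\<lambda>p q. case p of (i, l, m, a) \<Rightarrow> case q of (j, k, l', b) \<Rightarrow>
      if p \<in> bidx I N \<and> q \<in> bidx I N \<and> l' = l \<and> gg C I V i j then v p q else 0)"

definition rpi :: "('o,'m,'k::zero) mcat \<Rightarrow> 'i set \<Rightarrow> ('i \<Rightarrow> 'o) \<Rightarrow> ('i \<Rightarrow> 'i \<Rightarrow> 'i \<Rightarrow> nat)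
    \<Rightarrow> ('i\<times>'i\<times>'i\<times>nat \<Rightarrow> 'i\<times>'i\<times>'i\<times>nat \<Rightarrow> 'k) \<Rightarrow> 'i\<times>'i\<times>'i\<times>nat \<Rightarrow> 'i\<times>'i\<times>'i\<times>nat \<Rightarrow> 'k" where
  "rpi C I V N v = (\<lambda>p q. case p of (i, j, k, a) \<Rightarrow> case q of (k', l, m, b) \<Rightarrow>
      if p \<in> bidx I N \<and> q \<in> bidx I N \<and> k' = k \<and> gg C I V j l then v p q else 0)"

definition op12 :: "(('b \<Rightarrow> 'b \<Rightarrow> 'k) \<Rightarrow> 'b \<Rightarrow> 'b \<Rightarrow> 'k) \<Rightarrow> ('b \<Rightarrow> 'b \<Rightarrow> 'b \<Rightarrow> 'k) \<Rightarrow> 'b \<Rightarrow> 'b \<Rightarrow> 'b \<Rightarrow> 'k" where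
  "op12 F v = (\<lambda>p q r. F (\<lambda>b c. v b c r) p q)"
definition op23 :: "(('b \<Rightarrow> 'b \<Rightarrow> 'k) \<Rightarrow> 'b \<Rightarrow> 'b \<Rightarrow> 'k) \<Rightarrow> ('b \<Rightarrow> 'b \<Rightarrow> 'b \<Rightarrow> 'k) \<Rightarrow> 'b \<Rightarrow> 'b \<Rightarrow> 'b \<Rightarrow> 'k" where
  "op23 F v = (\<lambda>p q r. F (\<lambda>b c. v p b c) q r)"
definition op13 :: "(('b \<Rightarrow> 'b \<Rightarrow> 'k) \<Rightarrow> 'b \<Rightarrow> 'b \<Rightarrow> 'k) \<Rightarrow> ('b \<Rightarrow> 'b \<Rightarrow> 'b \<Rightarrow> 'k) \<Rightarrow> 'b \<Rightarrow> 'b \<Rightarrow> 'b \<Rightarrow> 'k" where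
  "op13 F v = (\<lambda>p q r. F (\<lambda>b c. v b q c) p r)"
text \<open>F_{21} = P_{(12)} F_{12} P_{(12)} on \<check>H^{\<otimes>3} and on \<check>H^{\<otimes>2}.\<close>
definition op21_3 :: "(('b \<Rightarrow> 'b \<Rightarrow> 'k) \<Rightarrow> 'b \<Rightarrow> 'b \<Rightarrow> 'k) \<Rightarrow> ('b \<Rightarrow> 'b \<Rightarrow> 'b \<Rightarrow> 'k) \<Rightarrow> 'b \<Rightarrow> 'b \<Rightarrow> 'b \<Rightarrow> 'k" where
  "op21_3 F v = (\<lambda>p q r. F (\<lambda>b c. v c b r) q p)"
definition op21 :: "(('b \<Rightarrow> 'b \<Rightarrow> 'k) \<Rightarrow> 'b \<Rightarrow> 'b \<Rightarrow> 'k) \<Rightarrow> ('b \<Rightarrow> 'b \<Rightarrow> 'k) \<Rightarrow> 'b \<Rightarrow> 'b \<Rightarrow> 'k" where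
  "op21 F v = (\<lambda>p q. F (\<lambda>b c. v c b) q p)"

end

theory Submission
  imports Defs
begin


locale psi_ctx =
  fixes C :: "('o,'m,'k::field) mcat"
    and I :: "'i set" and V :: "'i \<Rightarrow> 'o" and st :: "'i \<Rightarrow> 'i"
    and bq dq :: "'i \<Rightarrow> 'm"
    and N :: "'i \<Rightarrow> 'i \<Rightarrow> 'i \<Rightarrow> nat"
    and eb ed :: "'i \<Rightarrow> 'i \<Rightarrow> 'i \<Rightarrow> nat \<Rightarrow> 'm"
  assumes psi: "psi_system C I V st bq dq"
    and db: "dual_bases C I V N eb ed"
begin

abbreviation cp (infixl "\<odot>" 70) where "g \<odot> f \<equiv> cCmp C g f"
abbreviation tm (infixl "\<boxtimes>" 75) where "f \<boxtimes> g \<equiv> cTmo C f g"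
abbreviation to (infixl "\<otimes>" 75) where "A \<otimes> B \<equiv> cTob C A B"
abbreviation Hm where "Hm A B \<equiv> hom C A B"
abbreviation idm where "idm A \<equiv> cId C A"
abbreviation ad where "ad f g \<equiv> cAdd C f g"
abbreviation sm where "sm c f \<equiv> cSml C c f"
abbreviation zr where "zr A B \<equiv> cZer C A B"

lemma smc: "strict_monoidal_abcat C" using psi unfolding psi_system_def by blast
lemmas r0 = smc[unfolded strict_monoidal_abcat_def]
lemmas ax1 = r0[THEN conjunct1]
lemmas r1 = r0[THEN conjunct2]
lemmas ax2 = r1[THEN conjunct1]
lemmas r2 = r1[THEN conjunct2]
lemmas ax3 = r2[THEN conjunct1]
lemmas r3 = r2[THEN conjunct2]
lemmas ax4 = r3[THEN conjunct1]
lemmas r4 = r3[THEN conjunct2]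
lemmas ax5 = r4[THEN conjunct1]
lemmas r5 = r4[THEN conjunct2]
lemmas ax6 = r5[THEN conjunct1]
lemmas r6 = r5[THEN conjunct2]
lemmas ax7 = r6[THEN conjunct1]
lemmas r7 = r6[THEN conjunct2]
lemmas ax8 = r7[THEN conjunct1]
lemmas r8 = r7[THEN conjunct2]
lemmas ax9 = r8[THEN conjunct1]
lemmas r9 = r8[THEN conjunct2]
lemmas ax10 = r9[THEN conjunct1]
lemmas r10 = r9[THEN conjunct2]
lemmas ax11 = r10[THEN conjunct1]
lemmas r11 = r10[THEN conjunct2]
lemmas ax12 = r11[THEN conjunct1]
lemmas r12 = r11[THEN conjunct2]
lemmas ax13 = r12[THEN conjunct1]
lemmas r13 = r12[THEN conjunct2]
lemmas ax14 = r13[THEN conjunct1]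
lemmas r14 = r13[THEN conjunct2]
lemmas ax15 = r14[THEN conjunct1]
lemmas r15 = r14[THEN conjunct2]
lemmas ax16 = r15[THEN conjunct1]
lemmas r16 = r15[THEN conjunct2]
lemmas ax17 = r16[THEN conjunct1]
lemmas r17 = r16[THEN conjunct2]
lemmas ax18 = r17[THEN conjunct1]
lemmas r18 = r17[THEN conjunct2]
lemmas ax19 = r18[THEN conjunct1]
lemmas r19 = r18[THEN conjunct2]
lemmas ax20 = r19[THEN conjunct1]
lemmas r20 = r19[THEN conjunct2]
lemmas ax21 = r20[THEN conjunct1]
lemmas r21 = r20[THEN conjunct2]
lemmas ax22 = r21[THEN conjunct1]
lemmas r22 = r21[THEN conjunct2]
lemmas ax23 = r22[THEN conjunct1]
lemmas r23 = r22[THEN conjunct2]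
lemmas ax24 = r23[THEN conjunct1]
lemmas r24 = r23[THEN conjunct2]
lemmas ax25 = r24[THEN conjunct1]
lemmas r25 = r24[THEN conjunct2]
lemmas ax26 = r25[THEN conjunct1]
lemmas r26 = r25[THEN conjunct2]
lemmas ax27 = r26[THEN conjunct1]
lemmas r27 = r26[THEN conjunct2]
lemmas ax28 = r27[THEN conjunct1]
lemmas r28 = r27[THEN conjunct2]
lemmas ax29 = r28[THEN conjunct1]
lemmas r29 = r28[THEN conjunct2]
lemmas ax30 = r29

lemma hom_iff: "f \<in> Hm A B \<longleftrightarrow> cDom C f = A \<and> cCod C f = B" by (simp add: hom_def)

lemma id_hom[simp,intro]: "idm A \<in> Hm A A" using ax1 by blast

lemma comp_hom[intro]: "f \<in> Hm A B \<Longrightarrow> g \<in> Hm B D \<Longrightarrow> g \<odot> f \<in> Hm A D"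
  using ax2 by (auto simp: hom_iff)

lemma id_l: "f \<in> Hm A B \<Longrightarrow> idm B \<odot> f = f"
  using ax3 by (auto simp: hom_iff)
lemma id_r: "f \<in> Hm A B \<Longrightarrow> f \<odot> idm A = f"
  using ax3 by (auto simp: hom_iff)

lemma assoc: "f \<in> Hm A B \<Longrightarrow> g \<in> Hm B D \<Longrightarrow> h \<in> Hm D E \<Longrightarrow> h \<odot> (g \<odot> f) = (h \<odot> g) \<odot> f"
  using ax4 by (auto simp: hom_iff)

lemma tm_hom[intro]: "f \<in> Hm A B \<Longrightarrow> g \<in> Hm A' B' \<Longrightarrow> f \<boxtimes> g \<in> Hm (A \<otimes> A') (B \<otimes> B')"
proof -
  assume f: "f \<in> Hm A B" and g: "g \<in> Hm A' B'"
  from ax5 have "f \<boxtimes> g \<in> Hm (cDom C f \<otimes> cDom C g) (cCod C f \<otimes> cCod C g)" by blast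
  with f g show ?thesis by (auto simp: hom_iff)
qed

lemma tm_id[simp]: "idm A \<boxtimes> idm B = idm (A \<otimes> B)" using ax6 by blast

lemma interchange: "f \<in> Hm A B \<Longrightarrow> g \<in> Hm B D \<Longrightarrow> f' \<in> Hm A' B' \<Longrightarrow> g' \<in> Hm B' D' \<Longrightarrow>
   (g \<odot> f) \<boxtimes> (g' \<odot> f') = (g \<boxtimes> g') \<odot> (f \<boxtimes> f')"
  using ax7 by (auto simp: hom_iff)

lemma tob_assoc[simp]: "(A \<otimes> B) \<otimes> D = A \<otimes> (B \<otimes> D)" using ax8 by blast
lemma tm_assoc[simp]: "(f \<boxtimes> g) \<boxtimes> h = f \<boxtimes> (g \<boxtimes> h)" using ax9 by blast
lemma tob_unit[simp]: "cUn C \<otimes> A = A" "A \<otimes> cUn C = A" using ax10 by blast+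
lemma tm_unit[simp]: "idm (cUn C) \<boxtimes> f = f" "f \<boxtimes> idm (cUn C) = f" using ax11 by blast+

lemma zr_hom[simp,intro]: "zr A B \<in> Hm A B" using ax12 by blast
lemma ad_hom[intro]: "f \<in> Hm A B \<Longrightarrow> g \<in> Hm A B \<Longrightarrow> ad f g \<in> Hm A B" using ax13 by blast
lemma sm_hom[intro]: "f \<in> Hm A B \<Longrightarrow> sm c f \<in> Hm A B" using ax14 by blast
lemma ad_assoc: "f \<in> Hm A B \<Longrightarrow> g \<in> Hm A B \<Longrightarrow> h \<in> Hm A B \<Longrightarrow> ad (ad f g) h = ad f (ad g h)"
  using ax15 by blast
lemma ad_comm: "f \<in> Hm A B \<Longrightarrow> g \<in> Hm A B \<Longrightarrow> ad f g = ad g f" using ax16 by blast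
lemma ad_zr: "f \<in> Hm A B \<Longrightarrow> ad f (zr A B) = f" using ax17 by blast
lemma ad_neg: "f \<in> Hm A B \<Longrightarrow> ad f (sm (-1) f) = zr A B" using ax18 by blast
lemma sm_ad: "f \<in> Hm A B \<Longrightarrow> g \<in> Hm A B \<Longrightarrow> sm c (ad f g) = ad (sm c f) (sm c g)"
  using ax19 by blast
lemma add_sm: "f \<in> Hm A B \<Longrightarrow> sm (c + d) f = ad (sm c f) (sm d f)" using ax20 by blast
lemma mult_sm: "f \<in> Hm A B \<Longrightarrow> sm (c * d) f = sm c (sm d f)" using ax21 by blast
lemma one_sm: "f \<in> Hm A B \<Longrightarrow> sm 1 f = f" using ax22 by blast

lemma comp_ad_l: "f \<in> Hm A B \<Longrightarrow> g \<in> Hm B D \<Longrightarrow> g' \<in> Hm B D \<Longrightarrow> (ad g g') \<odot> f = ad (g \<odot> f) (g' \<odot> f)"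
  using ax23 by blast
lemma comp_ad_r: "f \<in> Hm A B \<Longrightarrow> f' \<in> Hm A B \<Longrightarrow> g \<in> Hm B D \<Longrightarrow> g \<odot> (ad f f') = ad (g \<odot> f) (g \<odot> f')"
  using ax24 by blast
lemma comp_sm_l: "f \<in> Hm A B \<Longrightarrow> g \<in> Hm B D \<Longrightarrow> (sm c g) \<odot> f = sm c (g \<odot> f)"
  using ax25 by (auto simp: hom_iff)
lemma comp_sm_r: "f \<in> Hm A B \<Longrightarrow> g \<in> Hm B D \<Longrightarrow> g \<odot> (sm c f) = sm c (g \<odot> f)"
  using ax25 by (auto simp: hom_iff)
lemma tm_ad_l: "f \<in> Hm A B \<Longrightarrow> f' \<in> Hm A B \<Longrightarrow> (ad f f') \<boxtimes> g = ad (f \<boxtimes> g) (f' \<boxtimes> g)"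
  using ax26 by blast
lemma tm_ad_r: "g \<in> Hm A B \<Longrightarrow> g' \<in> Hm A B \<Longrightarrow> f \<boxtimes> (ad g g') = ad (f \<boxtimes> g) (f \<boxtimes> g')"
  using ax27 by blast
lemma tm_sm_l: "(sm c f) \<boxtimes> g = sm c (f \<boxtimes> g)" using ax28 by blast
lemma tm_sm_r: "f \<boxtimes> (sm c g) = sm c (f \<boxtimes> g)" using ax28 by blast

end



context psi_ctx
begin

lemma ad_zr_l: "f \<in> Hm A B \<Longrightarrow> ad (zr A B) f = f"
  by (metis ad_comm ad_zr zr_hom)

lemma ad_cancel:
  assumes f: "f \<in> Hm A B" and g: "g \<in> Hm A B" and h: "h \<in> Hm A B" and e: "ad f g = ad f h"
  shows "g = h"
proof -
  have nf: "sm (-1) f \<in> Hm A B" using f by blast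
  have z: "ad (sm (-1) f) f = zr A B" using ad_comm[OF nf f] ad_neg[OF f] by simp
  have "g = ad (ad (sm (-1) f) f) g" using z ad_zr_l[OF g] by simp
  also have "\<dots> = ad (sm (-1) f) (ad f g)" using ad_assoc[OF nf f g] .
  also have "\<dots> = ad (sm (-1) f) (ad f h)" using e by simp
  also have "\<dots> = ad (ad (sm (-1) f) f) h" using ad_assoc[OF nf f h] by simp
  also have "\<dots> = h" using z ad_zr_l[OF h] by simp
  finally show ?thesis .
qed

lemma sm_zero: "f \<in> Hm A B \<Longrightarrow> sm 0 f = zr A B"
proof -
  assume f: "f \<in> Hm A B"
  have "ad (sm 0 f) (sm 0 f) = ad (sm 0 f) (zr A B)"
    using add_sm[OF f, of 0 0] ad_zr[OF sm_hom[OF f, of 0]] by simp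
  then show ?thesis using ad_cancel f by blast
qed

lemma sm_zr[simp]: "sm c (zr A B) = zr A B"
proof -
  have "sm c (zr A B) = sm c (sm 0 (zr A B))" using sm_zero[of "zr A B" A B] by simp
  also have "\<dots> = sm (c * 0) (zr A B)" using mult_sm[of "zr A B" A B c 0] by simp
  also have "\<dots> = zr A B" using sm_zero[of "zr A B" A B] by simp
  finally show ?thesis .
qed

lemma comp_zr_r: "g \<in> Hm B D \<Longrightarrow> g \<odot> zr A B = zr A D"
proof -
  assume g: "g \<in> Hm B D"
  have "g \<odot> zr A B = g \<odot> sm 0 (zr A B)" using sm_zero[of "zr A B" A B] by simp
  also have "\<dots> = sm 0 (g \<odot> zr A B)" using comp_sm_r[OF zr_hom g] .
  also have "\<dots> = zr A D" using sm_zero comp_hom[OF zr_hom g] .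
  finally show ?thesis .
qed
lemma comp_zr_l: "f \<in> Hm A B \<Longrightarrow> zr B D \<odot> f = zr A D"
proof -
  assume f: "f \<in> Hm A B"
  have "zr B D \<odot> f = sm 0 (zr B D) \<odot> f" using sm_zero[of "zr B D" B D] by simp
  also have "\<dots> = sm 0 (zr B D \<odot> f)" using comp_sm_l[OF f zr_hom] .
  also have "\<dots> = zr A D" using sm_zero comp_hom[OF f zr_hom] .
  finally show ?thesis .
qed
lemma tm_zr_l: "g \<in> Hm A' B' \<Longrightarrow> zr A B \<boxtimes> g = zr (A \<otimes> A') (B \<otimes> B')"
proof -
  assume g: "g \<in> Hm A' B'"
  have "zr A B \<boxtimes> g = sm 0 (zr A B) \<boxtimes> g" using sm_zero[of "zr A B" A B] by simp
  also have "\<dots> = sm 0 (zr A B \<boxtimes> g)" using tm_sm_l .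
  also have "\<dots> = zr (A \<otimes> A') (B \<otimes> B')" using sm_zero tm_hom[OF zr_hom g] .
  finally show ?thesis .
qed
lemma tm_zr_r: "f \<in> Hm A B \<Longrightarrow> f \<boxtimes> zr A' B' = zr (A \<otimes> A') (B \<otimes> B')"
proof -
  assume f: "f \<in> Hm A B"
  have "f \<boxtimes> zr A' B' = f \<boxtimes> sm 0 (zr A' B')" using sm_zero[of "zr A' B'" A' B'] by simp
  also have "\<dots> = sm 0 (f \<boxtimes> zr A' B')" using tm_sm_r .
  also have "\<dots> = zr (A \<otimes> A') (B \<otimes> B')" using sm_zero tm_hom[OF f zr_hom] .
  finally show ?thesis .
qed

lemma msum_hom: "set fs \<subseteq> Hm A B \<Longrightarrow> msum C A B fs \<in> Hm A B"
  by (induction fs) (auto simp: msum_def)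

lemma lcomb_hom: "(\<forall>a<n. e a \<in> Hm A B) \<Longrightarrow> lcomb C A B n c e \<in> Hm A B"
  unfolding lcomb_def by (rule msum_hom) auto

definition linfun :: "'o \<Rightarrow> 'o \<Rightarrow> ('m \<Rightarrow> 'k) \<Rightarrow> bool" where
  "linfun A B G \<longleftrightarrow> (\<forall>f\<in>Hm A B. \<forall>g\<in>Hm A B. G (ad f g) = G f + G g) \<and>
                     (\<forall>c. \<forall>f\<in>Hm A B. G (sm c f) = c * G f)"

definition linmap :: "'o \<Rightarrow> 'o \<Rightarrow> 'o \<Rightarrow> 'o \<Rightarrow> ('m \<Rightarrow> 'm) \<Rightarrow> bool" where
  "linmap A B A' B' L \<longleftrightarrow> (\<forall>f\<in>Hm A B. L f \<in> Hm A' B') \<and>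
     (\<forall>f\<in>Hm A B. \<forall>g\<in>Hm A B. L (ad f g) = ad (L f) (L g)) \<and>
     (\<forall>c. \<forall>f\<in>Hm A B. L (sm c f) = sm c (L f))"

lemma linfun_zr: "linfun A B G \<Longrightarrow> G (zr A B) = 0"
  unfolding linfun_def by (metis mult_zero_left sm_zr zr_hom)

lemma linfun_msum: "linfun A B G \<Longrightarrow> set fs \<subseteq> Hm A B \<Longrightarrow> G (msum C A B fs) = sum_list (map G fs)"
proof (induction fs)
  case Nil then show ?case by (simp add: msum_def linfun_zr)
next
  case (Cons f fs)
  have "msum C A B (f # fs) = ad f (msum C A B fs)" by (simp add: msum_def)
  moreover have "msum C A B fs \<in> Hm A B" using Cons.prems msum_hom by auto
  ultimately show ?case using Cons unfolding linfun_def by auto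
qed

lemma sum_list_upt: "sum_list (map f [0..<n]) = (\<Sum>a<n. f a)"
  by (induction n) auto

lemma linfun_lcomb: "linfun A B G \<Longrightarrow> (\<forall>a<n. e a \<in> Hm A B) \<Longrightarrow>
    G (lcomb C A B n c e) = (\<Sum>a<n. c a * G (e a))"
  unfolding lcomb_def
  apply (subst linfun_msum, assumption)
   apply auto[1]
  apply (simp add: comp_def sum_list_upt)
  apply (rule sum.cong, simp)
  apply (auto simp: linfun_def)
  done

lemma linmap_id: "linmap A B A B (\<lambda>x. x)" by (simp add: linmap_def)

lemma linmap_post: "linmap A B A' B' L \<Longrightarrow> P \<in> Hm B' D \<Longrightarrow> linmap A B A' D (\<lambda>x. P \<odot> L x)"
  unfolding linmap_def
proof (intro conjI ballI allI)
  assume L: "(\<forall>f\<in>Hm A B. L f \<in> Hm A' B') \<and>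
     (\<forall>f\<in>Hm A B. \<forall>g\<in>Hm A B. L (ad f g) = ad (L f) (L g)) \<and>
     (\<forall>c. \<forall>f\<in>Hm A B. L (sm c f) = sm c (L f))" and P: "P \<in> Hm B' D"
  fix f g c assume f: "f \<in> Hm A B" and g: "g \<in> Hm A B"
  show "P \<odot> L f \<in> Hm A' D" using L f P by blast
  show "P \<odot> L (ad f g) = ad (P \<odot> L f) (P \<odot> L g)" using L f g P comp_ad_r[of "L f" A' B' "L g" P D] by auto
  show "P \<odot> L (sm c f) = sm c (P \<odot> L f)" using L f P comp_sm_r[of "L f" A' B' P D c] by auto
qed

lemma linmap_pre: "linmap A B A' B' L \<Longrightarrow> Q \<in> Hm A0 A' \<Longrightarrow> linmap A B A0 B' (\<lambda>x. L x \<odot> Q)"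
  unfolding linmap_def
proof (intro conjI ballI allI)
  assume L: "(\<forall>f\<in>Hm A B. L f \<in> Hm A' B') \<and>
     (\<forall>f\<in>Hm A B. \<forall>g\<in>Hm A B. L (ad f g) = ad (L f) (L g)) \<and>
     (\<forall>c. \<forall>f\<in>Hm A B. L (sm c f) = sm c (L f))" and Q: "Q \<in> Hm A0 A'"
  fix f g c assume f: "f \<in> Hm A B" and g: "g \<in> Hm A B"
  show "L f \<odot> Q \<in> Hm A0 B'" using L f Q by blast
  show "L (ad f g) \<odot> Q = ad (L f \<odot> Q) (L g \<odot> Q)" using L f g Q comp_ad_l[of Q A0 A' "L f" B' "L g"] by auto
  show "L (sm c f) \<odot> Q = sm c (L f \<odot> Q)" using L f Q comp_sm_l[of Q A0 A' "L f" B' c] by auto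
qed

lemma linmap_tmr: "linmap A B A' B' L \<Longrightarrow> g \<in> Hm X Y \<Longrightarrow> linmap A B (A' \<otimes> X) (B' \<otimes> Y) (\<lambda>x. L x \<boxtimes> g)"
  unfolding linmap_def
proof (intro conjI ballI allI)
  assume L: "(\<forall>f\<in>Hm A B. L f \<in> Hm A' B') \<and>
     (\<forall>f\<in>Hm A B. \<forall>g\<in>Hm A B. L (ad f g) = ad (L f) (L g)) \<and>
     (\<forall>c. \<forall>f\<in>Hm A B. L (sm c f) = sm c (L f))" and g: "g \<in> Hm X Y"
  fix f h c assume f: "f \<in> Hm A B" and h: "h \<in> Hm A B"
  show "L f \<boxtimes> g \<in> Hm (A' \<otimes> X) (B' \<otimes> Y)" using L f g by blast
  show "L (ad f h) \<boxtimes> g = ad (L f \<boxtimes> g) (L h \<boxtimes> g)" using L f h tm_ad_l[of "L f" A' B' "L h" g] by auto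
  show "L (sm c f) \<boxtimes> g = sm c (L f \<boxtimes> g)" using L f tm_sm_l by auto
qed

lemma linmap_tml: "linmap A B A' B' L \<Longrightarrow> g \<in> Hm X Y \<Longrightarrow> linmap A B (X \<otimes> A') (Y \<otimes> B') (\<lambda>x. g \<boxtimes> L x)"
  unfolding linmap_def
proof (intro conjI ballI allI)
  assume L: "(\<forall>f\<in>Hm A B. L f \<in> Hm A' B') \<and>
     (\<forall>f\<in>Hm A B. \<forall>g\<in>Hm A B. L (ad f g) = ad (L f) (L g)) \<and>
     (\<forall>c. \<forall>f\<in>Hm A B. L (sm c f) = sm c (L f))" and g: "g \<in> Hm X Y"
  fix f h c assume f: "f \<in> Hm A B" and h: "h \<in> Hm A B"
  show "g \<boxtimes> L f \<in> Hm (X \<otimes> A') (Y \<otimes> B')" using L f g by blast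
  show "g \<boxtimes> L (ad f h) = ad (g \<boxtimes> L f) (g \<boxtimes> L h)" using L f h tm_ad_r[of "L f" A' B' "L h" g] by auto
  show "g \<boxtimes> L (sm c f) = sm c (g \<boxtimes> L f)" using L f tm_sm_r by auto
qed

lemma linfun_of: "linfun A' B' G \<Longrightarrow> linmap A B A' B' L \<Longrightarrow> linfun A B (\<lambda>x. G (L x))"
  unfolding linfun_def linmap_def by auto

lemma simple: "i \<in> I \<Longrightarrow> simple_obj C (V i)"
  using psi unfolding psi_system_def by blast

lemma sm_id_inj:
  assumes s: "simple_obj C W" and e: "sm c (idm W) = sm c' (idm W)"
  shows "c = c'"
proof (rule ccontr)
  assume ne: "c \<noteq> c'"
  have i: "idm W \<in> Hm W W" by simp
  have "sm (c - c') (idm W) = ad (sm c (idm W)) (sm (- c') (idm W))"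
    using add_sm[OF i, of c "- c'"] by simp
  also have "\<dots> = ad (sm c' (idm W)) (sm (- c') (idm W))" using e by simp
  also have "\<dots> = sm (c' + - c') (idm W)" using add_sm[OF i, of c' "- c'"] by simp
  also have "\<dots> = zr W W" using sm_zero[OF i] by simp
  finally have z: "sm (c - c') (idm W) = zr W W" .
  have "idm W = sm (inverse (c - c') * (c - c')) (idm W)" using ne one_sm[OF i] by simp
  also have "\<dots> = zr W W" using mult_sm[OF i] z by simp
  finally show False using s unfolding simple_obj_def by simp
qed

lemma scal_sm_id: "simple_obj C W \<Longrightarrow> scal C W (sm c (idm W)) = c"
  unfolding scal_def by (rule the_equality) (auto dest: sm_id_inj)

lemma endo_scal: "simple_obj C W \<Longrightarrow> f \<in> Hm W W \<Longrightarrow> f = sm (scal C W f) (idm W)"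
proof -
  assume s: "simple_obj C W" and f: "f \<in> Hm W W"
  then obtain c where c: "f = sm c (idm W)" unfolding simple_obj_def by blast
  then show ?thesis using scal_sm_id[OF s] by simp
qed

lemma scal_id: "simple_obj C W \<Longrightarrow> scal C W (idm W) = 1"
  using scal_sm_id[of W 1] one_sm[of "idm W" W W] by simp

lemma scal_zr: "simple_obj C W \<Longrightarrow> scal C W (zr W W) = 0"
  using scal_sm_id[of W 0] sm_zero[of "idm W" W W] by simp

lemma linfun_scal: "simple_obj C W \<Longrightarrow> linfun W W (scal C W)"
  unfolding linfun_def
proof safe
  assume s: "simple_obj C W"
  fix f g assume f: "f \<in> Hm W W" and g: "g \<in> Hm W W"
  have "ad f g = ad (sm (scal C W f) (idm W)) (sm (scal C W g) (idm W))"
    using endo_scal[OF s f] endo_scal[OF s g] by simp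
  also have "\<dots> = sm (scal C W f + scal C W g) (idm W)" using add_sm[of "idm W" W W] by simp
  finally show "scal C W (ad f g) = scal C W f + scal C W g" using scal_sm_id[OF s] by simp
next
  assume s: "simple_obj C W"
  fix c f assume f: "f \<in> Hm W W"
  have "sm c f = sm (c * scal C W f) (idm W)"
    using endo_scal[OF s f] mult_sm[of "idm W" W W c "scal C W f"] by simp
  then show "scal C W (sm c f) = c * scal C W f" using scal_sm_id[OF s] by simp
qed

end



context psi_ctx
begin

lemma dom_tm[simp]: "cDom C (f \<boxtimes> g) = cDom C f \<otimes> cDom C g"
  using tm_hom[of f "cDom C f" "cCod C f" g "cDom C g" "cCod C g"] by (simp add: hom_iff)
lemma cod_tm[simp]: "cCod C (f \<boxtimes> g) = cCod C f \<otimes> cCod C g"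
  using tm_hom[of f "cDom C f" "cCod C f" g "cDom C g" "cCod C g"] by (simp add: hom_iff)
lemma dom_comp[simp]: "cDom C g = cCod C f \<Longrightarrow> cDom C (g \<odot> f) = cDom C f"
  using comp_hom[of f "cDom C f" "cCod C f" g "cCod C g"] by (simp add: hom_iff)
lemma cod_comp[simp]: "cDom C g = cCod C f \<Longrightarrow> cCod C (g \<odot> f) = cCod C g"
  using comp_hom[of f "cDom C f" "cCod C f" g "cCod C g"] by (simp add: hom_iff)
lemma dom_id[simp]: "cDom C (idm A) = A" using id_hom[of A] by (simp add: hom_iff)
lemma cod_id[simp]: "cCod C (idm A) = A" using id_hom[of A] by (simp add: hom_iff)

lemma hom_distinct: "i \<in> I \<Longrightarrow> j \<in> I \<Longrightarrow> i \<noteq> j \<Longrightarrow> Hm (V i) (V j) = {zr (V i) (V j)}"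
  using psi unfolding psi_system_def by blast

lemma dbs: "i \<in> I \<Longrightarrow> j \<in> I \<Longrightarrow> k \<in> I \<Longrightarrow>
        is_basis C (V k) (V i \<otimes> V j) (N i j k) (eb i j k) \<and>
        is_basis C (V i \<otimes> V j) (V k) (N i j k) (ed i j k) \<and>
        (\<forall>a<N i j k. \<forall>b<N i j k. scal C (V k) (ed i j k a \<odot> eb i j k b) = (if a = b then 1 else 0))"
  using db unfolding dual_bases_def by blast

lemma span_up: "i \<in> I \<Longrightarrow> j \<in> I \<Longrightarrow> k \<in> I \<Longrightarrow> Y \<in> Hm (V k) (V i \<otimes> V j) \<Longrightarrow>
   \<exists>c. Y = lcomb C (V k) (V i \<otimes> V j) (N i j k) c (eb i j k)"
proof -
  assume a: "i \<in> I" "j \<in> I" "k \<in> I" "Y \<in> Hm (V k) (V i \<otimes> V j)"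
  have "is_basis C (V k) (V i \<otimes> V j) (N i j k) (eb i j k)" using dbs[OF a(1-3)] by (rule conjunct1)
  then show ?thesis using a(4) unfolding is_basis_def by blast
qed
lemma span_dn: "i \<in> I \<Longrightarrow> j \<in> I \<Longrightarrow> k \<in> I \<Longrightarrow> Y \<in> Hm (V i \<otimes> V j) (V k) \<Longrightarrow>
   \<exists>c. Y = lcomb C (V i \<otimes> V j) (V k) (N i j k) c (ed i j k)"
proof -
  assume a: "i \<in> I" "j \<in> I" "k \<in> I" "Y \<in> Hm (V i \<otimes> V j) (V k)"
  have "is_basis C (V i \<otimes> V j) (V k) (N i j k) (ed i j k)" using dbs[OF a(1-3)] by blast
  then show ?thesis using a(4) unfolding is_basis_def by blast
qed

lemma eb_hom[intro]: "i \<in> I \<Longrightarrow> j \<in> I \<Longrightarrow> k \<in> I \<Longrightarrow> a < N i j k \<Longrightarrow> eb i j k a \<in> Hm (V k) (V i \<otimes> V j)"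
  using dbs unfolding is_basis_def by blast
lemma ed_hom[intro]: "i \<in> I \<Longrightarrow> j \<in> I \<Longrightarrow> k \<in> I \<Longrightarrow> a < N i j k \<Longrightarrow> ed i j k a \<in> Hm (V i \<otimes> V j) (V k)"
  using dbs unfolding is_basis_def by blast

lemma dom_eb[simp]: "i \<in> I \<Longrightarrow> j \<in> I \<Longrightarrow> k \<in> I \<Longrightarrow> a < N i j k \<Longrightarrow> cDom C (eb i j k a) = V k"
  using eb_hom by (simp add: hom_iff)
lemma cod_eb[simp]: "i \<in> I \<Longrightarrow> j \<in> I \<Longrightarrow> k \<in> I \<Longrightarrow> a < N i j k \<Longrightarrow> cCod C (eb i j k a) = V i \<otimes> V j"
  using eb_hom by (simp add: hom_iff)
lemma dom_ed[simp]: "i \<in> I \<Longrightarrow> j \<in> I \<Longrightarrow> k \<in> I \<Longrightarrow> a < N i j k \<Longrightarrow> cDom C (ed i j k a) = V i \<otimes> V j"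
  using ed_hom by (simp add: hom_iff)
lemma cod_ed[simp]: "i \<in> I \<Longrightarrow> j \<in> I \<Longrightarrow> k \<in> I \<Longrightarrow> a < N i j k \<Longrightarrow> cCod C (ed i j k a) = V k"
  using ed_hom by (simp add: hom_iff)

lemma dual: "i \<in> I \<Longrightarrow> j \<in> I \<Longrightarrow> k \<in> I \<Longrightarrow> a < N i j k \<Longrightarrow> b < N i j k \<Longrightarrow>
   scal C (V k) (ed i j k a \<odot> eb i j k b) = (if a = b then 1 else 0)"
  using dbs by blast

lemma lm_post: "linmap A B A' B' L \<Longrightarrow> cDom C P = B' \<Longrightarrow> linmap A B A' (cCod C P) (\<lambda>x. P \<odot> L x)"
  by (rule linmap_post) (auto simp: hom_iff)
lemma lm_pre: "linmap A B A' B' L \<Longrightarrow> cCod C Q = A' \<Longrightarrow> linmap A B (cDom C Q) B' (\<lambda>x. L x \<odot> Q)"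
  by (rule linmap_pre) (auto simp: hom_iff)
lemma lm_tmr: "linmap A B A' B' L \<Longrightarrow> linmap A B (A' \<otimes> cDom C g) (B' \<otimes> cCod C g) (\<lambda>x. L x \<boxtimes> g)"
  by (rule linmap_tmr) (auto simp: hom_iff)
lemma lm_tml: "linmap A B A' B' L \<Longrightarrow> linmap A B (cDom C g \<otimes> A') (cCod C g \<otimes> B') (\<lambda>x. g \<boxtimes> L x)"
  by (rule linmap_tml) (auto simp: hom_iff)
lemma lf_scal: "simple_obj C W \<Longrightarrow> linmap A B A' B' L \<Longrightarrow> A' = W \<Longrightarrow> B' = W \<Longrightarrow>
    linfun A B (\<lambda>x. scal C W (L x))"
  using linfun_of[OF linfun_scal] by blast

lemma lf_scal': "linmap A B A' B' L \<Longrightarrow> W = V m \<Longrightarrow> m \<in> I \<Longrightarrow> A' = W \<Longrightarrow> B' = W \<Longrightarrow>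
    linfun A B (\<lambda>x. scal C W (L x))"
  using lf_scal simple by blast

lemmas lm_rules = lm_post lm_pre lm_tmr lm_tml linmap_id

section \<open>Expansion in the bases\<close>

lemma coef_up:
  assumes ijk: "i \<in> I" "j \<in> I" "k \<in> I" and a: "a < N i j k"
  shows "scal C (V k) (ed i j k a \<odot> lcomb C (V k) (V i \<otimes> V j) (N i j k) c (eb i j k)) = c a"
proof -
  have lf: "linfun (V k) (V i \<otimes> V j) (\<lambda>x. scal C (V k) (ed i j k a \<odot> x))"
    by (rule lf_scal'[where m=k], (rule lm_rules)+) (use ijk a in auto)
  have "scal C (V k) (ed i j k a \<odot> lcomb C (V k) (V i \<otimes> V j) (N i j k) c (eb i j k))
     = (\<Sum>b<N i j k. c b * scal C (V k) (ed i j k a \<odot> eb i j k b))"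
    by (rule linfun_lcomb[OF lf]) (use ijk in auto)
  also have "\<dots> = (\<Sum>b<N i j k. (if b = a then c a else 0))"
    by (rule sum.cong) (use ijk a dual in auto)
  also have "\<dots> = c a" using a by simp
  finally show ?thesis .
qed

lemma coef_dn:
  assumes ijk: "i \<in> I" "j \<in> I" "k \<in> I" and a: "a < N i j k"
  shows "scal C (V k) (lcomb C (V i \<otimes> V j) (V k) (N i j k) c (ed i j k) \<odot> eb i j k a) = c a"
proof -
  have lf: "linfun (V i \<otimes> V j) (V k) (\<lambda>x. scal C (V k) (x \<odot> eb i j k a))"
    by (rule lf_scal'[where m=k], (rule lm_rules)+) (use ijk a in auto)
  have "scal C (V k) (lcomb C (V i \<otimes> V j) (V k) (N i j k) c (ed i j k) \<odot> eb i j k a)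
     = (\<Sum>b<N i j k. c b * scal C (V k) (ed i j k b \<odot> eb i j k a))"
    by (rule linfun_lcomb[OF lf]) (use ijk in auto)
  also have "\<dots> = (\<Sum>b<N i j k. (if b = a then c a else 0))"
    by (rule sum.cong) (use ijk a dual in auto)
  also have "\<dots> = c a" using a by simp
  finally show ?thesis .
qed

lemma exp_up:
  assumes ijk: "i \<in> I" "j \<in> I" "k \<in> I" and Y: "Y \<in> Hm (V k) (V i \<otimes> V j)"
    and G: "linfun (V k) (V i \<otimes> V j) G"
  shows "(\<Sum>a<N i j k. scal C (V k) (ed i j k a \<odot> Y) * G (eb i j k a)) = G Y"
proof -
  obtain c where c: "Y = lcomb C (V k) (V i \<otimes> V j) (N i j k) c (eb i j k)"
    using span_up[OF ijk Y] by blast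
  have "G Y = (\<Sum>a<N i j k. c a * G (eb i j k a))"
    unfolding c by (rule linfun_lcomb[OF G]) (use ijk in auto)
  also have "\<dots> = (\<Sum>a<N i j k. scal C (V k) (ed i j k a \<odot> Y) * G (eb i j k a))"
    by (rule sum.cong) (simp_all add: c coef_up ijk)
  finally show ?thesis by simp
qed

lemma exp_dn:
  assumes ijk: "i \<in> I" "j \<in> I" "k \<in> I" and X: "X \<in> Hm (V i \<otimes> V j) (V k)"
    and G: "linfun (V i \<otimes> V j) (V k) G"
  shows "(\<Sum>a<N i j k. scal C (V k) (X \<odot> eb i j k a) * G (ed i j k a)) = G X"
proof -
  obtain c where c: "X = lcomb C (V i \<otimes> V j) (V k) (N i j k) c (ed i j k)"
    using span_dn[OF ijk X] by blast
  have "G X = (\<Sum>a<N i j k. c a * G (ed i j k a))"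
    unfolding c by (rule linfun_lcomb[OF G]) (use ijk in auto)
  also have "\<dots> = (\<Sum>a<N i j k. scal C (V k) (X \<odot> eb i j k a) * G (ed i j k a))"
    by (rule sum.cong) (simp_all add: c coef_dn ijk)
  finally show ?thesis by simp
qed

end



context psi_ctx
begin

definition KK :: "'i \<Rightarrow> 'i \<Rightarrow> 'i set" where "KK i j = {k \<in> I. 0 < N i j k}"

lemma KK_I: "k \<in> KK i j \<Longrightarrow> k \<in> I" by (simp add: KK_def)

lemma eb0_nz:
  assumes ijk: "i \<in> I" "j \<in> I" "k \<in> I" and n: "0 < N i j k"
  shows "eb i j k 0 \<noteq> zr (V k) (V i \<otimes> V j)"
proof
  assume z: "eb i j k 0 = zr (V k) (V i \<otimes> V j)"
  have "scal C (V k) (ed i j k 0 \<odot> eb i j k 0) = 1" using dual[OF ijk n n] by simp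
  moreover have "ed i j k 0 \<odot> eb i j k 0 = zr (V k) (V k)"
    unfolding z by (rule comp_zr_r) (use ijk n in auto)
  ultimately show False using scal_zr[OF simple[OF ijk(3)]] by simp
qed

lemma KK_gg: "i \<in> I \<Longrightarrow> j \<in> I \<Longrightarrow> k \<in> KK i j \<Longrightarrow> gg C I V i j"
  unfolding gg_def Hup_def KK_def using eb0_nz eb_hom by blast

lemma V_inj: "inj_on V I"
proof (rule inj_onI, rule ccontr)
  fix i j assume i: "i \<in> I" and j: "j \<in> I" and e: "V i = V j" and ne: "i \<noteq> j"
  have "idm (V i) \<in> Hm (V i) (V j)" using e by simp
  then have "idm (V i) \<in> {zr (V i) (V j)}" using hom_distinct[OF i j ne] by simp
  then have "idm (V i) = zr (V i) (V i)" using e by simp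
  then show False using simple[OF i] unfolding simple_obj_def by simp
qed

lemma psi_dec: "i \<in> I \<Longrightarrow> j \<in> I \<Longrightarrow> gg C I V i j \<Longrightarrow>
  \<exists>xs. set xs \<subseteq> {(x, y). \<exists>k\<in>I. x \<in> Hm (V k) (V i \<otimes> V j) \<and> y \<in> Hm (V i \<otimes> V j) (V k)} \<and>
        idm (V i \<otimes> V j) = msum C (V i \<otimes> V j) (V i \<otimes> V j) (map (\<lambda>(x, y). x \<odot> y) xs)"
  using psi unfolding psi_system_def gg_def Hup_def Hdn_def by blast

lemma sum_list_zero: "(\<forall>x\<in>set xs. f x = 0) \<Longrightarrow> sum_list (map f xs) = (0::'k)"
  by (induction xs) auto

lemma lcomb0: "lcomb C A B 0 c e = zr A B" by (simp add: lcomb_def msum_def)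

lemma up_zero: "i \<in> I \<Longrightarrow> j \<in> I \<Longrightarrow> k \<in> I \<Longrightarrow> N i j k = 0 \<Longrightarrow> x \<in> Hm (V k) (V i \<otimes> V j) \<Longrightarrow>
   x = zr (V k) (V i \<otimes> V j)"
  using span_up[of i j k x] lcomb0 by auto

lemma KK_finite: assumes i: "i \<in> I" and j: "j \<in> I" shows "finite (KK i j)"
proof (cases "gg C I V i j")
  case False
  then have "KK i j = {}" using KK_gg[OF i j] by blast
  then show ?thesis by simp
next
  case True
  then obtain xs where xs: "set xs \<subseteq> {(x, y). \<exists>k\<in>I. x \<in> Hm (V k) (V i \<otimes> V j) \<and> y \<in> Hm (V i \<otimes> V j) (V k)}"
    and dec: "idm (V i \<otimes> V j) = msum C (V i \<otimes> V j) (V i \<otimes> V j) (map (\<lambda>(x, y). x \<odot> y) xs)"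
    using psi_dec[OF i j] by blast
  have sub: "V ` KK i j \<subseteq> (\<lambda>p. cCod C (snd p)) ` set xs"
  proof
    fix o' assume "o' \<in> V ` KK i j"
    then obtain k where k: "k \<in> KK i j" and o': "o' = V k" by blast
    have kI: "k \<in> I" and n: "0 < N i j k" using k by (auto simp: KK_def)
    define G where "G = (\<lambda>w. scal C (V k) ((ed i j k 0 \<odot> w) \<odot> eb i j k 0))"
    have lf: "linfun (V i \<otimes> V j) (V i \<otimes> V j) G"
      unfolding G_def by (rule lf_scal'[where m=k], (rule lm_rules)+) (use i j kI n in auto)
    have "G (idm (V i \<otimes> V j)) = 1"
      unfolding G_def using id_r[OF ed_hom[OF i j kI n]] dual[OF i j kI n n] by simp
    moreover have "G (idm (V i \<otimes> V j)) = sum_list (map G (map (\<lambda>(x, y). x \<odot> y) xs))"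
      unfolding dec by (rule linfun_msum[OF lf]) (use xs in auto)
    ultimately have "sum_list (map (\<lambda>p. G ((\<lambda>(x, y). x \<odot> y) p)) xs) \<noteq> 0" by (simp add: comp_def)
    then obtain p where p: "p \<in> set xs" and nz: "G ((\<lambda>(x, y). x \<odot> y) p) \<noteq> 0"
      using sum_list_zero[of xs "\<lambda>p. G ((\<lambda>(x, y). x \<odot> y) p)"] by blast
    obtain x y k' where pxy: "p = (x, y)" and k': "k' \<in> I" and x: "x \<in> Hm (V k') (V i \<otimes> V j)"
      and y: "y \<in> Hm (V i \<otimes> V j) (V k')" using p xs by blast
    have "k' = k"
    proof (rule ccontr)
      assume ne: "k' \<noteq> k"
      have ye: "y \<odot> eb i j k 0 \<in> Hm (V k) (V k')" using y eb_hom[OF i j kI n] by blast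
      then have ye0: "y \<odot> eb i j k 0 = zr (V k) (V k')" using hom_distinct[OF kI k'] ne by auto
      have "(ed i j k 0 \<odot> (x \<odot> y)) \<odot> eb i j k 0 = (ed i j k 0 \<odot> x) \<odot> (y \<odot> eb i j k 0)"
      proof -
        have e1: "ed i j k 0 \<in> Hm (V i \<otimes> V j) (V k)" using i j kI n by blast
        have "ed i j k 0 \<odot> (x \<odot> y) = (ed i j k 0 \<odot> x) \<odot> y" using assoc[OF y x e1] .
        moreover have "((ed i j k 0 \<odot> x) \<odot> y) \<odot> eb i j k 0 = (ed i j k 0 \<odot> x) \<odot> (y \<odot> eb i j k 0)"
          using assoc[OF eb_hom[OF i j kI n] y comp_hom[OF x e1]] by simp
        ultimately show ?thesis by simp
      qed
      also have "\<dots> = zr (V k) (V k)" unfolding ye0 by (rule comp_zr_r) (use x i j kI n in blast)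
      finally have "G (x \<odot> y) = 0" unfolding G_def using scal_zr[OF simple[OF kI]] by simp
      then show False using nz pxy by simp
    qed
    then show "o' \<in> (\<lambda>p. cCod C (snd p)) ` set xs" using p pxy y o' by (force simp: hom_iff)
  qed
  have "finite (V ` KK i j)" using finite_subset[OF sub] by blast
  then show ?thesis using finite_imageD inj_on_subset[OF V_inj] KK_I by (metis subsetI)
qed

lemma sum_single: "finite K \<Longrightarrow> (\<forall>k\<in>K. k \<noteq> k0 \<longrightarrow> f k = 0) \<Longrightarrow>
   (\<Sum>k\<in>K. f k) = (if k0 \<in> K then f k0 else (0::'k))"
proof -
  assume K: "finite K" and z: "\<forall>k\<in>K. k \<noteq> k0 \<longrightarrow> f k = 0"
  have "(\<Sum>k\<in>K. f k) = (\<Sum>k\<in>K. if k = k0 then f k else 0)" by (rule sum.cong) (use z in auto)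
  also have "\<dots> = (if k0 \<in> K then f k0 else 0)" using K by (simp add: sum.delta)
  finally show ?thesis .
qed

lemma compl_term:
  assumes i: "i \<in> I" and j: "j \<in> I" and k0: "k0 \<in> I"
    and x: "x \<in> Hm (V k0) (V i \<otimes> V j)" and y: "y \<in> Hm (V i \<otimes> V j) (V k0)"
    and G: "linfun (V i \<otimes> V j) (V i \<otimes> V j) G"
  shows "(\<Sum>k\<in>KK i j. \<Sum>a<N i j k. G ((eb i j k a \<odot> ed i j k a) \<odot> (x \<odot> y))) = G (x \<odot> y)"
proof -
  have Gs: "G (sm c f) = c * G f" "G (zr (V i \<otimes> V j) (V i \<otimes> V j)) = 0"
    if "f \<in> Hm (V i \<otimes> V j) (V i \<otimes> V j)" for c f
    using G that linfun_zr unfolding linfun_def by auto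
  have G0: "G (zr (V i \<otimes> V j) (V i \<otimes> V j)) = 0" using linfun_zr[OF G] .
  have split: "(eb i j k a \<odot> ed i j k a) \<odot> (x \<odot> y) = eb i j k a \<odot> ((ed i j k a \<odot> x) \<odot> y)"
    if k: "k \<in> I" and a: "a < N i j k" for k a
  proof -
    have e: "eb i j k a \<in> Hm (V k) (V i \<otimes> V j)" "ed i j k a \<in> Hm (V i \<otimes> V j) (V k)"
      using i j k a by blast+
    have "(eb i j k a \<odot> ed i j k a) \<odot> (x \<odot> y) = eb i j k a \<odot> (ed i j k a \<odot> (x \<odot> y))"
      using assoc[OF comp_hom[OF y x] e(2) e(1)] by simp
    also have "ed i j k a \<odot> (x \<odot> y) = (ed i j k a \<odot> x) \<odot> y" using assoc[OF y x e(2)] .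
    finally show ?thesis .
  qed
  have other: "(\<Sum>a<N i j k. G ((eb i j k a \<odot> ed i j k a) \<odot> (x \<odot> y))) = 0"
    if k: "k \<in> I" and ne: "k \<noteq> k0" for k
  proof (rule sum.neutral, rule ballI)
    fix a assume "a \<in> {..<N i j k}"
    then have a: "a < N i j k" by simp
    have "ed i j k a \<odot> x \<in> Hm (V k0) (V k)" using x i j k a by blast
    then have z: "ed i j k a \<odot> x = zr (V k0) (V k)" using hom_distinct[OF k0 k] ne by auto
    have "(eb i j k a \<odot> ed i j k a) \<odot> (x \<odot> y) = zr (V i \<otimes> V j) (V i \<otimes> V j)"
      unfolding split[OF k a] z comp_zr_l[OF y] by (rule comp_zr_r) (use i j k a in blast)
    then show "G ((eb i j k a \<odot> ed i j k a) \<odot> (x \<odot> y)) = 0" using G0 by simp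
  qed
  have lhs: "(\<Sum>k\<in>KK i j. \<Sum>a<N i j k. G ((eb i j k a \<odot> ed i j k a) \<odot> (x \<odot> y)))
      = (if k0 \<in> KK i j then (\<Sum>a<N i j k0. G ((eb i j k0 a \<odot> ed i j k0 a) \<odot> (x \<odot> y))) else 0)"
    by (rule sum_single) (use KK_finite[OF i j] other KK_I in auto)
  show ?thesis
  proof (cases "k0 \<in> KK i j")
    case False
    then have "N i j k0 = 0" using k0 by (simp add: KK_def)
    then have "x = zr (V k0) (V i \<otimes> V j)" using up_zero[OF i j k0 _ x] by simp
    then have "x \<odot> y = zr (V i \<otimes> V j) (V i \<otimes> V j)" using comp_zr_l[OF y] by simp
    then show ?thesis using lhs False G0 by simp
  next
    case True
    have G': "linfun (V k0) (V i \<otimes> V j) (\<lambda>w. G (w \<odot> y))"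
      by (rule linfun_of[OF G], rule linmap_pre[OF linmap_id y])
    have "(\<Sum>a<N i j k0. G ((eb i j k0 a \<odot> ed i j k0 a) \<odot> (x \<odot> y)))
        = (\<Sum>a<N i j k0. scal C (V k0) (ed i j k0 a \<odot> x) * G (eb i j k0 a \<odot> y))"
    proof (rule sum.cong, simp)
      fix a assume "a \<in> {..<N i j k0}"
      then have a: "a < N i j k0" by simp
      have ex: "ed i j k0 a \<odot> x \<in> Hm (V k0) (V k0)" using x i j k0 a by blast
      define c where "c = scal C (V k0) (ed i j k0 a \<odot> x)"
      have "ed i j k0 a \<odot> x = sm c (idm (V k0))"
        unfolding c_def by (rule endo_scal[OF simple[OF k0] ex])
      then have "(ed i j k0 a \<odot> x) \<odot> y = sm c y"
        using comp_sm_l[OF y id_hom] id_l[OF y] by simp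
      then have "(ed i j k0 a \<odot> x) \<odot> y = sm (scal C (V k0) (ed i j k0 a \<odot> x)) y"
        unfolding c_def .
      then have "eb i j k0 a \<odot> ((ed i j k0 a \<odot> x) \<odot> y) = sm (scal C (V k0) (ed i j k0 a \<odot> x)) (eb i j k0 a \<odot> y)"
        using comp_sm_r[OF y eb_hom[OF i j k0 a]] by simp
      moreover have "eb i j k0 a \<odot> y \<in> Hm (V i \<otimes> V j) (V i \<otimes> V j)" using y i j k0 a by blast
      ultimately show "G ((eb i j k0 a \<odot> ed i j k0 a) \<odot> (x \<odot> y)) =
           scal C (V k0) (ed i j k0 a \<odot> x) * G (eb i j k0 a \<odot> y)"
        using split[OF k0 a] Gs by simp
    qed
    also have "\<dots> = G (x \<odot> y)" using exp_up[OF i j k0 x G'] .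
    finally show ?thesis using lhs True by simp
  qed
qed

lemma sum_sum_list_swap: "(\<Sum>k\<in>K. sum_list (map (f k) xs)) = sum_list (map (\<lambda>p. \<Sum>k\<in>K. f k p) xs)"
  by (induction xs) (auto simp: sum.distrib)

lemma completeness:
  assumes i: "i \<in> I" and j: "j \<in> I" and G: "linfun (V i \<otimes> V j) (V i \<otimes> V j) G"
  shows "(\<Sum>k\<in>KK i j. \<Sum>a<N i j k. G (eb i j k a \<odot> ed i j k a))
       = (if gg C I V i j then G (idm (V i \<otimes> V j)) else 0)"
proof (cases "gg C I V i j")
  case False
  then have "KK i j = {}" using KK_gg[OF i j] by blast
  then show ?thesis using False by simp
next
  case True
  then obtain xs where xs: "set xs \<subseteq> {(x, y). \<exists>k\<in>I. x \<in> Hm (V k) (V i \<otimes> V j) \<and> y \<in> Hm (V i \<otimes> V j) (V k)}"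
    and dec: "idm (V i \<otimes> V j) = msum C (V i \<otimes> V j) (V i \<otimes> V j) (map (\<lambda>(x, y). x \<odot> y) xs)"
    using psi_dec[OF i j] by blast
  have mset: "set (map (\<lambda>(x, y). x \<odot> y) xs) \<subseteq> Hm (V i \<otimes> V j) (V i \<otimes> V j)" using xs by auto
  have "(\<Sum>k\<in>KK i j. \<Sum>a<N i j k. G (eb i j k a \<odot> ed i j k a))
      = (\<Sum>k\<in>KK i j. \<Sum>a<N i j k. sum_list (map (\<lambda>p. G ((eb i j k a \<odot> ed i j k a) \<odot> (case p of (x, y) \<Rightarrow> x \<odot> y))) xs))"
  proof (intro sum.cong refl)
    fix k a assume k: "k \<in> KK i j" and a: "a \<in> {..<N i j k}"
    have kI: "k \<in> I" and a': "a < N i j k" using k a by (auto simp: KK_def)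
    have ee: "eb i j k a \<odot> ed i j k a \<in> Hm (V i \<otimes> V j) (V i \<otimes> V j)" using i j kI a' by blast
    have lf: "linfun (V i \<otimes> V j) (V i \<otimes> V j) (\<lambda>w. G ((eb i j k a \<odot> ed i j k a) \<odot> w))"
      by (rule linfun_of[OF G], rule linmap_post[OF linmap_id ee])
    have "G (eb i j k a \<odot> ed i j k a) = G ((eb i j k a \<odot> ed i j k a) \<odot> idm (V i \<otimes> V j))"
      using id_r[OF ee] by simp
    also have "\<dots> = sum_list (map (\<lambda>w. G ((eb i j k a \<odot> ed i j k a) \<odot> w)) (map (\<lambda>(x, y). x \<odot> y) xs))"
      by (subst dec, rule linfun_msum[OF lf mset])
    finally show "G (eb i j k a \<odot> ed i j k a) = sum_list (map (\<lambda>p. G ((eb i j k a \<odot> ed i j k a) \<odot> (case p of (x, y) \<Rightarrow> x \<odot> y))) xs)"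
      by (simp add: comp_def)
  qed
  also have "\<dots> = sum_list (map (\<lambda>p. \<Sum>k\<in>KK i j. \<Sum>a<N i j k. G ((eb i j k a \<odot> ed i j k a) \<odot> (case p of (x, y) \<Rightarrow> x \<odot> y))) xs)"
    by (simp add: sum_sum_list_swap)
  also have "\<dots> = sum_list (map (\<lambda>p. G (case p of (x, y) \<Rightarrow> x \<odot> y)) xs)"
  proof (rule arg_cong[where f=sum_list], rule map_cong, simp)
    fix p assume p: "p \<in> set xs"
    then obtain x y k0 where pxy: "p = (x, y)" and k0: "k0 \<in> I" and x: "x \<in> Hm (V k0) (V i \<otimes> V j)"
      and y: "y \<in> Hm (V i \<otimes> V j) (V k0)" using xs by blast
    show "(\<Sum>k\<in>KK i j. \<Sum>a<N i j k. G ((eb i j k a \<odot> ed i j k a) \<odot> (case p of (x, y) \<Rightarrow> x \<odot> y))) =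
          G (case p of (x, y) \<Rightarrow> x \<odot> y)"
      using compl_term[OF i j k0 x y G] pxy by simp
  qed
  also have "\<dots> = G (idm (V i \<otimes> V j))"
    using linfun_msum[OF G mset] dec by (simp add: comp_def)
  finally show ?thesis using True by simp
qed

end



context psi_ctx
begin

lemma fsum_single: "{s \<in> S. f s \<noteq> 0} \<subseteq> {t0} \<Longrightarrow> fsum f S = (if t0 \<in> S then f t0 else (0::'k))"
proof -
  assume a: "{s \<in> S. f s \<noteq> 0} \<subseteq> {t0}"
  show ?thesis
  proof (cases "t0 \<in> S \<and> f t0 \<noteq> 0")
    case True
    then have "{s \<in> S. f s \<noteq> 0} = {t0}" using a by blast
    then show ?thesis using True by (simp add: fsum_def)
  next
    case False
    then have "{s \<in> S. f s \<noteq> 0} = {}" using a by blast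
    then show ?thesis using False by (auto simp: fsum_def)
  qed
qed

lemma fsum_sub: "finite A \<Longrightarrow> {s \<in> S. f s \<noteq> 0} \<subseteq> A \<Longrightarrow> A \<subseteq> S \<Longrightarrow> fsum f S = sum f A"
  unfolding fsum_def by (rule sum.mono_neutral_left) auto

lemma fsum_zero: "(\<And>s. s \<in> S \<Longrightarrow> f s = 0) \<Longrightarrow> fsum f S = (0::'k)"
  unfolding fsum_def by (rule sum.neutral) auto

lemma fsum_cong: "(\<And>s. s \<in> S \<Longrightarrow> f s = g s) \<Longrightarrow> fsum f S = fsum g S"
  unfolding fsum_def
proof -
  assume e: "\<And>s. s \<in> S \<Longrightarrow> f s = g s"
  have "{s \<in> S. f s \<noteq> 0} = {s \<in> S. g s \<noteq> 0}" using e by auto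
  then show "sum f {s \<in> S. f s \<noteq> 0} = sum g {s \<in> S. g s \<noteq> 0}" using e by (auto intro: sum.cong)
qed

lemma proj_hom[intro]: "j \<in> I \<Longrightarrow> l \<in> I \<Longrightarrow> n \<in> I \<Longrightarrow> proj C V N eb x j l n \<in> Hm (V n) (V j \<otimes> V l)"
  unfolding proj_def by (rule lcomb_hom) auto

lemma dom_proj[simp]: "j \<in> I \<Longrightarrow> l \<in> I \<Longrightarrow> n \<in> I \<Longrightarrow> cDom C (proj C V N eb x j l n) = V n"
  using proj_hom by (simp add: hom_iff)
lemma cod_proj[simp]: "j \<in> I \<Longrightarrow> l \<in> I \<Longrightarrow> n \<in> I \<Longrightarrow> cCod C (proj C V N eb x j l n) = V j \<otimes> V l"
  using proj_hom by (simp add: hom_iff)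

lemma proj_lin:
  assumes jln: "j \<in> I" "l \<in> I" "n \<in> I" and G: "linfun (V n) (V j \<otimes> V l) G"
  shows "G (proj C V N eb (ev (j', l', n', \<beta>)) j l n) =
         (if j' = j \<and> l' = l \<and> n' = n \<and> \<beta> < N j l n then G (eb j l n \<beta>) else 0)"
proof -
  have "G (proj C V N eb (ev (j', l', n', \<beta>)) j l n) =
     (\<Sum>a<N j l n. ev (j', l', n', \<beta>) (j, l, n, a) * G (eb j l n a))"
    unfolding proj_def by (rule linfun_lcomb[OF G]) (use jln in auto)
  also have "\<dots> = (\<Sum>a<N j l n. if a = \<beta> then (if j' = j \<and> l' = l \<and> n' = n then G (eb j l n a) else 0) else 0)"
    by (rule sum.cong) (auto simp: ev_def)
  also have "\<dots> = (if j' = j \<and> l' = l \<and> n' = n \<and> \<beta> < N j l n then G (eb j l n \<beta>) else 0)"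
    by (simp add: sum.delta)
  finally show ?thesis .
qed

lemma hc_eq: "hc C V N ed a b c f (a', b', c', d) =
   (if a' = a \<and> b' = b \<and> c' = c \<and> d < N a b c then scal C (V c) (ed a b c d \<odot> f) else 0)"
  by (simp add: hc_def)

definition Ft where
  "Ft i j k l m n a \<alpha> \<beta> \<gamma> = scal C (V m) (ed k l m a \<odot> (((ed i j k \<alpha> \<boxtimes> idm (V l)) \<odot> (idm (V i) \<boxtimes> eb j l n \<beta>)) \<odot> eb i n m \<gamma>))"

lemma Wt_val:
  assumes I: "i \<in> I" "j \<in> I" "k \<in> I" "l \<in> I" "m \<in> I" "n \<in> I" and \<alpha>: "\<alpha> < N i j k" and a: "a < N k l m"
  shows "scal C (V m) (ed k l m a \<odot> (((ed i j k \<alpha> \<boxtimes> idm (V l)) \<odot> (idm (V i) \<boxtimes> proj C V N eb (ev (j', l', n', \<beta>)) j l n))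
            \<odot> proj C V N eb (ev (i', n'', m', \<gamma>)) i n m))
       = (if j' = j \<and> l' = l \<and> n' = n \<and> \<beta> < N j l n \<and> i' = i \<and> n'' = n \<and> m' = m \<and> \<gamma> < N i n m
          then Ft i j k l m n a \<alpha> \<beta> \<gamma> else 0)"
proof -
  let ?Px = "proj C V N eb (ev (j', l', n', \<beta>)) j l n"
  have G1: "linfun (V m) (V i \<otimes> V n) (\<lambda>w. scal C (V m) (ed k l m a \<odot> (((ed i j k \<alpha> \<boxtimes> idm (V l)) \<odot> (idm (V i) \<boxtimes> ?Px)) \<odot> w)))"
    by (rule lf_scal'[where m=m], (rule lm_rules)+) (use I \<alpha> a in auto)
  have s1: "scal C (V m) (ed k l m a \<odot> (((ed i j k \<alpha> \<boxtimes> idm (V l)) \<odot> (idm (V i) \<boxtimes> ?Px))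
            \<odot> proj C V N eb (ev (i', n'', m', \<gamma>)) i n m))
      = (if i' = i \<and> n'' = n \<and> m' = m \<and> \<gamma> < N i n m then
          scal C (V m) (ed k l m a \<odot> (((ed i j k \<alpha> \<boxtimes> idm (V l)) \<odot> (idm (V i) \<boxtimes> ?Px)) \<odot> eb i n m \<gamma>)) else 0)"
    by (rule proj_lin[OF I(1) I(6) I(5) G1])
  show ?thesis
  proof (cases "i' = i \<and> n'' = n \<and> m' = m \<and> \<gamma> < N i n m")
    case False then show ?thesis using s1 by auto
  next
    case True
    have G2: "linfun (V n) (V j \<otimes> V l) (\<lambda>w. scal C (V m) (ed k l m a \<odot> (((ed i j k \<alpha> \<boxtimes> idm (V l)) \<odot> (idm (V i) \<boxtimes> w)) \<odot> eb i n m \<gamma>)))"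
      by (rule lf_scal'[where m=m], (rule lm_rules)+) (use I \<alpha> a True in auto)
    have s2: "scal C (V m) (ed k l m a \<odot> (((ed i j k \<alpha> \<boxtimes> idm (V l)) \<odot> (idm (V i) \<boxtimes> ?Px)) \<odot> eb i n m \<gamma>))
       = (if j' = j \<and> l' = l \<and> n' = n \<and> \<beta> < N j l n then Ft i j k l m n a \<alpha> \<beta> \<gamma> else 0)"
      unfolding Ft_def by (rule proj_lin[OF I(2) I(4) I(6) G2])
    show ?thesis using s1 s2 True by auto
  qed
qed


lemma taup_ev:
  "tau_pure C I V N eb ed (ev (j', l', n, \<beta>)) (ev (i', n', m', \<gamma>)) (k, l, m, a) (i, j, k', \<alpha>) =
   (if k' = k \<and> j' = j \<and> l' = l \<and> i' = i \<and> n' = n \<and> m' = m \<and> i \<in> I \<and> j \<in> I \<and> k \<in> I \<and> l \<in> I \<and> m \<in> I \<and> n \<in> I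
       \<and> \<alpha> < N i j k \<and> a < N k l m \<and> \<beta> < N j l n \<and> \<gamma> < N i n m
    then Ft i j k l m n a \<alpha> \<beta> \<gamma> else 0)" (is "_ = ?R")
proof -
  let ?S = "idx7 I (\<lambda>i j k l m n. N i j k)"
  let ?f = "\<lambda>(i2, j2, k2, l2, m2, n2, a2).
      tens (hc C V N ed k2 l2 m2
              (cCmp C (cCmp C (cTmo C (ed i2 j2 k2 a2) (cId C (V l2)))
                               (cTmo C (cId C (V i2)) (proj C V N eb (ev (j', l', n, \<beta>)) j2 l2 n2)))
                      (proj C V N eb (ev (i', n', m', \<gamma>)) i2 n2 m2)))
           (hc C V N ed i2 j2 k2 (eb i2 j2 k2 a2)) (k, l, m, a) (i, j, k', \<alpha>)"
  let ?t0 = "(i, j, k, l, m, n, \<alpha>)"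
  have eq: "?f s = (if s = ?t0 then ?R else 0)" if sS: "s \<in> ?S" for s
  proof -
    obtain i2 j2 k2 l2 m2 n2 a2 where s: "s = (i2, j2, k2, l2, m2, n2, a2)" by (cases s) auto
    have I2: "i2 \<in> I" "j2 \<in> I" "k2 \<in> I" "l2 \<in> I" "m2 \<in> I" "n2 \<in> I" and a2: "a2 < N i2 j2 k2"
      using sS s by (auto simp: idx7_def)
    show ?thesis
    proof (cases "i = i2 \<and> j = j2 \<and> k' = k2 \<and> \<alpha> = a2 \<and> k = k2 \<and> l = l2 \<and> m = m2 \<and> a < N k l m")
      case False
      then have "?f s = 0" using I2 a2 dual[OF I2(1-3) _ a2] by (auto simp: s tens_def hc_eq)
      then show ?thesis using False s by auto
    next
      case True
      then have f: "?f s = scal C (V m) (ed k l m a \<odot> (((ed i j k \<alpha> \<boxtimes> idm (V l)) \<odot> (idm (V i) \<boxtimes> proj C V N eb (ev (j', l', n, \<beta>)) j l n2))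
            \<odot> proj C V N eb (ev (i', n', m', \<gamma>)) i n2 m))"
        using I2 a2 dual[OF I2(1-3) a2 a2] by (auto simp: s tens_def hc_eq)
      have w: "\<dots> = (if j' = j \<and> l' = l \<and> n = n2 \<and> \<beta> < N j l n2 \<and> i' = i \<and> n' = n2 \<and> m' = m \<and> \<gamma> < N i n2 m
          then Ft i j k l m n2 a \<alpha> \<beta> \<gamma> else 0)"
        by (rule Wt_val) (use True I2 a2 in auto)
      show ?thesis using f w True s I2 a2 by auto
    qed
  qed
  have "tau_pure C I V N eb ed (ev (j', l', n, \<beta>)) (ev (i', n', m', \<gamma>)) (k, l, m, a) (i, j, k', \<alpha>) = fsum ?f ?S"
    unfolding tau_pure_def by simp
  also have "\<dots> = fsum (\<lambda>s. if s = ?t0 then ?R else 0) ?S" by (rule fsum_cong) (rule eq)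
  also have "\<dots> = (if ?t0 \<in> ?S then ?R else 0)"
  proof -
    have sub: "{s \<in> ?S. (\<lambda>s. if s = ?t0 then ?R else 0) s \<noteq> 0} \<subseteq> {?t0}" by auto
    show ?thesis using fsum_single[OF sub] by simp
  qed
  also have "\<dots> = ?R" by (auto simp: idx7_def)
  finally show ?thesis .
qed


definition Rt where
  "Rt v i j k l m a \<alpha> = (\<Sum>n\<in>KK j l. \<Sum>\<beta><N j l n. \<Sum>\<gamma><N i n m.
      v (j, l, n, \<beta>) (i, n, m, \<gamma>) * Ft i j k l m n a \<alpha> \<beta> \<gamma>)"

lemma sum3_Sigma:
  assumes "finite K" and "\<And>n. finite (B n)" and "\<And>n. finite (D n)"
  shows "(\<Sum>n\<in>K. \<Sum>\<beta>\<in>B n. \<Sum>\<gamma>\<in>D n. f n \<beta> \<gamma>) = (\<Sum>(n, \<beta>, \<gamma>)\<in>(SIGMA n:K. B n \<times> D n). f n \<beta> \<gamma>)"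
proof -
  have "(\<Sum>n\<in>K. \<Sum>\<beta>\<in>B n. \<Sum>\<gamma>\<in>D n. f n \<beta> \<gamma>) = (\<Sum>n\<in>K. \<Sum>(\<beta>, \<gamma>)\<in>B n \<times> D n. f n \<beta> \<gamma>)"
    by (rule sum.cong) (auto simp: sum.cartesian_product assms)
  also have "\<dots> = (\<Sum>(n, \<beta>, \<gamma>)\<in>(SIGMA n:K. B n \<times> D n). f n \<beta> \<gamma>)"
    by (subst sum.Sigma) (auto simp: assms split_def)
  finally show ?thesis .
qed

lemma tau_eq:
  "tau C I V N eb ed v (k, l, m, a) (i, j, k', \<alpha>) =
   (if k' = k \<and> i \<in> I \<and> j \<in> I \<and> k \<in> I \<and> l \<in> I \<and> m \<in> I \<and> \<alpha> < N i j k \<and> a < N k l m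
    then Rt v i j k l m a \<alpha> else 0)"
proof -
  let ?h = "\<lambda>(b, c). v b c * tau_pure C I V N eb ed (ev b) (ev c) (k, l, m, a) (i, j, k', \<alpha>)"
  have tau: "tau C I V N eb ed v (k, l, m, a) (i, j, k', \<alpha>) = fsum ?h UNIV"
    by (simp add: tau_def linext_def)
  have hv: "?h ((j', l', n, \<beta>), (i', n', m', \<gamma>)) = v (j', l', n, \<beta>) (i', n', m', \<gamma>) *
     (if k' = k \<and> j' = j \<and> l' = l \<and> i' = i \<and> n' = n \<and> m' = m \<and> i \<in> I \<and> j \<in> I \<and> k \<in> I \<and> l \<in> I \<and> m \<in> I \<and> n \<in> I
       \<and> \<alpha> < N i j k \<and> a < N k l m \<and> \<beta> < N j l n \<and> \<gamma> < N i n m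
      then Ft i j k l m n a \<alpha> \<beta> \<gamma> else 0)" for j' l' n \<beta> i' n' m' \<gamma>
    by (simp add: taup_ev)
  show ?thesis
  proof (cases "k' = k \<and> i \<in> I \<and> j \<in> I \<and> k \<in> I \<and> l \<in> I \<and> m \<in> I \<and> \<alpha> < N i j k \<and> a < N k l m")
    case False
    have "fsum ?h UNIV = 0"
    proof (rule fsum_zero)
      fix s :: "('i \<times> 'i \<times> 'i \<times> nat) \<times> ('i \<times> 'i \<times> 'i \<times> nat)"
      obtain j' l' n \<beta> i' n' m' \<gamma> where s: "s = ((j', l', n, \<beta>), (i', n', m', \<gamma>))" by (cases s) auto
      show "?h s = 0" unfolding s hv using False by auto
    qed
    then show ?thesis by (subst if_not_P[OF False]) (use tau in simp)
  next
    case True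
    let ?g = "\<lambda>(n, \<beta>, \<gamma>). ((j, l, n, \<beta>), (i, n, m, \<gamma>))"
    let ?D = "SIGMA n:KK j l. {..<N j l n} \<times> {..<N i n m}"
    have fD: "finite ?D" using KK_finite True by auto
    have inj: "inj_on ?g ?D" by (auto simp: inj_on_def)
    have sub: "{s \<in> UNIV. ?h s \<noteq> 0} \<subseteq> ?g ` ?D"
    proof
      fix s assume "s \<in> {s \<in> UNIV. ?h s \<noteq> 0}"
      then have nz: "?h s \<noteq> 0" by simp
      obtain j' l' n \<beta> i' n' m' \<gamma> where s: "s = ((j', l', n, \<beta>), (i', n', m', \<gamma>))" by (cases s) auto
      have c: "j' = j \<and> l' = l \<and> i' = i \<and> n' = n \<and> m' = m \<and> n \<in> I \<and> \<beta> < N j l n \<and> \<gamma> < N i n m"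
        using nz unfolding s hv by (auto split: if_splits)
      then have "(n, \<beta>, \<gamma>) \<in> ?D" by (auto simp: KK_def)
      then show "s \<in> ?g ` ?D" using c s by force
    qed
    have "fsum ?h UNIV = sum ?h (?g ` ?D)" by (rule fsum_sub) (use fD sub in auto)
    also have "\<dots> = sum (?h \<circ> ?g) ?D" by (rule sum.reindex[OF inj])
    also have "\<dots> = (\<Sum>(n, \<beta>, \<gamma>)\<in>?D. v (j, l, n, \<beta>) (i, n, m, \<gamma>) * Ft i j k l m n a \<alpha> \<beta> \<gamma>)"
    proof (rule sum.cong, simp)
      fix x assume x: "x \<in> ?D"
      obtain n \<beta> \<gamma> where xx: "x = (n, \<beta>, \<gamma>)" by (cases x) auto
      have "n \<in> I" "\<beta> < N j l n" "\<gamma> < N i n m" using x xx by (auto simp: KK_def)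
      then show "(?h \<circ> ?g) x = (case x of (n, \<beta>, \<gamma>) \<Rightarrow> v (j, l, n, \<beta>) (i, n, m, \<gamma>) * Ft i j k l m n a \<alpha> \<beta> \<gamma>)"
        using True xx by (simp add: taup_ev)
    qed
    also have "\<dots> = Rt v i j k l m a \<alpha>"
      unfolding Rt_def lessThan_def[symmetric] by (rule sum3_Sigma[symmetric]) (use KK_finite True in auto)
    finally show ?thesis using tau True by simp
  qed
qed


definition Fb where
  "Fb i j k l m n a' a \<alpha>' a'' = scal C (V m) (ed i n m a' \<odot> (((idm (V i) \<boxtimes> ed j l n a) \<odot> (eb i j k \<alpha>' \<boxtimes> idm (V l))) \<odot> eb k l m a''))"

lemma Wb_val:
  assumes I: "i \<in> I" "j \<in> I" "k \<in> I" "l \<in> I" "m \<in> I" "n \<in> I" and a: "a < N j l n" and a': "a' < N i n m"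
  shows "scal C (V m) (ed i n m a' \<odot> (((idm (V i) \<boxtimes> ed j l n a) \<odot> (proj C V N eb (ev (i', j', k', \<alpha>')) i j k \<boxtimes> idm (V l)))
            \<odot> proj C V N eb (ev (k'', l', m', a'')) k l m))
       = (if i' = i \<and> j' = j \<and> k' = k \<and> \<alpha>' < N i j k \<and> k'' = k \<and> l' = l \<and> m' = m \<and> a'' < N k l m
          then Fb i j k l m n a' a \<alpha>' a'' else 0)"
proof -
  let ?Px = "proj C V N eb (ev (i', j', k', \<alpha>')) i j k"
  have G1: "linfun (V m) (V k \<otimes> V l) (\<lambda>w. scal C (V m) (ed i n m a' \<odot> (((idm (V i) \<boxtimes> ed j l n a) \<odot> (?Px \<boxtimes> idm (V l))) \<odot> w)))"
    by (rule lf_scal'[where m=m], (rule lm_rules)+) (use I a a' in auto)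
  have s1: "scal C (V m) (ed i n m a' \<odot> (((idm (V i) \<boxtimes> ed j l n a) \<odot> (?Px \<boxtimes> idm (V l)))
            \<odot> proj C V N eb (ev (k'', l', m', a'')) k l m))
      = (if k'' = k \<and> l' = l \<and> m' = m \<and> a'' < N k l m then
          scal C (V m) (ed i n m a' \<odot> (((idm (V i) \<boxtimes> ed j l n a) \<odot> (?Px \<boxtimes> idm (V l))) \<odot> eb k l m a'')) else 0)"
    by (rule proj_lin[OF I(3) I(4) I(5) G1])
  show ?thesis
  proof (cases "k'' = k \<and> l' = l \<and> m' = m \<and> a'' < N k l m")
    case False then show ?thesis using s1 by auto
  next
    case True
    have G2: "linfun (V k) (V i \<otimes> V j) (\<lambda>w. scal C (V m) (ed i n m a' \<odot> (((idm (V i) \<boxtimes> ed j l n a) \<odot> (w \<boxtimes> idm (V l))) \<odot> eb k l m a'')))"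
      by (rule lf_scal'[where m=m], (rule lm_rules)+) (use I a a' True in auto)
    have s2: "scal C (V m) (ed i n m a' \<odot> (((idm (V i) \<boxtimes> ed j l n a) \<odot> (?Px \<boxtimes> idm (V l))) \<odot> eb k l m a''))
       = (if i' = i \<and> j' = j \<and> k' = k \<and> \<alpha>' < N i j k then Fb i j k l m n a' a \<alpha>' a'' else 0)"
      unfolding Fb_def by (rule proj_lin[OF I(1) I(2) I(3) G2])
    show ?thesis using s1 s2 True by auto
  qed
qed

lemma taubp_ev:
  "taubar_pure C I V N eb ed (ev (i', j', k, \<alpha>')) (ev (k', l', m', a'')) (i, n, m, a') (j, l, n', a) =
   (if n' = n \<and> i' = i \<and> j' = j \<and> k' = k \<and> l' = l \<and> m' = m \<and> i \<in> I \<and> j \<in> I \<and> k \<in> I \<and> l \<in> I \<and> m \<in> I \<and> n \<in> I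
       \<and> a < N j l n \<and> a' < N i n m \<and> \<alpha>' < N i j k \<and> a'' < N k l m
    then Fb i j k l m n a' a \<alpha>' a'' else 0)" (is "_ = ?R")
proof -
  let ?S = "idx7 I (\<lambda>i j k l m n. N j l n)"
  let ?f = "\<lambda>(i2, j2, k2, l2, m2, n2, a2).
      tens (hc C V N ed i2 n2 m2
              (cCmp C (cCmp C (cTmo C (cId C (V i2)) (ed j2 l2 n2 a2))
                               (cTmo C (proj C V N eb (ev (i', j', k, \<alpha>')) i2 j2 k2) (cId C (V l2))))
                      (proj C V N eb (ev (k', l', m', a'')) k2 l2 m2)))
           (hc C V N ed j2 l2 n2 (eb j2 l2 n2 a2)) (i, n, m, a') (j, l, n', a)"
  let ?t0 = "(i, j, k, l, m, n, a)"
  have eq: "?f s = (if s = ?t0 then ?R else 0)" if sS: "s \<in> ?S" for s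
  proof -
    obtain i2 j2 k2 l2 m2 n2 a2 where s: "s = (i2, j2, k2, l2, m2, n2, a2)" by (cases s) auto
    have I2: "i2 \<in> I" "j2 \<in> I" "k2 \<in> I" "l2 \<in> I" "m2 \<in> I" "n2 \<in> I" and a2: "a2 < N j2 l2 n2"
      using sS s by (auto simp: idx7_def)
    show ?thesis
    proof (cases "j = j2 \<and> l = l2 \<and> n' = n2 \<and> a = a2 \<and> i = i2 \<and> n = n2 \<and> m = m2 \<and> a' < N i n m")
      case False
      then have "?f s = 0" using I2 a2 dual[OF I2(2) I2(4) I2(6) _ a2] by (auto simp: s tens_def hc_eq)
      then show ?thesis using False s by auto
    next
      case True
      then have f: "?f s = scal C (V m) (ed i n m a' \<odot> (((idm (V i) \<boxtimes> ed j l n a) \<odot> (proj C V N eb (ev (i', j', k, \<alpha>')) i j k2 \<boxtimes> idm (V l)))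
            \<odot> proj C V N eb (ev (k', l', m', a'')) k2 l m))"
        using I2 a2 dual[OF I2(2) I2(4) I2(6) a2 a2] by (auto simp: s tens_def hc_eq)
      have w: "\<dots> = (if i' = i \<and> j' = j \<and> k = k2 \<and> \<alpha>' < N i j k2 \<and> k' = k2 \<and> l' = l \<and> m' = m \<and> a'' < N k2 l m
          then Fb i j k2 l m n a' a \<alpha>' a'' else 0)"
        by (rule Wb_val) (use True I2 a2 in auto)
      show ?thesis using f w True s I2 a2 by auto
    qed
  qed
  have "taubar_pure C I V N eb ed (ev (i', j', k, \<alpha>')) (ev (k', l', m', a'')) (i, n, m, a') (j, l, n', a) = fsum ?f ?S"
    unfolding taubar_pure_def by simp
  also have "\<dots> = fsum (\<lambda>s. if s = ?t0 then ?R else 0) ?S" by (rule fsum_cong) (rule eq)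
  also have "\<dots> = (if ?t0 \<in> ?S then ?R else 0)"
  proof -
    have sub: "{s \<in> ?S. (\<lambda>s. if s = ?t0 then ?R else 0) s \<noteq> 0} \<subseteq> {?t0}" by auto
    show ?thesis using fsum_single[OF sub] by simp
  qed
  also have "\<dots> = ?R" by (auto simp: idx7_def)
  finally show ?thesis .
qed

definition Rb where
  "Rb v i j l m n a' a = (\<Sum>k\<in>KK i j. \<Sum>\<alpha>'<N i j k. \<Sum>a''<N k l m.
      v (i, j, k, \<alpha>') (k, l, m, a'') * Fb i j k l m n a' a \<alpha>' a'')"

lemma taubar_eq:
  "taubar C I V N eb ed v (i, n, m, a') (j, l, n', a) =
   (if n' = n \<and> i \<in> I \<and> j \<in> I \<and> l \<in> I \<and> m \<in> I \<and> n \<in> I \<and> a < N j l n \<and> a' < N i n m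
    then Rb v i j l m n a' a else 0)"
proof -
  let ?h = "\<lambda>(b, c). v b c * taubar_pure C I V N eb ed (ev b) (ev c) (i, n, m, a') (j, l, n', a)"
  have tau: "taubar C I V N eb ed v (i, n, m, a') (j, l, n', a) = fsum ?h UNIV"
    by (simp add: taubar_def linext_def)
  have hv: "?h ((i', j', k, \<alpha>'), (k', l', m', a'')) = v (i', j', k, \<alpha>') (k', l', m', a'') *
     (if n' = n \<and> i' = i \<and> j' = j \<and> k' = k \<and> l' = l \<and> m' = m \<and> i \<in> I \<and> j \<in> I \<and> k \<in> I \<and> l \<in> I \<and> m \<in> I \<and> n \<in> I
       \<and> a < N j l n \<and> a' < N i n m \<and> \<alpha>' < N i j k \<and> a'' < N k l m
      then Fb i j k l m n a' a \<alpha>' a'' else 0)" for i' j' k \<alpha>' k' l' m' a''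
    by (simp add: taubp_ev)
  show ?thesis
  proof (cases "n' = n \<and> i \<in> I \<and> j \<in> I \<and> l \<in> I \<and> m \<in> I \<and> n \<in> I \<and> a < N j l n \<and> a' < N i n m")
    case False
    have "fsum ?h UNIV = 0"
    proof (rule fsum_zero)
      fix s :: "('i \<times> 'i \<times> 'i \<times> nat) \<times> ('i \<times> 'i \<times> 'i \<times> nat)"
      obtain i' j' k \<alpha>' k' l' m' a'' where s: "s = ((i', j', k, \<alpha>'), (k', l', m', a''))" by (cases s) auto
      show "?h s = 0" unfolding s hv using False by auto
    qed
    then show ?thesis by (subst if_not_P[OF False]) (use tau in simp)
  next
    case True
    let ?g = "\<lambda>(k, \<alpha>', a''). ((i, j, k, \<alpha>'), (k, l, m, a''))"
    let ?D = "SIGMA k:KK i j. {..<N i j k} \<times> {..<N k l m}"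
    have fD: "finite ?D" using KK_finite True by auto
    have inj: "inj_on ?g ?D" by (auto simp: inj_on_def)
    have sub: "{s \<in> UNIV. ?h s \<noteq> 0} \<subseteq> ?g ` ?D"
    proof
      fix s assume "s \<in> {s \<in> UNIV. ?h s \<noteq> 0}"
      then have nz: "?h s \<noteq> 0" by simp
      obtain i' j' k \<alpha>' k' l' m' a'' where s: "s = ((i', j', k, \<alpha>'), (k', l', m', a''))" by (cases s) auto
      have c: "i' = i \<and> j' = j \<and> k' = k \<and> l' = l \<and> m' = m \<and> k \<in> I \<and> \<alpha>' < N i j k \<and> a'' < N k l m"
        using nz unfolding s hv by (auto split: if_splits)
      then have "(k, \<alpha>', a'') \<in> ?D" by (auto simp: KK_def)
      then show "s \<in> ?g ` ?D" using c s by force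
    qed
    have "fsum ?h UNIV = sum ?h (?g ` ?D)" by (rule fsum_sub) (use fD sub in auto)
    also have "\<dots> = sum (?h \<circ> ?g) ?D" by (rule sum.reindex[OF inj])
    also have "\<dots> = (\<Sum>(k, \<alpha>', a'')\<in>?D. v (i, j, k, \<alpha>') (k, l, m, a'') * Fb i j k l m n a' a \<alpha>' a'')"
    proof (rule sum.cong, simp)
      fix x assume x: "x \<in> ?D"
      obtain k \<alpha>' a'' where xx: "x = (k, \<alpha>', a'')" by (cases x) auto
      have "k \<in> I" "\<alpha>' < N i j k" "a'' < N k l m" using x xx by (auto simp: KK_def)
      then show "(?h \<circ> ?g) x = (case x of (k, \<alpha>', a'') \<Rightarrow> v (i, j, k, \<alpha>') (k, l, m, a'') * Fb i j k l m n a' a \<alpha>' a'')"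
        using True xx by (simp add: taubp_ev)
    qed
    also have "\<dots> = Rb v i j l m n a' a"
      unfolding Rb_def lessThan_def[symmetric] by (rule sum3_Sigma[symmetric]) (use KK_finite True in auto)
    finally show ?thesis using tau True by simp
  qed
qed

end



context psi_ctx
begin

lemma re1: "g \<in> Hm X0 X1 \<Longrightarrow> F \<in> Hm X1 X2 \<Longrightarrow> p \<in> Hm X2 X3 \<Longrightarrow> q \<in> Hm X3 X2' \<Longrightarrow> A \<in> Hm X2' X4 \<Longrightarrow>
   (A \<odot> q) \<odot> ((p \<odot> F) \<odot> g) = (A \<odot> (q \<odot> p)) \<odot> (F \<odot> g)"
proof -
  assume g: "g \<in> Hm X0 X1" and F: "F \<in> Hm X1 X2" and p: "p \<in> Hm X2 X3" and q: "q \<in> Hm X3 X2'" and A: "A \<in> Hm X2' X4"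
  have "(p \<odot> F) \<odot> g = p \<odot> (F \<odot> g)" using assoc[OF g F p] by simp
  then have "(A \<odot> q) \<odot> ((p \<odot> F) \<odot> g) = ((A \<odot> q) \<odot> p) \<odot> (F \<odot> g)"
    using assoc[OF comp_hom[OF g F] p comp_hom[OF q A]] by simp
  also have "(A \<odot> q) \<odot> p = A \<odot> (q \<odot> p)" using assoc[OF p q A] by simp
  finally show ?thesis .
qed

lemma tm_comp_idl: "e \<in> Hm X Y \<Longrightarrow> e' \<in> Hm Z X \<Longrightarrow> idm W \<boxtimes> (e \<odot> e') = (idm W \<boxtimes> e) \<odot> (idm W \<boxtimes> e')"
  using interchange[of "idm W" W W "idm W" W e' Z X e Y] id_l[of "idm W" W W] by simp
lemma tm_comp_idr: "e \<in> Hm X Y \<Longrightarrow> e' \<in> Hm Z X \<Longrightarrow> (e \<odot> e') \<boxtimes> idm W = (e \<boxtimes> idm W) \<odot> (e' \<boxtimes> idm W)"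
  using interchange[of e' Z X e Y "idm W" W W "idm W" W] id_l[of "idm W" W W] by simp

lemma inv1_inner:
  assumes I: "i \<in> I" "j \<in> I" "k \<in> I" "k' \<in> I" "l \<in> I" "m \<in> I"
    and a: "a < N i j k" and b: "b < N k l m" and \<alpha>': "\<alpha>' < N i j k'" and a'': "a'' < N k' l m"
  shows "(\<Sum>n\<in>KK j l. \<Sum>\<beta><N j l n. \<Sum>\<gamma><N i n m. Fb i j k' l m n \<gamma> \<beta> \<alpha>' a'' * Ft i j k l m n b a \<beta> \<gamma>)
       = (if gg C I V j l \<and> k' = k \<and> \<alpha>' = a \<and> a'' = b then 1 else 0)"
proof -
  define E where "E = ed k l m b"
  define A where "A = ed i j k a \<boxtimes> idm (V l)"
  define F where "F = eb i j k' \<alpha>' \<boxtimes> idm (V l)"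
  define g where "g = eb k' l m a''"
  define H where "H = (\<lambda>w. scal C (V m) (E \<odot> ((A \<odot> (idm (V i) \<boxtimes> w)) \<odot> (F \<odot> g))))"
  have hE: "E \<in> Hm (V k \<otimes> V l) (V m)" unfolding E_def using I b by blast
  have hA: "A \<in> Hm (V i \<otimes> V j \<otimes> V l) (V k \<otimes> V l)" unfolding A_def using I a tm_hom[OF ed_hom id_hom] by simp
  have hF: "F \<in> Hm (V k' \<otimes> V l) (V i \<otimes> V j \<otimes> V l)" unfolding F_def using I \<alpha>' tm_hom[OF eb_hom id_hom] by simp
  have hg: "g \<in> Hm (V m) (V k' \<otimes> V l)" unfolding g_def using I a'' by blast
  have step1: "(\<Sum>\<gamma><N i n m. Fb i j k' l m n \<gamma> \<beta> \<alpha>' a'' * Ft i j k l m n b a \<beta> \<gamma>) = H (eb j l n \<beta> \<odot> ed j l n \<beta>)"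
    if n: "n \<in> KK j l" and \<beta>: "\<beta> < N j l n" for n \<beta>
  proof -
    have nI: "n \<in> I" using n KK_I by blast
    have he: "eb j l n \<beta> \<in> Hm (V n) (V j \<otimes> V l)" using I nI \<beta> by blast
    have he': "ed j l n \<beta> \<in> Hm (V j \<otimes> V l) (V n)" using I nI \<beta> by blast
    have hp: "idm (V i) \<boxtimes> ed j l n \<beta> \<in> Hm (V i \<otimes> V j \<otimes> V l) (V i \<otimes> V n)" using tm_hom[OF id_hom he'] by simp
    have hq: "idm (V i) \<boxtimes> eb j l n \<beta> \<in> Hm (V i \<otimes> V n) (V i \<otimes> V j \<otimes> V l)" using tm_hom[OF id_hom he] by simp
    define Y where "Y = ((idm (V i) \<boxtimes> ed j l n \<beta>) \<odot> F) \<odot> g"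
    define G where "G = (\<lambda>w. scal C (V m) (E \<odot> ((A \<odot> (idm (V i) \<boxtimes> eb j l n \<beta>)) \<odot> w)))"
    have hY: "Y \<in> Hm (V m) (V i \<otimes> V n)" unfolding Y_def using hp hF hg by blast
    have lG: "linfun (V m) (V i \<otimes> V n) G"
      unfolding G_def by (rule lf_scal'[where m=m], (rule lm_rules)+)
         (use I nI \<beta> a b hE hA hq in \<open>auto simp: hom_iff\<close>)
    have "(\<Sum>\<gamma><N i n m. Fb i j k' l m n \<gamma> \<beta> \<alpha>' a'' * Ft i j k l m n b a \<beta> \<gamma>)
        = (\<Sum>\<gamma><N i n m. scal C (V m) (ed i n m \<gamma> \<odot> Y) * G (eb i n m \<gamma>))"
      by (rule sum.cong) (simp_all add: Fb_def Ft_def Y_def G_def E_def A_def F_def g_def)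
    also have "\<dots> = G Y" by (rule exp_up[OF I(1) nI I(6) hY lG])
    also have "\<dots> = H (eb j l n \<beta> \<odot> ed j l n \<beta>)"
      unfolding G_def H_def Y_def tm_comp_idl[OF he he'] using re1[OF hg hF hp hq hA] by simp
    finally show ?thesis .
  qed
  have lH: "linfun (V j \<otimes> V l) (V j \<otimes> V l) H"
    unfolding H_def by (rule lf_scal'[where m=m], (rule lm_rules)+)
         (use I hE hA hF hg in \<open>auto simp: hom_iff\<close>)
  have "(\<Sum>n\<in>KK j l. \<Sum>\<beta><N j l n. \<Sum>\<gamma><N i n m. Fb i j k' l m n \<gamma> \<beta> \<alpha>' a'' * Ft i j k l m n b a \<beta> \<gamma>)
      = (\<Sum>n\<in>KK j l. \<Sum>\<beta><N j l n. H (eb j l n \<beta> \<odot> ed j l n \<beta>))"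
    by (rule sum.cong[OF refl], rule sum.cong[OF refl]) (simp add: step1)
  also have "\<dots> = (if gg C I V j l then H (idm (V j \<otimes> V l)) else 0)"
    by (rule completeness[OF I(2) I(5) lH])
  also have "H (idm (V j \<otimes> V l)) = (if k' = k \<and> \<alpha>' = a \<and> a'' = b then 1 else 0)"
  proof -
    have "idm (V i) \<boxtimes> idm (V j \<otimes> V l) = idm (V i \<otimes> V j \<otimes> V l)" by simp
    then have h1: "H (idm (V j \<otimes> V l)) = scal C (V m) (E \<odot> (A \<odot> (F \<odot> g)))"
      unfolding H_def using id_r[OF hA] by simp
    have "A \<odot> (F \<odot> g) = (A \<odot> F) \<odot> g" using assoc[OF hg hF hA] .
    also have "A \<odot> F = (ed i j k a \<odot> eb i j k' \<alpha>') \<boxtimes> idm (V l)"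
      unfolding A_def F_def using tm_comp_idr[OF ed_hom[OF I(1,2,3) a] eb_hom[OF I(1,2,4) \<alpha>']] by simp
    finally have h2: "A \<odot> (F \<odot> g) = ((ed i j k a \<odot> eb i j k' \<alpha>') \<boxtimes> idm (V l)) \<odot> g" .
    have hx: "ed i j k a \<odot> eb i j k' \<alpha>' \<in> Hm (V k') (V k)" using I a \<alpha>' by blast
    show ?thesis
    proof (cases "k' = k")
      case False
      then have "ed i j k a \<odot> eb i j k' \<alpha>' = zr (V k') (V k)" using hx hom_distinct[OF I(4) I(3)] by auto
      then have "A \<odot> (F \<odot> g) = zr (V m) (V k \<otimes> V l)"
        using h2 tm_zr_l[of "idm (V l)" "V l" "V l" "V k'" "V k"] comp_zr_l[OF hg] by simp
      then show ?thesis using h1 comp_zr_r[OF hE] scal_zr[OF simple[OF I(6)]] False by simp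
    next
      case True
      have hg: "g \<in> Hm (V m) (V k \<otimes> V l)" using hg True by simp
      define c where "c = scal C (V k) (ed i j k a \<odot> eb i j k' \<alpha>')"
      have c: "c = (if a = \<alpha>' then 1 else 0)" unfolding c_def True using dual[OF I(1,2,3) a] \<alpha>' True by simp
      have "ed i j k a \<odot> eb i j k' \<alpha>' = sm c (idm (V k))"
        unfolding c_def using endo_scal[OF simple[OF I(3)]] hx True by simp
      then have "A \<odot> (F \<odot> g) = sm c g"
        using h2 tm_sm_l[of c "idm (V k)" "idm (V l)"] comp_sm_l[OF hg id_hom, of c] id_l[OF hg] True by simp
      then have "E \<odot> (A \<odot> (F \<odot> g)) = sm c (E \<odot> g)" using comp_sm_r[OF hg hE] by simp
      moreover have "E \<odot> g \<in> Hm (V m) (V m)" using hE hg True by blast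
      ultimately have "H (idm (V j \<otimes> V l)) = c * scal C (V m) (E \<odot> g)"
        using h1 linfun_scal[OF simple[OF I(6)]] unfolding linfun_def by auto
      moreover have "scal C (V m) (E \<odot> g) = (if b = a'' then 1 else 0)"
        unfolding E_def g_def using dual[OF I(3) I(5) I(6) b] a'' True by simp
      ultimately show ?thesis using c True by auto
    qed
  qed
  finally show ?thesis by auto
qed


lemma swap33:
  assumes f1: "finite K1" "\<And>n. finite (B1 n)" "\<And>n. finite (C1 n)"
    and f2: "finite K2" "\<And>n. finite (B2 n)" "\<And>n. finite (C2 n)"
  shows "(\<Sum>n\<in>K1. \<Sum>\<beta>\<in>B1 n. \<Sum>\<gamma>\<in>C1 n. \<Sum>k\<in>K2. \<Sum>\<alpha>\<in>B2 k. \<Sum>a\<in>C2 k. f n \<beta> \<gamma> k \<alpha> a)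
       = (\<Sum>k\<in>K2. \<Sum>\<alpha>\<in>B2 k. \<Sum>a\<in>C2 k. \<Sum>n\<in>K1. \<Sum>\<beta>\<in>B1 n. \<Sum>\<gamma>\<in>C1 n. f n \<beta> \<gamma> k \<alpha> a)"
proof -
  let ?D1 = "SIGMA n:K1. B1 n \<times> C1 n" and ?D2 = "SIGMA k:K2. B2 k \<times> C2 k"
  have "(\<Sum>n\<in>K1. \<Sum>\<beta>\<in>B1 n. \<Sum>\<gamma>\<in>C1 n. \<Sum>k\<in>K2. \<Sum>\<alpha>\<in>B2 k. \<Sum>a\<in>C2 k. f n \<beta> \<gamma> k \<alpha> a)
      = (\<Sum>(n, \<beta>, \<gamma>)\<in>?D1. \<Sum>k\<in>K2. \<Sum>\<alpha>\<in>B2 k. \<Sum>a\<in>C2 k. f n \<beta> \<gamma> k \<alpha> a)"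
    by (rule sum3_Sigma[OF f1])
  also have "\<dots> = (\<Sum>(n, \<beta>, \<gamma>)\<in>?D1. \<Sum>(k, \<alpha>, a)\<in>?D2. f n \<beta> \<gamma> k \<alpha> a)"
    by (rule sum.cong[OF refl]) (auto simp: sum3_Sigma[OF f2])
  also have "\<dots> = (\<Sum>(k, \<alpha>, a)\<in>?D2. \<Sum>(n, \<beta>, \<gamma>)\<in>?D1. f n \<beta> \<gamma> k \<alpha> a)"
    unfolding split_def by (rule sum.swap)
  also have "\<dots> = (\<Sum>(k, \<alpha>, a)\<in>?D2. \<Sum>n\<in>K1. \<Sum>\<beta>\<in>B1 n. \<Sum>\<gamma>\<in>C1 n. f n \<beta> \<gamma> k \<alpha> a)"
    by (rule sum.cong[OF refl]) (auto simp: sum3_Sigma[OF f1])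
  also have "\<dots> = (\<Sum>k\<in>K2. \<Sum>\<alpha>\<in>B2 k. \<Sum>a\<in>C2 k. \<Sum>n\<in>K1. \<Sum>\<beta>\<in>B1 n. \<Sum>\<gamma>\<in>C1 n. f n \<beta> \<gamma> k \<alpha> a)"
    by (rule sum3_Sigma[OF f2, symmetric])
  finally show ?thesis .
qed

lemma sum3_delta:
  assumes "finite K" "\<And>n. finite (B n)" "\<And>n. finite (D n)"
  shows "(\<Sum>k'\<in>K. \<Sum>\<alpha>'\<in>B k'. \<Sum>a''\<in>D k'. if k' = k \<and> \<alpha>' = a \<and> a'' = b then f k' \<alpha>' a'' else 0)
       = (if k \<in> K \<and> a \<in> B k \<and> b \<in> D k then f k a b else (0::'k))"
proof -
  have "(\<Sum>k'\<in>K. \<Sum>\<alpha>'\<in>B k'. \<Sum>a''\<in>D k'. if k' = k \<and> \<alpha>' = a \<and> a'' = b then f k' \<alpha>' a'' else 0)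
      = (\<Sum>k'\<in>K. if k' = k then (\<Sum>\<alpha>'\<in>B k'. if \<alpha>' = a then (\<Sum>a''\<in>D k'. if a'' = b then f k' \<alpha>' a'' else 0) else 0) else 0)"
    by (rule sum.cong[OF refl]) (auto intro!: sum.neutral sum.cong)
  also have "\<dots> = (if k \<in> K \<and> a \<in> B k \<and> b \<in> D k then f k a b else 0)"
    using assms by (simp add: sum.delta)
  finally show ?thesis .
qed

lemma inv1:
  "op21 (tau C I V N eb ed) (taubar C I V N eb ed v) = rpi C I V N v"
proof (intro ext)
  fix p q :: "'i \<times> 'i \<times> 'i \<times> nat"
  obtain i j k a where p: "p = (i, j, k, a)" by (cases p) auto
  obtain k' l m b where q: "q = (k', l, m, b)" by (cases q) auto
  let ?z = "\<lambda>x y. taubar C I V N eb ed v y x"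
  have lhs: "op21 (tau C I V N eb ed) (taubar C I V N eb ed v) p q =
    (if k = k' \<and> i \<in> I \<and> j \<in> I \<and> k' \<in> I \<and> l \<in> I \<and> m \<in> I \<and> a < N i j k' \<and> b < N k' l m
     then Rt ?z i j k' l m b a else 0)"
    unfolding p q op21_def by (rule tau_eq)
  have rhs: "rpi C I V N v p q = (if i \<in> I \<and> j \<in> I \<and> k \<in> I \<and> a < N i j k \<and> k' \<in> I \<and> l \<in> I \<and> m \<in> I \<and> b < N k' l m
       \<and> k' = k \<and> gg C I V j l then v p q else 0)"
    unfolding p q rpi_def by (simp add: bidx_def)
  show "op21 (tau C I V N eb ed) (taubar C I V N eb ed v) p q = rpi C I V N v p q"
  proof (cases "k = k' \<and> i \<in> I \<and> j \<in> I \<and> k' \<in> I \<and> l \<in> I \<and> m \<in> I \<and> a < N i j k' \<and> b < N k' l m")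
    case False
    then show ?thesis using lhs rhs by auto
  next
    case True
    then have I: "i \<in> I" "j \<in> I" "k \<in> I" "l \<in> I" "m \<in> I" and a: "a < N i j k" and b: "b < N k l m"
      and kk: "k' = k" by auto
    have fin: "finite (KK j l)" "finite (KK i j)" using KK_finite I by auto
    have "Rt ?z i j k l m b a = (\<Sum>n\<in>KK j l. \<Sum>\<beta><N j l n. \<Sum>\<gamma><N i n m.
        Rb v i j l m n \<gamma> \<beta> * Ft i j k l m n b a \<beta> \<gamma>)"
      unfolding Rt_def
      by (intro sum.cong refl) (auto simp: taubar_eq KK_def I)
    also have "\<dots> = (\<Sum>n\<in>KK j l. \<Sum>\<beta><N j l n. \<Sum>\<gamma><N i n m. \<Sum>k'\<in>KK i j. \<Sum>\<alpha>'<N i j k'. \<Sum>a''<N k' l m.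
        v (i, j, k', \<alpha>') (k', l, m, a'') * (Fb i j k' l m n \<gamma> \<beta> \<alpha>' a'' * Ft i j k l m n b a \<beta> \<gamma>))"
      unfolding Rb_def by (simp add: sum_distrib_right mult.assoc)
    also have "\<dots> = (\<Sum>k'\<in>KK i j. \<Sum>\<alpha>'<N i j k'. \<Sum>a''<N k' l m. \<Sum>n\<in>KK j l. \<Sum>\<beta><N j l n. \<Sum>\<gamma><N i n m.
        v (i, j, k', \<alpha>') (k', l, m, a'') * (Fb i j k' l m n \<gamma> \<beta> \<alpha>' a'' * Ft i j k l m n b a \<beta> \<gamma>))"
      by (rule swap33) (use fin in auto)
    also have "\<dots> = (\<Sum>k'\<in>KK i j. \<Sum>\<alpha>'<N i j k'. \<Sum>a''<N k' l m.
        v (i, j, k', \<alpha>') (k', l, m, a'') * (if gg C I V j l \<and> k' = k \<and> \<alpha>' = a \<and> a'' = b then 1 else 0))"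
    proof (intro sum.cong refl)
      fix k' \<alpha>' a'' assume k': "k' \<in> KK i j" and \<alpha>': "\<alpha>' \<in> {..<N i j k'}" and a'': "a'' \<in> {..<N k' l m}"
      have "(\<Sum>n\<in>KK j l. \<Sum>\<beta><N j l n. \<Sum>\<gamma><N i n m.
          v (i, j, k', \<alpha>') (k', l, m, a'') * (Fb i j k' l m n \<gamma> \<beta> \<alpha>' a'' * Ft i j k l m n b a \<beta> \<gamma>))
         = v (i, j, k', \<alpha>') (k', l, m, a'') * (\<Sum>n\<in>KK j l. \<Sum>\<beta><N j l n. \<Sum>\<gamma><N i n m.
              Fb i j k' l m n \<gamma> \<beta> \<alpha>' a'' * Ft i j k l m n b a \<beta> \<gamma>)"
        by (simp add: sum_distrib_left)
      also have "\<dots> = v (i, j, k', \<alpha>') (k', l, m, a'') * (if gg C I V j l \<and> k' = k \<and> \<alpha>' = a \<and> a'' = b then 1 else 0)"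
        using inv1_inner[of i j k k' l m a b \<alpha>' a''] I a b k' \<alpha>' a'' KK_I by auto
      finally show "(\<Sum>n\<in>KK j l. \<Sum>\<beta><N j l n. \<Sum>\<gamma><N i n m.
          v (i, j, k', \<alpha>') (k', l, m, a'') * (Fb i j k' l m n \<gamma> \<beta> \<alpha>' a'' * Ft i j k l m n b a \<beta> \<gamma>))
         = v (i, j, k', \<alpha>') (k', l, m, a'') * (if gg C I V j l \<and> k' = k \<and> \<alpha>' = a \<and> a'' = b then 1 else 0)" .
    qed
    also have "\<dots> = (\<Sum>k'\<in>KK i j. \<Sum>\<alpha>'<N i j k'. \<Sum>a''<N k' l m.
        if k' = k \<and> \<alpha>' = a \<and> a'' = b then (if gg C I V j l then v (i, j, k', \<alpha>') (k', l, m, a'') else 0) else 0)"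
      by (intro sum.cong refl) auto
    also have "\<dots> = (if gg C I V j l then v (i, j, k, a) (k, l, m, b) else 0)"
      by (subst sum3_delta) (use fin I a b in \<open>auto simp: KK_def\<close>)
    finally show ?thesis using lhs rhs True p q by auto
  qed
qed


lemma inv2_inner:
  assumes I: "i \<in> I" "j \<in> I" "l \<in> I" "m \<in> I" "n \<in> I" "n2 \<in> I"
    and a: "a < N j l n" and a': "a' < N i n m" and \<beta>: "\<beta> < N j l n2" and \<gamma>: "\<gamma> < N i n2 m"
  shows "(\<Sum>k\<in>KK i j. \<Sum>\<alpha>'<N i j k. \<Sum>a''<N k l m. Ft i j k l m n2 a'' \<alpha>' \<beta> \<gamma> * Fb i j k l m n a' a \<alpha>' a'')
       = (if gg C I V i j \<and> n2 = n \<and> \<beta> = a \<and> \<gamma> = a' then 1 else 0)"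
proof -
  define E where "E = ed i n m a'"
  define P where "P = idm (V i) \<boxtimes> ed j l n a"
  define Q where "Q = idm (V i) \<boxtimes> eb j l n2 \<beta>"
  define R where "R = eb i n2 m \<gamma>"
  define H where "H = (\<lambda>w. scal C (V m) (E \<odot> ((P \<odot> (w \<boxtimes> idm (V l))) \<odot> (Q \<odot> R))))"
  have hE: "E \<in> Hm (V i \<otimes> V n) (V m)" unfolding E_def using I a' by blast
  have hP: "P \<in> Hm (V i \<otimes> V j \<otimes> V l) (V i \<otimes> V n)" unfolding P_def using I a tm_hom[OF id_hom ed_hom] by simp
  have hQ: "Q \<in> Hm (V i \<otimes> V n2) (V i \<otimes> V j \<otimes> V l)" unfolding Q_def using I \<beta> tm_hom[OF id_hom eb_hom] by simp
  have hR: "R \<in> Hm (V m) (V i \<otimes> V n2)" unfolding R_def using I \<gamma> by blast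
  have step1: "(\<Sum>a''<N k l m. Ft i j k l m n2 a'' \<alpha>' \<beta> \<gamma> * Fb i j k l m n a' a \<alpha>' a'') = H (eb i j k \<alpha>' \<odot> ed i j k \<alpha>')"
    if k: "k \<in> KK i j" and \<alpha>': "\<alpha>' < N i j k" for k \<alpha>'
  proof -
    have kI: "k \<in> I" using k KK_I by blast
    have he: "eb i j k \<alpha>' \<in> Hm (V k) (V i \<otimes> V j)" using I kI \<alpha>' by blast
    have he': "ed i j k \<alpha>' \<in> Hm (V i \<otimes> V j) (V k)" using I kI \<alpha>' by blast
    have hp: "ed i j k \<alpha>' \<boxtimes> idm (V l) \<in> Hm (V i \<otimes> V j \<otimes> V l) (V k \<otimes> V l)" using tm_hom[OF he' id_hom] by simp
    have hq: "eb i j k \<alpha>' \<boxtimes> idm (V l) \<in> Hm (V k \<otimes> V l) (V i \<otimes> V j \<otimes> V l)" using tm_hom[OF he id_hom] by simp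
    define Z where "Z = ((ed i j k \<alpha>' \<boxtimes> idm (V l)) \<odot> Q) \<odot> R"
    define G where "G = (\<lambda>w. scal C (V m) (E \<odot> ((P \<odot> (eb i j k \<alpha>' \<boxtimes> idm (V l))) \<odot> w)))"
    have hZ: "Z \<in> Hm (V m) (V k \<otimes> V l)" unfolding Z_def using hp hQ hR by blast
    have lG: "linfun (V m) (V k \<otimes> V l) G"
      unfolding G_def by (rule lf_scal'[where m=m], (rule lm_rules)+)
         (use I kI \<alpha>' hE hP hq in \<open>auto simp: hom_iff\<close>)
    have "(\<Sum>a''<N k l m. Ft i j k l m n2 a'' \<alpha>' \<beta> \<gamma> * Fb i j k l m n a' a \<alpha>' a'')
        = (\<Sum>a''<N k l m. scal C (V m) (ed k l m a'' \<odot> Z) * G (eb k l m a''))"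
      by (rule sum.cong) (simp_all add: Fb_def Ft_def Z_def G_def E_def P_def Q_def R_def)
    also have "\<dots> = G Z" by (rule exp_up[OF kI I(3) I(4) hZ lG])
    also have "\<dots> = H (eb i j k \<alpha>' \<odot> ed i j k \<alpha>')"
      unfolding G_def H_def Z_def tm_comp_idr[OF he he'] using re1[OF hR hQ hp hq hP] by simp
    finally show ?thesis .
  qed
  have lH: "linfun (V i \<otimes> V j) (V i \<otimes> V j) H"
    unfolding H_def by (rule lf_scal'[where m=m], (rule lm_rules)+)
         (use I hE hP hQ hR in \<open>auto simp: hom_iff\<close>)
  have "(\<Sum>k\<in>KK i j. \<Sum>\<alpha>'<N i j k. \<Sum>a''<N k l m. Ft i j k l m n2 a'' \<alpha>' \<beta> \<gamma> * Fb i j k l m n a' a \<alpha>' a'')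
      = (\<Sum>k\<in>KK i j. \<Sum>\<alpha>'<N i j k. H (eb i j k \<alpha>' \<odot> ed i j k \<alpha>'))"
    by (rule sum.cong[OF refl], rule sum.cong[OF refl]) (simp add: step1)
  also have "\<dots> = (if gg C I V i j then H (idm (V i \<otimes> V j)) else 0)"
    by (rule completeness[OF I(1) I(2) lH])
  also have "H (idm (V i \<otimes> V j)) = (if n2 = n \<and> \<beta> = a \<and> \<gamma> = a' then 1 else 0)"
  proof -
    have "idm (V i \<otimes> V j) \<boxtimes> idm (V l) = idm (V i \<otimes> V j \<otimes> V l)" by simp
    then have h1: "H (idm (V i \<otimes> V j)) = scal C (V m) (E \<odot> (P \<odot> (Q \<odot> R)))"
      unfolding H_def using id_r[OF hP] by simp
    have "P \<odot> (Q \<odot> R) = (P \<odot> Q) \<odot> R" using assoc[OF hR hQ hP] .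
    also have "P \<odot> Q = idm (V i) \<boxtimes> (ed j l n a \<odot> eb j l n2 \<beta>)"
      unfolding P_def Q_def using tm_comp_idl[OF ed_hom[OF I(2,3,5) a] eb_hom[OF I(2,3,6) \<beta>]] by simp
    finally have h2: "P \<odot> (Q \<odot> R) = (idm (V i) \<boxtimes> (ed j l n a \<odot> eb j l n2 \<beta>)) \<odot> R" .
    have hx: "ed j l n a \<odot> eb j l n2 \<beta> \<in> Hm (V n2) (V n)" using I a \<beta> by blast
    show ?thesis
    proof (cases "n2 = n")
      case False
      then have "ed j l n a \<odot> eb j l n2 \<beta> = zr (V n2) (V n)" using hx hom_distinct[OF I(6) I(5)] by auto
      then have "P \<odot> (Q \<odot> R) = zr (V m) (V i \<otimes> V n)"
        using h2 tm_zr_r[of "idm (V i)" "V i" "V i" "V n2" "V n"] comp_zr_l[OF hR] by simp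
      then show ?thesis using h1 comp_zr_r[OF hE] scal_zr[OF simple[OF I(4)]] False by simp
    next
      case True
      have hR: "R \<in> Hm (V m) (V i \<otimes> V n)" using hR True by simp
      define c where "c = scal C (V n) (ed j l n a \<odot> eb j l n2 \<beta>)"
      have c: "c = (if a = \<beta> then 1 else 0)" unfolding c_def True using dual[OF I(2,3,5) a] \<beta> True by simp
      have "ed j l n a \<odot> eb j l n2 \<beta> = sm c (idm (V n))"
        unfolding c_def using endo_scal[OF simple[OF I(5)]] hx True by simp
      then have "P \<odot> (Q \<odot> R) = sm c R"
        using h2 tm_sm_r[of "idm (V i)" c "idm (V n)"] comp_sm_l[OF hR id_hom, of c] id_l[OF hR] True by simp
      then have "E \<odot> (P \<odot> (Q \<odot> R)) = sm c (E \<odot> R)" using comp_sm_r[OF hR hE] by simp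
      moreover have "E \<odot> R \<in> Hm (V m) (V m)" using hE hR by blast
      ultimately have "H (idm (V i \<otimes> V j)) = c * scal C (V m) (E \<odot> R)"
        using h1 linfun_scal[OF simple[OF I(4)]] unfolding linfun_def by auto
      moreover have "scal C (V m) (E \<odot> R) = (if a' = \<gamma> then 1 else 0)"
        unfolding E_def R_def using dual[OF I(1) I(5) I(4) a'] \<gamma> True by simp
      ultimately show ?thesis using c True by auto
    qed
  qed
  finally show ?thesis by auto
qed

lemma inv2:
  "taubar C I V N eb ed (op21 (tau C I V N eb ed) v) = lpi C I V N v"
proof (intro ext)
  fix p q :: "'i \<times> 'i \<times> 'i \<times> nat"
  obtain i n m a' where p: "p = (i, n, m, a')" by (cases p) auto
  obtain j l n' a where q: "q = (j, l, n', a)" by (cases q) auto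
  let ?z = "op21 (tau C I V N eb ed) v"
  let ?w = "\<lambda>b c. v c b"
  have lhs: "taubar C I V N eb ed ?z p q =
    (if n' = n \<and> i \<in> I \<and> j \<in> I \<and> l \<in> I \<and> m \<in> I \<and> n \<in> I \<and> a < N j l n \<and> a' < N i n m
     then Rb ?z i j l m n a' a else 0)"
    unfolding p q by (rule taubar_eq)
  have rhs: "lpi C I V N v p q = (if i \<in> I \<and> n \<in> I \<and> m \<in> I \<and> a' < N i n m \<and> j \<in> I \<and> l \<in> I \<and> n' \<in> I \<and> a < N j l n'
       \<and> n' = n \<and> gg C I V i j then v p q else 0)"
    unfolding p q lpi_def by (simp add: bidx_def)
  show "taubar C I V N eb ed ?z p q = lpi C I V N v p q"
  proof (cases "n' = n \<and> i \<in> I \<and> j \<in> I \<and> l \<in> I \<and> m \<in> I \<and> n \<in> I \<and> a < N j l n \<and> a' < N i n m")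
    case False
    then show ?thesis using lhs rhs by auto
  next
    case True
    then have I: "i \<in> I" "j \<in> I" "l \<in> I" "m \<in> I" "n \<in> I" and a: "a < N j l n" and a': "a' < N i n m"
      and nn: "n' = n" by auto
    have fin: "finite (KK j l)" "finite (KK i j)" using KK_finite I by auto
    have zz: "?z (i, j, k, \<alpha>') (k, l, m, a'') = Rt ?w i j k l m a'' \<alpha>'"
      if "k \<in> KK i j" "\<alpha>' < N i j k" "a'' < N k l m" for k \<alpha>' a''
      using that I by (simp add: op21_def tau_eq KK_def)
    have "Rb ?z i j l m n a' a = (\<Sum>k\<in>KK i j. \<Sum>\<alpha>'<N i j k. \<Sum>a''<N k l m.
        Rt ?w i j k l m a'' \<alpha>' * Fb i j k l m n a' a \<alpha>' a'')"
      unfolding Rb_def by (intro sum.cong refl) (simp add: zz)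
    also have "\<dots> = (\<Sum>k\<in>KK i j. \<Sum>\<alpha>'<N i j k. \<Sum>a''<N k l m. \<Sum>n2\<in>KK j l. \<Sum>\<beta><N j l n2. \<Sum>\<gamma><N i n2 m.
        v (i, n2, m, \<gamma>) (j, l, n2, \<beta>) * (Ft i j k l m n2 a'' \<alpha>' \<beta> \<gamma> * Fb i j k l m n a' a \<alpha>' a''))"
      unfolding Rt_def by (simp add: sum_distrib_right mult.assoc)
    also have "\<dots> = (\<Sum>n2\<in>KK j l. \<Sum>\<beta><N j l n2. \<Sum>\<gamma><N i n2 m. \<Sum>k\<in>KK i j. \<Sum>\<alpha>'<N i j k. \<Sum>a''<N k l m.
        v (i, n2, m, \<gamma>) (j, l, n2, \<beta>) * (Ft i j k l m n2 a'' \<alpha>' \<beta> \<gamma> * Fb i j k l m n a' a \<alpha>' a''))"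
      by (rule swap33) (use fin in auto)
    also have "\<dots> = (\<Sum>n2\<in>KK j l. \<Sum>\<beta><N j l n2. \<Sum>\<gamma><N i n2 m.
        v (i, n2, m, \<gamma>) (j, l, n2, \<beta>) * (if gg C I V i j \<and> n2 = n \<and> \<beta> = a \<and> \<gamma> = a' then 1 else 0))"
    proof (intro sum.cong refl)
      fix n2 \<beta> \<gamma> assume n2: "n2 \<in> KK j l" and \<beta>: "\<beta> \<in> {..<N j l n2}" and \<gamma>: "\<gamma> \<in> {..<N i n2 m}"
      have "(\<Sum>k\<in>KK i j. \<Sum>\<alpha>'<N i j k. \<Sum>a''<N k l m.
          v (i, n2, m, \<gamma>) (j, l, n2, \<beta>) * (Ft i j k l m n2 a'' \<alpha>' \<beta> \<gamma> * Fb i j k l m n a' a \<alpha>' a''))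
         = v (i, n2, m, \<gamma>) (j, l, n2, \<beta>) * (\<Sum>k\<in>KK i j. \<Sum>\<alpha>'<N i j k. \<Sum>a''<N k l m.
              Ft i j k l m n2 a'' \<alpha>' \<beta> \<gamma> * Fb i j k l m n a' a \<alpha>' a'')"
        by (simp add: sum_distrib_left)
      also have "\<dots> = v (i, n2, m, \<gamma>) (j, l, n2, \<beta>) * (if gg C I V i j \<and> n2 = n \<and> \<beta> = a \<and> \<gamma> = a' then 1 else 0)"
        using inv2_inner[of i j l m n n2 a a' \<beta> \<gamma>] I a a' n2 \<beta> \<gamma> KK_I by auto
      finally show "(\<Sum>k\<in>KK i j. \<Sum>\<alpha>'<N i j k. \<Sum>a''<N k l m.
          v (i, n2, m, \<gamma>) (j, l, n2, \<beta>) * (Ft i j k l m n2 a'' \<alpha>' \<beta> \<gamma> * Fb i j k l m n a' a \<alpha>' a''))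
         = v (i, n2, m, \<gamma>) (j, l, n2, \<beta>) * (if gg C I V i j \<and> n2 = n \<and> \<beta> = a \<and> \<gamma> = a' then 1 else 0)" .
    qed
    also have "\<dots> = (\<Sum>n2\<in>KK j l. \<Sum>\<beta><N j l n2. \<Sum>\<gamma><N i n2 m.
        if n2 = n \<and> \<beta> = a \<and> \<gamma> = a' then (if gg C I V i j then v (i, n2, m, \<gamma>) (j, l, n2, \<beta>) else 0) else 0)"
      by (intro sum.cong refl) auto
    also have "\<dots> = (if gg C I V i j then v (i, n, m, a') (j, l, n, a) else 0)"
      by (subst sum3_delta) (use fin I a a' in \<open>auto simp: KK_def\<close>)
    finally show ?thesis using lhs rhs True p q by auto
  qed
qed

end



context psi_ctx
begin

lemma assoc_s: "cDom C h = cCod C g \<Longrightarrow> cDom C g = cCod C f \<Longrightarrow> (h \<odot> g) \<odot> f = h \<odot> (g \<odot> f)"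
  using ax4 by metis

lemma id_l_s: "cCod C f = A \<Longrightarrow> idm A \<odot> f = f"
  using id_l[of f "cDom C f" A] by (simp add: hom_iff)
lemma id_r_s: "cDom C f = A \<Longrightarrow> f \<odot> idm A = f"
  using id_r[of f A "cCod C f"] by (simp add: hom_iff)

lemma M1:
  assumes h1: "edpah \<in> Hm (P \<otimes> A) H" and h2: "edfdp \<in> Hm (F \<otimes> D) P"
    and h3: "e \<in> Hm Nn (D \<otimes> A)" and h4: "e' \<in> Hm (D \<otimes> A) Nn"
    and h5: "ebab \<in> Hm Nb (A \<otimes> B)" and h6: "eg2 \<in> Hm Na (D \<otimes> Nb)" and h7: "e3 \<in> Hm G (F \<otimes> Na)"
  shows "(((edpah \<odot> ((edfdp \<boxtimes> idm A) \<odot> (idm F \<boxtimes> e))) \<boxtimes> idm B) \<odot> (idm F \<boxtimes> (((e' \<boxtimes> idm B) \<odot> (idm D \<boxtimes> ebab)) \<odot> eg2))) \<odot> e3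
       = (((edpah \<odot> (edfdp \<boxtimes> idm A)) \<boxtimes> idm B) \<odot> (idm F \<boxtimes> ((e \<odot> e') \<boxtimes> idm B))) \<odot> ((idm F \<boxtimes> ((idm D \<boxtimes> ebab) \<odot> eg2)) \<odot> e3)"
proof -
  have d: "cDom C edpah = P \<otimes> A" "cCod C edpah = H" "cDom C edfdp = F \<otimes> D" "cCod C edfdp = P"
    "cDom C e = Nn" "cCod C e = D \<otimes> A" "cDom C e' = D \<otimes> A" "cCod C e' = Nn"
    "cDom C ebab = Nb" "cCod C ebab = A \<otimes> B" "cDom C eg2 = Na" "cCod C eg2 = D \<otimes> Nb"
    "cDom C e3 = G" "cCod C e3 = F \<otimes> Na"
    using assms by (auto simp: hom_iff)
  let ?K = "edpah \<odot> (edfdp \<boxtimes> idm A)"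
  let ?Z = "(idm D \<boxtimes> ebab) \<odot> eg2"
  have x3: "edpah \<odot> ((edfdp \<boxtimes> idm A) \<odot> (idm F \<boxtimes> e)) = ?K \<odot> (idm F \<boxtimes> e)"
    using assoc_s[symmetric] d by simp
  have kA: "?K \<in> Hm (F \<otimes> D \<otimes> A) H" using d by (simp add: hom_iff)
  have eA: "idm F \<boxtimes> e \<in> Hm (F \<otimes> Nn) (F \<otimes> D \<otimes> A)" using d by (simp add: hom_iff)
  have q1: "(?K \<odot> (idm F \<boxtimes> e)) \<boxtimes> idm B = (?K \<boxtimes> idm B) \<odot> (idm F \<boxtimes> (e \<boxtimes> idm B))"
    using tm_comp_idr[OF kA eA, of B] by simp
  have y1: "((e' \<boxtimes> idm B) \<odot> (idm D \<boxtimes> ebab)) \<odot> eg2 = (e' \<boxtimes> idm B) \<odot> ?Z"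
    using assoc_s d by simp
  have zA: "?Z \<in> Hm Na (D \<otimes> A \<otimes> B)" using d by (simp add: hom_iff)
  have e'A: "e' \<boxtimes> idm B \<in> Hm (D \<otimes> A \<otimes> B) (Nn \<otimes> B)" using d by (simp add: hom_iff)
  have q2: "idm F \<boxtimes> ((e' \<boxtimes> idm B) \<odot> ?Z) = (idm F \<boxtimes> (e' \<boxtimes> idm B)) \<odot> (idm F \<boxtimes> ?Z)"
    using tm_comp_idl[OF e'A zA] .
  have eBA: "e \<boxtimes> idm B \<in> Hm (Nn \<otimes> B) (D \<otimes> A \<otimes> B)" using d by (simp add: hom_iff)
  have q3: "(idm F \<boxtimes> (e \<boxtimes> idm B)) \<odot> (idm F \<boxtimes> (e' \<boxtimes> idm B)) = idm F \<boxtimes> ((e \<odot> e') \<boxtimes> idm B)"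
    using tm_comp_idl[OF eBA e'A, of F] tm_comp_idr[OF h3 h4, of B] by simp
  show ?thesis
    unfolding x3 q1 y1 q2 q3[symmetric]
    using d by (simp add: assoc_s)
qed

lemma M2:
  assumes h1: "edpah \<in> Hm (P \<otimes> A) H" and h2: "edfdp \<in> Hm (F \<otimes> D) P"
    and h5: "ebab \<in> Hm Nb (A \<otimes> B)" and h6: "eg2 \<in> Hm Na (D \<otimes> Nb)" and h7: "e3 \<in> Hm G (F \<otimes> Na)"
  shows "(((edpah \<odot> (edfdp \<boxtimes> idm A)) \<boxtimes> idm B) \<odot> (idm F \<boxtimes> (idm (D \<otimes> A) \<boxtimes> idm B))) \<odot> ((idm F \<boxtimes> ((idm D \<boxtimes> ebab) \<odot> eg2)) \<odot> e3)
       = ((edpah \<boxtimes> idm B) \<odot> (idm P \<boxtimes> ebab)) \<odot> (((edfdp \<boxtimes> idm Nb) \<odot> (idm F \<boxtimes> eg2)) \<odot> e3)"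
proof -
  have d: "cDom C edpah = P \<otimes> A" "cCod C edpah = H" "cDom C edfdp = F \<otimes> D" "cCod C edfdp = P"
    "cDom C ebab = Nb" "cCod C ebab = A \<otimes> B" "cDom C eg2 = Na" "cCod C eg2 = D \<otimes> Nb"
    "cDom C e3 = G" "cCod C e3 = F \<otimes> Na"
    using assms by (auto simp: hom_iff)
  have i1: "idm F \<boxtimes> (idm (D \<otimes> A) \<boxtimes> idm B) = idm (F \<otimes> D \<otimes> A \<otimes> B)" by simp
  have kA: "(edpah \<odot> (edfdp \<boxtimes> idm A)) \<boxtimes> idm B \<in> Hm (F \<otimes> D \<otimes> A \<otimes> B) (H \<otimes> B)"
    using d by (simp add: hom_iff)
  have k1: "(edpah \<odot> (edfdp \<boxtimes> idm A)) \<boxtimes> idm B = (edpah \<boxtimes> idm B) \<odot> (edfdp \<boxtimes> idm (A \<otimes> B))"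
    using tm_comp_idr[OF h1 tm_hom[OF h2 id_hom[of A]], of B] by simp
  have ii: "idm (F \<otimes> D) \<boxtimes> ebab = idm F \<boxtimes> (idm D \<boxtimes> ebab)"
    using tm_assoc[of "idm F" "idm D" ebab] tm_id[of F D] by simp
  have z1: "idm F \<boxtimes> ((idm D \<boxtimes> ebab) \<odot> eg2) = (idm (F \<otimes> D) \<boxtimes> ebab) \<odot> (idm F \<boxtimes> eg2)"
    using tm_comp_idl[OF tm_hom[OF id_hom[of D] h5] h6, of F] ii by simp
  have x: "(edfdp \<boxtimes> idm (A \<otimes> B)) \<odot> (idm (F \<otimes> D) \<boxtimes> ebab) = (idm P \<boxtimes> ebab) \<odot> (edfdp \<boxtimes> idm Nb)"
  proof -
    have "(edfdp \<boxtimes> idm (A \<otimes> B)) \<odot> (idm (F \<otimes> D) \<boxtimes> ebab) = (edfdp \<odot> idm (F \<otimes> D)) \<boxtimes> (idm (A \<otimes> B) \<odot> ebab)"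
      using interchange[OF id_hom h2 h5 id_hom] by simp
    also have "\<dots> = (idm P \<odot> edfdp) \<boxtimes> (ebab \<odot> idm Nb)" using id_l[OF h2] id_r[OF h2] id_l[OF h5] id_r[OF h5] by simp
    also have "\<dots> = (idm P \<boxtimes> ebab) \<odot> (edfdp \<boxtimes> idm Nb)"
      using interchange[OF h2 id_hom id_hom h5] by simp
    finally show ?thesis .
  qed
  have x': "(edfdp \<boxtimes> idm (A \<otimes> B)) \<odot> ((idm (F \<otimes> D) \<boxtimes> ebab) \<odot> X) = (idm P \<boxtimes> ebab) \<odot> ((edfdp \<boxtimes> idm Nb) \<odot> X)"
    if "cCod C X = F \<otimes> D \<otimes> Nb" for X
    using that x d by (metis (no_types, lifting) assoc_s cod_tm cod_id dom_tm dom_id tob_assoc)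
  show ?thesis
    unfolding i1 k1 z1
    using d by (simp add: assoc_s x' id_l_s id_r_s)
qed


lemma mv2: "(\<Sum>x\<in>A. \<Sum>y\<in>B. \<Sum>z\<in>Cc y. f x y z) = (\<Sum>y\<in>B. \<Sum>z\<in>Cc y. \<Sum>x\<in>A. f x y z)"
proof -
  have "(\<Sum>x\<in>A. \<Sum>y\<in>B. \<Sum>z\<in>Cc y. f x y z) = (\<Sum>y\<in>B. \<Sum>x\<in>A. \<Sum>z\<in>Cc y. f x y z)" by (rule sum.swap)
  also have "\<dots> = (\<Sum>y\<in>B. \<Sum>z\<in>Cc y. \<Sum>x\<in>A. f x y z)" by (rule sum.cong[OF refl], rule sum.swap)
  finally show ?thesis .
qed

lemma mv3: "(\<Sum>x\<in>A. \<Sum>y\<in>B. \<Sum>z\<in>Cc y. \<Sum>w\<in>Dd y z. f x y z w) = (\<Sum>y\<in>B. \<Sum>z\<in>Cc y. \<Sum>w\<in>Dd y z. \<Sum>x\<in>A. f x y z w)"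
proof -
  have "(\<Sum>x\<in>A. \<Sum>y\<in>B. \<Sum>z\<in>Cc y. \<Sum>w\<in>Dd y z. f x y z w) = (\<Sum>y\<in>B. \<Sum>x\<in>A. \<Sum>z\<in>Cc y. \<Sum>w\<in>Dd y z. f x y z w)"
    by (rule sum.swap)
  also have "\<dots> = (\<Sum>y\<in>B. \<Sum>z\<in>Cc y. \<Sum>w\<in>Dd y z. \<Sum>x\<in>A. f x y z w)" by (rule sum.cong[OF refl], rule mv2)
  finally show ?thesis .
qed

lemma mv4: "(\<Sum>x\<in>A. \<Sum>y\<in>B. \<Sum>z\<in>Cc y. \<Sum>w\<in>Dd y z. \<Sum>u\<in>Ee y z w. f x y z w u)
   = (\<Sum>y\<in>B. \<Sum>z\<in>Cc y. \<Sum>w\<in>Dd y z. \<Sum>u\<in>Ee y z w. \<Sum>x\<in>A. f x y z w u)"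
proof -
  have "(\<Sum>x\<in>A. \<Sum>y\<in>B. \<Sum>z\<in>Cc y. \<Sum>w\<in>Dd y z. \<Sum>u\<in>Ee y z w. f x y z w u)
     = (\<Sum>y\<in>B. \<Sum>x\<in>A. \<Sum>z\<in>Cc y. \<Sum>w\<in>Dd y z. \<Sum>u\<in>Ee y z w. f x y z w u)" by (rule sum.swap)
  also have "\<dots> = (\<Sum>y\<in>B. \<Sum>z\<in>Cc y. \<Sum>w\<in>Dd y z. \<Sum>u\<in>Ee y z w. \<Sum>x\<in>A. f x y z w u)"
    by (rule sum.cong[OF refl], rule mv3)
  finally show ?thesis .
qed

lemma mv5: "(\<Sum>x\<in>A. \<Sum>y\<in>B. \<Sum>z\<in>Cc y. \<Sum>w\<in>Dd y z. \<Sum>u\<in>Ee y z w. \<Sum>t\<in>Ff y z w u. f x y z w u t)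
   = (\<Sum>y\<in>B. \<Sum>z\<in>Cc y. \<Sum>w\<in>Dd y z. \<Sum>u\<in>Ee y z w. \<Sum>t\<in>Ff y z w u. \<Sum>x\<in>A. f x y z w u t)"
proof -
  have "(\<Sum>x\<in>A. \<Sum>y\<in>B. \<Sum>z\<in>Cc y. \<Sum>w\<in>Dd y z. \<Sum>u\<in>Ee y z w. \<Sum>t\<in>Ff y z w u. f x y z w u t)
     = (\<Sum>y\<in>B. \<Sum>x\<in>A. \<Sum>z\<in>Cc y. \<Sum>w\<in>Dd y z. \<Sum>u\<in>Ee y z w. \<Sum>t\<in>Ff y z w u. f x y z w u t)" by (rule sum.swap)
  also have "\<dots> = (\<Sum>y\<in>B. \<Sum>z\<in>Cc y. \<Sum>w\<in>Dd y z. \<Sum>u\<in>Ee y z w. \<Sum>t\<in>Ff y z w u. \<Sum>x\<in>A. f x y z w u t)"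
    by (rule sum.cong[OF refl], rule mv4)
  finally show ?thesis .
qed

lemma sum_extend: "finite U \<Longrightarrow> A \<subseteq> U \<Longrightarrow> (\<And>x. x \<in> U \<Longrightarrow> x \<notin> A \<Longrightarrow> f x = 0) \<Longrightarrow> sum f A = (sum f U :: 'k)"
  by (rule sum.mono_neutral_left) auto


context
  fixes f d p a h b g :: 'i and \<delta>1 \<delta>2 \<delta>3 :: nat
  assumes Ig: "f \<in> I" "d \<in> I" "p \<in> I" "a \<in> I" "h \<in> I" "b \<in> I" "g \<in> I"
    and \<delta>: "\<delta>1 < N h b g" "\<delta>2 < N p a h" "\<delta>3 < N f d p"
begin

definition X3 where "X3 n \<beta> = ed p a h \<delta>2 \<odot> ((ed f d p \<delta>3 \<boxtimes> idm (V a)) \<odot> (idm (V f) \<boxtimes> eb d a n \<beta>))"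
definition Y1 where "Y1 n \<beta> n1 n2 \<beta>2 \<gamma>2 = ((ed d a n \<beta> \<boxtimes> idm (V b)) \<odot> (idm (V d) \<boxtimes> eb a b n2 \<beta>2)) \<odot> eb d n2 n1 \<gamma>2"
definition C2 where "C2 n \<beta> n1 \<beta>1 \<gamma>1 = scal C (V g) (ed h b g \<delta>1 \<odot> (((X3 n \<beta> \<boxtimes> idm (V b)) \<odot> (idm (V f) \<boxtimes> eb n b n1 \<beta>1)) \<odot> eb f n1 g \<gamma>1))"
definition C3 where "C3 n \<beta> n1 \<gamma>1 n2 \<beta>2 \<gamma>2 = scal C (V g) (ed h b g \<delta>1 \<odot> (((X3 n \<beta> \<boxtimes> idm (V b)) \<odot> (idm (V f) \<boxtimes> Y1 n \<beta> n1 n2 \<beta>2 \<gamma>2)) \<odot> eb f n1 g \<gamma>1))"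
definition RR where "RR n2 \<beta>2 n1 \<gamma>2 \<gamma>1 = scal C (V g) (ed h b g \<delta>1 \<odot> (((ed p a h \<delta>2 \<boxtimes> idm (V b)) \<odot> (idm (V p) \<boxtimes> eb a b n2 \<beta>2))
     \<odot> (((ed f d p \<delta>3 \<boxtimes> idm (V n2)) \<odot> (idm (V f) \<boxtimes> eb d n2 n1 \<gamma>2)) \<odot> eb f n1 g \<gamma>1)))"

lemma hX3: "n \<in> I \<Longrightarrow> \<beta> < N d a n \<Longrightarrow> X3 n \<beta> \<in> Hm (V f \<otimes> V n) (V h)"
  unfolding X3_def using Ig \<delta> by (simp add: hom_iff)

lemma hY1: "n \<in> I \<Longrightarrow> \<beta> < N d a n \<Longrightarrow> n1 \<in> I \<Longrightarrow> n2 \<in> I \<Longrightarrow> \<beta>2 < N a b n2 \<Longrightarrow> \<gamma>2 < N d n2 n1 \<Longrightarrow>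
   Y1 n \<beta> n1 n2 \<beta>2 \<gamma>2 \<in> Hm (V n1) (V n \<otimes> V b)"
  unfolding Y1_def using Ig \<delta> by (simp add: hom_iff)

lemma c1:
  assumes n: "n \<in> I" "n1 \<in> I" and \<beta>: "\<beta> < N d a n" "\<beta>1 < N n b n1" "\<gamma>1 < N f n1 g"
  shows "(\<Sum>\<gamma><N f n h. Ft f d p a h n \<delta>2 \<delta>3 \<beta> \<gamma> * Ft f n h b g n1 \<delta>1 \<gamma> \<beta>1 \<gamma>1) = C2 n \<beta> n1 \<beta>1 \<gamma>1"
proof -
  define G where "G = (\<lambda>y. scal C (V g) (ed h b g \<delta>1 \<odot> (((y \<boxtimes> idm (V b)) \<odot> (idm (V f) \<boxtimes> eb n b n1 \<beta>1)) \<odot> eb f n1 g \<gamma>1)))"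
  have lG: "linfun (V f \<otimes> V n) (V h) G"
    unfolding G_def by (rule lf_scal'[where m=g], (rule lm_rules)+) (use Ig \<delta> n \<beta> in \<open>auto simp: hom_iff\<close>)
  have "(\<Sum>\<gamma><N f n h. Ft f d p a h n \<delta>2 \<delta>3 \<beta> \<gamma> * Ft f n h b g n1 \<delta>1 \<gamma> \<beta>1 \<gamma>1)
      = (\<Sum>\<gamma><N f n h. scal C (V h) (X3 n \<beta> \<odot> eb f n h \<gamma>) * G (ed f n h \<gamma>))"
  proof (rule sum.cong, simp)
    fix \<gamma> assume "\<gamma> \<in> {..<N f n h}"
    then have \<gamma>: "\<gamma> < N f n h" by simp
    have "ed p a h \<delta>2 \<odot> (((ed f d p \<delta>3 \<boxtimes> idm (V a)) \<odot> (idm (V f) \<boxtimes> eb d a n \<beta>)) \<odot> eb f n h \<gamma>)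
        = X3 n \<beta> \<odot> eb f n h \<gamma>"
      unfolding X3_def using Ig \<delta> n \<beta> \<gamma> by (simp add: assoc_s)
    then show "Ft f d p a h n \<delta>2 \<delta>3 \<beta> \<gamma> * Ft f n h b g n1 \<delta>1 \<gamma> \<beta>1 \<gamma>1 =
          scal C (V h) (X3 n \<beta> \<odot> eb f n h \<gamma>) * G (ed f n h \<gamma>)"
      unfolding Ft_def G_def by simp
  qed
  also have "\<dots> = G (X3 n \<beta>)" by (rule exp_dn[OF Ig(1) n(1) Ig(5) hX3[OF n(1) \<beta>(1)] lG])
  finally show ?thesis unfolding G_def C2_def .
qed

lemma c2:
  assumes n: "n \<in> I" "n1 \<in> I" "n2 \<in> I" and \<beta>: "\<beta> < N d a n" "\<gamma>1 < N f n1 g" "\<beta>2 < N a b n2" "\<gamma>2 < N d n2 n1"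
  shows "(\<Sum>\<beta>1<N n b n1. Ft d a n b n1 n2 \<beta>1 \<beta> \<beta>2 \<gamma>2 * C2 n \<beta> n1 \<beta>1 \<gamma>1) = C3 n \<beta> n1 \<gamma>1 n2 \<beta>2 \<gamma>2"
proof -
  define G where "G = (\<lambda>x. scal C (V g) (ed h b g \<delta>1 \<odot> (((X3 n \<beta> \<boxtimes> idm (V b)) \<odot> (idm (V f) \<boxtimes> x)) \<odot> eb f n1 g \<gamma>1)))"
  have hx: "X3 n \<beta> \<in> Hm (V f \<otimes> V n) (V h)" by (rule hX3[OF n(1) \<beta>(1)])
  have lG: "linfun (V n1) (V n \<otimes> V b) G"
    unfolding G_def by (rule lf_scal'[where m=g], (rule lm_rules)+) (use Ig \<delta> n \<beta> hx in \<open>auto simp: hom_iff\<close>)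
  have "(\<Sum>\<beta>1<N n b n1. Ft d a n b n1 n2 \<beta>1 \<beta> \<beta>2 \<gamma>2 * C2 n \<beta> n1 \<beta>1 \<gamma>1)
     = (\<Sum>\<beta>1<N n b n1. scal C (V n1) (ed n b n1 \<beta>1 \<odot> Y1 n \<beta> n1 n2 \<beta>2 \<gamma>2) * G (eb n b n1 \<beta>1))"
    by (rule sum.cong) (simp_all add: Ft_def C2_def G_def Y1_def)
  also have "\<dots> = G (Y1 n \<beta> n1 n2 \<beta>2 \<gamma>2)" by (rule exp_up[OF n(1) Ig(6) n(2) hY1[OF n(1) \<beta>(1) n(2) n(3) \<beta>(3) \<beta>(4)] lG])
  finally show ?thesis unfolding G_def C3_def .
qed

lemma c3:
  assumes n: "n1 \<in> I" "n2 \<in> I" and \<beta>: "\<gamma>1 < N f n1 g" "\<beta>2 < N a b n2" "\<gamma>2 < N d n2 n1"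
  shows "(\<Sum>n\<in>KK d a. \<Sum>\<beta><N d a n. C3 n \<beta> n1 \<gamma>1 n2 \<beta>2 \<gamma>2)
       = (if gg C I V d a then RR n2 \<beta>2 n1 \<gamma>2 \<gamma>1 else 0)"
proof -
  define K where "K = ed p a h \<delta>2 \<odot> (ed f d p \<delta>3 \<boxtimes> idm (V a))"
  define Z where "Z = (idm (V d) \<boxtimes> eb a b n2 \<beta>2) \<odot> eb d n2 n1 \<gamma>2"
  define H where "H = (\<lambda>w. scal C (V g) (ed h b g \<delta>1 \<odot> (((K \<boxtimes> idm (V b)) \<odot> (idm (V f) \<boxtimes> (w \<boxtimes> idm (V b))))
                        \<odot> ((idm (V f) \<boxtimes> Z) \<odot> eb f n1 g \<gamma>1))))"
  have hK: "K \<in> Hm (V f \<otimes> V d \<otimes> V a) (V h)" unfolding K_def using Ig \<delta> by (simp add: hom_iff)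
  have hZ: "Z \<in> Hm (V n1) (V d \<otimes> V a \<otimes> V b)" unfolding Z_def using Ig \<delta> n \<beta> by (simp add: hom_iff)
  have lH: "linfun (V d \<otimes> V a) (V d \<otimes> V a) H"
    unfolding H_def by (rule lf_scal'[where m=g], (rule lm_rules)+) (use Ig \<delta> n \<beta> hK hZ in \<open>auto simp: hom_iff\<close>)
  have "(\<Sum>n\<in>KK d a. \<Sum>\<beta><N d a n. C3 n \<beta> n1 \<gamma>1 n2 \<beta>2 \<gamma>2)
      = (\<Sum>n\<in>KK d a. \<Sum>\<beta><N d a n. H (eb d a n \<beta> \<odot> ed d a n \<beta>))"
  proof (intro sum.cong refl)
    fix n \<beta> assume nK: "n \<in> KK d a" and "\<beta> \<in> {..<N d a n}"
    then have nI: "n \<in> I" and \<beta>': "\<beta> < N d a n" by (auto simp: KK_def)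
    show "C3 n \<beta> n1 \<gamma>1 n2 \<beta>2 \<gamma>2 = H (eb d a n \<beta> \<odot> ed d a n \<beta>)"
      unfolding C3_def H_def X3_def Y1_def K_def Z_def
      by (subst M1[where P="V p" and A="V a" and H="V h" and F="V f" and D="V d" and Nn="V n"
            and B="V b" and Nb="V n2" and Na="V n1" and G="V g"]) (use Ig \<delta> n \<beta> nI \<beta>' in auto)
  qed
  also have "\<dots> = (if gg C I V d a then H (idm (V d \<otimes> V a)) else 0)"
    by (rule completeness[OF Ig(2) Ig(4) lH])
  also have "H (idm (V d \<otimes> V a)) = RR n2 \<beta>2 n1 \<gamma>2 \<gamma>1"
    unfolding H_def RR_def K_def Z_def
    by (subst M2[where P="V p" and A="V a" and H="V h" and F="V f" and D="V d"
            and B="V b" and Nb="V n2" and Na="V n1" and G="V g"]) (use Ig \<delta> n \<beta> in auto)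
  finally show ?thesis by simp
qed

lemma c4:
  assumes n: "n1 \<in> I" "n2 \<in> I" and \<beta>: "\<gamma>1 < N f n1 g" "\<beta>2 < N a b n2" "\<gamma>2 < N d n2 n1"
  shows "(\<Sum>\<gamma><N p n2 g. Ft f d p n2 g n1 \<gamma> \<delta>3 \<gamma>2 \<gamma>1 * Ft p a h b g n2 \<delta>1 \<delta>2 \<beta>2 \<gamma>) = RR n2 \<beta>2 n1 \<gamma>2 \<gamma>1"
proof -
  define Yr where "Yr = ((ed f d p \<delta>3 \<boxtimes> idm (V n2)) \<odot> (idm (V f) \<boxtimes> eb d n2 n1 \<gamma>2)) \<odot> eb f n1 g \<gamma>1"
  define G where "G = (\<lambda>x. scal C (V g) (ed h b g \<delta>1 \<odot> (((ed p a h \<delta>2 \<boxtimes> idm (V b)) \<odot> (idm (V p) \<boxtimes> eb a b n2 \<beta>2)) \<odot> x)))"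
  have hY: "Yr \<in> Hm (V g) (V p \<otimes> V n2)" unfolding Yr_def using Ig \<delta> n \<beta> by (simp add: hom_iff)
  have lG: "linfun (V g) (V p \<otimes> V n2) G"
    unfolding G_def by (rule lf_scal'[where m=g], (rule lm_rules)+) (use Ig \<delta> n \<beta> in \<open>auto simp: hom_iff\<close>)
  have "(\<Sum>\<gamma><N p n2 g. Ft f d p n2 g n1 \<gamma> \<delta>3 \<gamma>2 \<gamma>1 * Ft p a h b g n2 \<delta>1 \<delta>2 \<beta>2 \<gamma>)
      = (\<Sum>\<gamma><N p n2 g. scal C (V g) (ed p n2 g \<gamma> \<odot> Yr) * G (eb p n2 g \<gamma>))"
    by (rule sum.cong) (simp_all add: Ft_def G_def Yr_def)
  also have "\<dots> = G Yr" by (rule exp_up[OF Ig(3) n(2) Ig(7) hY lG])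
  finally show ?thesis unfolding G_def RR_def Yr_def .
qed


definition UU where "UU = (\<Union>x\<in>KK d a. KK x b) \<union> (\<Union>y\<in>KK a b. KK d y)"

lemma UU_fin: "finite UU"
  unfolding UU_def using KK_finite KK_I Ig by auto
lemma UU_I: "UU \<subseteq> I" unfolding UU_def using KK_I by auto

lemma pent_core:
  "(\<Sum>n\<in>KK d a. \<Sum>\<beta><N d a n. \<Sum>\<gamma><N f n h.
     (\<Sum>n1\<in>KK n b. \<Sum>\<beta>1<N n b n1. \<Sum>\<gamma>1<N f n1 g.
       (\<Sum>n2\<in>KK a b. \<Sum>\<beta>2<N a b n2. \<Sum>\<gamma>2<N d n2 n1.
          v (a, b, n2, \<beta>2) (d, n2, n1, \<gamma>2) (f, n1, g, \<gamma>1) * Ft d a n b n1 n2 \<beta>1 \<beta> \<beta>2 \<gamma>2)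
       * Ft f n h b g n1 \<delta>1 \<gamma> \<beta>1 \<gamma>1) * Ft f d p a h n \<delta>2 \<delta>3 \<beta> \<gamma>)
 = (\<Sum>n2\<in>KK a b. \<Sum>\<beta>2<N a b n2. \<Sum>\<gamma><N p n2 g.
     (\<Sum>n1\<in>KK d n2. \<Sum>\<gamma>2<N d n2 n1. \<Sum>\<gamma>1<N f n1 g.
        (if gg C I V d a then v (a, b, n2, \<beta>2) (d, n2, n1, \<gamma>2) (f, n1, g, \<gamma>1) else 0)
        * Ft f d p n2 g n1 \<gamma> \<delta>3 \<gamma>2 \<gamma>1) * Ft p a h b g n2 \<delta>1 \<delta>2 \<beta>2 \<gamma>)"
  (is "?L = ?R")
proof -
  let ?v = "\<lambda>n2 \<beta>2 n1 \<gamma>2 \<gamma>1. v (a, b, n2, \<beta>2) (d, n2, n1, \<gamma>2) (f, n1, g, \<gamma>1)"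
  let ?S1 = "\<lambda>n \<beta> n1 \<beta>1 \<gamma>1. (\<Sum>n2\<in>KK a b. \<Sum>\<beta>2<N a b n2. \<Sum>\<gamma>2<N d n2 n1.
          ?v n2 \<beta>2 n1 \<gamma>2 \<gamma>1 * Ft d a n b n1 n2 \<beta>1 \<beta> \<beta>2 \<gamma>2)"
  have L1: "?L = (\<Sum>n\<in>KK d a. \<Sum>\<beta><N d a n. \<Sum>n1\<in>UU. \<Sum>\<beta>1<N n b n1. \<Sum>\<gamma>1<N f n1 g.
                 ?S1 n \<beta> n1 \<beta>1 \<gamma>1 * C2 n \<beta> n1 \<beta>1 \<gamma>1)"
  proof (intro sum.cong refl)
    fix n \<beta> assume nK: "n \<in> KK d a" and \<beta>: "\<beta> \<in> {..<N d a n}"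
    have nI: "n \<in> I" and \<beta>': "\<beta> < N d a n" using nK \<beta> by (auto simp: KK_def)
    have "(\<Sum>\<gamma><N f n h. (\<Sum>n1\<in>KK n b. \<Sum>\<beta>1<N n b n1. \<Sum>\<gamma>1<N f n1 g. ?S1 n \<beta> n1 \<beta>1 \<gamma>1
             * Ft f n h b g n1 \<delta>1 \<gamma> \<beta>1 \<gamma>1) * Ft f d p a h n \<delta>2 \<delta>3 \<beta> \<gamma>)
        = (\<Sum>\<gamma><N f n h. \<Sum>n1\<in>UU. \<Sum>\<beta>1<N n b n1. \<Sum>\<gamma>1<N f n1 g.
             ?S1 n \<beta> n1 \<beta>1 \<gamma>1 * (Ft f n h b g n1 \<delta>1 \<gamma> \<beta>1 \<gamma>1 * Ft f d p a h n \<delta>2 \<delta>3 \<beta> \<gamma>))"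
    proof (rule sum.cong[OF refl])
      fix \<gamma>
      have "(\<Sum>n1\<in>KK n b. \<Sum>\<beta>1<N n b n1. \<Sum>\<gamma>1<N f n1 g. ?S1 n \<beta> n1 \<beta>1 \<gamma>1 * Ft f n h b g n1 \<delta>1 \<gamma> \<beta>1 \<gamma>1)
          = (\<Sum>n1\<in>UU. \<Sum>\<beta>1<N n b n1. \<Sum>\<gamma>1<N f n1 g. ?S1 n \<beta> n1 \<beta>1 \<gamma>1 * Ft f n h b g n1 \<delta>1 \<gamma> \<beta>1 \<gamma>1)"
        by (rule sum_extend[OF UU_fin]) (use nK UU_I in \<open>auto simp: UU_def KK_def\<close>)
      then show "(\<Sum>n1\<in>KK n b. \<Sum>\<beta>1<N n b n1. \<Sum>\<gamma>1<N f n1 g. ?S1 n \<beta> n1 \<beta>1 \<gamma>1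
             * Ft f n h b g n1 \<delta>1 \<gamma> \<beta>1 \<gamma>1) * Ft f d p a h n \<delta>2 \<delta>3 \<beta> \<gamma>
          = (\<Sum>n1\<in>UU. \<Sum>\<beta>1<N n b n1. \<Sum>\<gamma>1<N f n1 g.
             ?S1 n \<beta> n1 \<beta>1 \<gamma>1 * (Ft f n h b g n1 \<delta>1 \<gamma> \<beta>1 \<gamma>1 * Ft f d p a h n \<delta>2 \<delta>3 \<beta> \<gamma>))"
        by (simp add: sum_distrib_right mult.assoc)
    qed
    also have "\<dots> = (\<Sum>n1\<in>UU. \<Sum>\<beta>1<N n b n1. \<Sum>\<gamma>1<N f n1 g. \<Sum>\<gamma><N f n h.
             ?S1 n \<beta> n1 \<beta>1 \<gamma>1 * (Ft f n h b g n1 \<delta>1 \<gamma> \<beta>1 \<gamma>1 * Ft f d p a h n \<delta>2 \<delta>3 \<beta> \<gamma>))"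
      by (rule mv3)
    also have "\<dots> = (\<Sum>n1\<in>UU. \<Sum>\<beta>1<N n b n1. \<Sum>\<gamma>1<N f n1 g.
             ?S1 n \<beta> n1 \<beta>1 \<gamma>1 * C2 n \<beta> n1 \<beta>1 \<gamma>1)"
    proof (intro sum.cong refl)
      fix n1 \<beta>1 \<gamma>1 assume n1: "n1 \<in> UU" and \<beta>1: "\<beta>1 \<in> {..<N n b n1}" and \<gamma>1: "\<gamma>1 \<in> {..<N f n1 g}"
      show "(\<Sum>\<gamma><N f n h. ?S1 n \<beta> n1 \<beta>1 \<gamma>1 * (Ft f n h b g n1 \<delta>1 \<gamma> \<beta>1 \<gamma>1 * Ft f d p a h n \<delta>2 \<delta>3 \<beta> \<gamma>))
          = ?S1 n \<beta> n1 \<beta>1 \<gamma>1 * C2 n \<beta> n1 \<beta>1 \<gamma>1"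
      proof -
        have "(\<Sum>\<gamma><N f n h. Ft f n h b g n1 \<delta>1 \<gamma> \<beta>1 \<gamma>1 * Ft f d p a h n \<delta>2 \<delta>3 \<beta> \<gamma>) = C2 n \<beta> n1 \<beta>1 \<gamma>1"
          using c1[OF nI _ \<beta>'] n1 \<beta>1 \<gamma>1 UU_I by (auto simp: mult.commute)
        then show ?thesis by (simp add: sum_distrib_left[symmetric])
      qed
    qed
    finally show "(\<Sum>\<gamma><N f n h. (\<Sum>n1\<in>KK n b. \<Sum>\<beta>1<N n b n1. \<Sum>\<gamma>1<N f n1 g. ?S1 n \<beta> n1 \<beta>1 \<gamma>1
             * Ft f n h b g n1 \<delta>1 \<gamma> \<beta>1 \<gamma>1) * Ft f d p a h n \<delta>2 \<delta>3 \<beta> \<gamma>)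
        = (\<Sum>n1\<in>UU. \<Sum>\<beta>1<N n b n1. \<Sum>\<gamma>1<N f n1 g.
             ?S1 n \<beta> n1 \<beta>1 \<gamma>1 * C2 n \<beta> n1 \<beta>1 \<gamma>1)" .
  qed
  have L2: "(\<Sum>n\<in>KK d a. \<Sum>\<beta><N d a n. \<Sum>n1\<in>UU. \<Sum>\<beta>1<N n b n1. \<Sum>\<gamma>1<N f n1 g.
                 ?S1 n \<beta> n1 \<beta>1 \<gamma>1 * C2 n \<beta> n1 \<beta>1 \<gamma>1)
     = (\<Sum>n\<in>KK d a. \<Sum>\<beta><N d a n. \<Sum>n1\<in>UU. \<Sum>\<gamma>1<N f n1 g. \<Sum>n2\<in>KK a b. \<Sum>\<beta>2<N a b n2. \<Sum>\<gamma>2<N d n2 n1.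
                 ?v n2 \<beta>2 n1 \<gamma>2 \<gamma>1 * C3 n \<beta> n1 \<gamma>1 n2 \<beta>2 \<gamma>2)"
  proof (rule sum.cong[OF refl], rule sum.cong[OF refl], rule sum.cong[OF refl])
    fix n \<beta> n1 assume nK: "n \<in> KK d a" and \<beta>: "\<beta> \<in> {..<N d a n}" and n1: "n1 \<in> UU"
    have nI: "n \<in> I" and \<beta>': "\<beta> < N d a n" and n1I: "n1 \<in> I" using nK \<beta> n1 UU_I by (auto simp: KK_def)
    have "(\<Sum>\<beta>1<N n b n1. \<Sum>\<gamma>1<N f n1 g. ?S1 n \<beta> n1 \<beta>1 \<gamma>1 * C2 n \<beta> n1 \<beta>1 \<gamma>1)
        = (\<Sum>\<beta>1<N n b n1. \<Sum>\<gamma>1<N f n1 g. \<Sum>n2\<in>KK a b. \<Sum>\<beta>2<N a b n2. \<Sum>\<gamma>2<N d n2 n1.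
            ?v n2 \<beta>2 n1 \<gamma>2 \<gamma>1 * (Ft d a n b n1 n2 \<beta>1 \<beta> \<beta>2 \<gamma>2 * C2 n \<beta> n1 \<beta>1 \<gamma>1))"
      by (simp add: sum_distrib_right mult.assoc)
    also have "\<dots> = (\<Sum>\<gamma>1<N f n1 g. \<Sum>n2\<in>KK a b. \<Sum>\<beta>2<N a b n2. \<Sum>\<gamma>2<N d n2 n1. \<Sum>\<beta>1<N n b n1.
            ?v n2 \<beta>2 n1 \<gamma>2 \<gamma>1 * (Ft d a n b n1 n2 \<beta>1 \<beta> \<beta>2 \<gamma>2 * C2 n \<beta> n1 \<beta>1 \<gamma>1))"
      by (rule mv4)
    also have "\<dots> = (\<Sum>\<gamma>1<N f n1 g. \<Sum>n2\<in>KK a b. \<Sum>\<beta>2<N a b n2. \<Sum>\<gamma>2<N d n2 n1.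
            ?v n2 \<beta>2 n1 \<gamma>2 \<gamma>1 * C3 n \<beta> n1 \<gamma>1 n2 \<beta>2 \<gamma>2)"
    proof (intro sum.cong refl)
      fix \<gamma>1 n2 \<beta>2 \<gamma>2 assume \<gamma>1: "\<gamma>1 \<in> {..<N f n1 g}" and n2: "n2 \<in> KK a b"
        and \<beta>2: "\<beta>2 \<in> {..<N a b n2}" and \<gamma>2: "\<gamma>2 \<in> {..<N d n2 n1}"
      have n2I: "n2 \<in> I" using n2 KK_I by blast
      have "(\<Sum>\<beta>1<N n b n1. Ft d a n b n1 n2 \<beta>1 \<beta> \<beta>2 \<gamma>2 * C2 n \<beta> n1 \<beta>1 \<gamma>1) = C3 n \<beta> n1 \<gamma>1 n2 \<beta>2 \<gamma>2"
        by (rule c2) (use nI n1I n2I \<beta>' \<gamma>1 \<beta>2 \<gamma>2 in auto)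
      then show "(\<Sum>\<beta>1<N n b n1. ?v n2 \<beta>2 n1 \<gamma>2 \<gamma>1 * (Ft d a n b n1 n2 \<beta>1 \<beta> \<beta>2 \<gamma>2 * C2 n \<beta> n1 \<beta>1 \<gamma>1))
          = ?v n2 \<beta>2 n1 \<gamma>2 \<gamma>1 * C3 n \<beta> n1 \<gamma>1 n2 \<beta>2 \<gamma>2"
        by (simp add: sum_distrib_left[symmetric])
    qed
    finally show "(\<Sum>\<beta>1<N n b n1. \<Sum>\<gamma>1<N f n1 g. ?S1 n \<beta> n1 \<beta>1 \<gamma>1 * C2 n \<beta> n1 \<beta>1 \<gamma>1)
        = (\<Sum>\<gamma>1<N f n1 g. \<Sum>n2\<in>KK a b. \<Sum>\<beta>2<N a b n2. \<Sum>\<gamma>2<N d n2 n1.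
            ?v n2 \<beta>2 n1 \<gamma>2 \<gamma>1 * C3 n \<beta> n1 \<gamma>1 n2 \<beta>2 \<gamma>2)" .
  qed
  have L3: "(\<Sum>n\<in>KK d a. \<Sum>\<beta><N d a n. \<Sum>n1\<in>UU. \<Sum>\<gamma>1<N f n1 g. \<Sum>n2\<in>KK a b. \<Sum>\<beta>2<N a b n2. \<Sum>\<gamma>2<N d n2 n1.
                 ?v n2 \<beta>2 n1 \<gamma>2 \<gamma>1 * C3 n \<beta> n1 \<gamma>1 n2 \<beta>2 \<gamma>2)
     = (\<Sum>n1\<in>UU. \<Sum>\<gamma>1<N f n1 g. \<Sum>n2\<in>KK a b. \<Sum>\<beta>2<N a b n2. \<Sum>\<gamma>2<N d n2 n1.
                 ?v n2 \<beta>2 n1 \<gamma>2 \<gamma>1 * (if gg C I V d a then RR n2 \<beta>2 n1 \<gamma>2 \<gamma>1 else 0))"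
  proof -
    have "(\<Sum>n\<in>KK d a. \<Sum>\<beta><N d a n. \<Sum>n1\<in>UU. \<Sum>\<gamma>1<N f n1 g. \<Sum>n2\<in>KK a b. \<Sum>\<beta>2<N a b n2. \<Sum>\<gamma>2<N d n2 n1.
                 ?v n2 \<beta>2 n1 \<gamma>2 \<gamma>1 * C3 n \<beta> n1 \<gamma>1 n2 \<beta>2 \<gamma>2)
       = (\<Sum>n\<in>KK d a. \<Sum>n1\<in>UU. \<Sum>\<gamma>1<N f n1 g. \<Sum>n2\<in>KK a b. \<Sum>\<beta>2<N a b n2. \<Sum>\<gamma>2<N d n2 n1. \<Sum>\<beta><N d a n.
                 ?v n2 \<beta>2 n1 \<gamma>2 \<gamma>1 * C3 n \<beta> n1 \<gamma>1 n2 \<beta>2 \<gamma>2)"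
      by (rule sum.cong[OF refl], rule mv5)
    also have "\<dots> = (\<Sum>n1\<in>UU. \<Sum>\<gamma>1<N f n1 g. \<Sum>n2\<in>KK a b. \<Sum>\<beta>2<N a b n2. \<Sum>\<gamma>2<N d n2 n1. \<Sum>n\<in>KK d a. \<Sum>\<beta><N d a n.
                 ?v n2 \<beta>2 n1 \<gamma>2 \<gamma>1 * C3 n \<beta> n1 \<gamma>1 n2 \<beta>2 \<gamma>2)"
      by (rule mv5)
    also have "\<dots> = (\<Sum>n1\<in>UU. \<Sum>\<gamma>1<N f n1 g. \<Sum>n2\<in>KK a b. \<Sum>\<beta>2<N a b n2. \<Sum>\<gamma>2<N d n2 n1.
                 ?v n2 \<beta>2 n1 \<gamma>2 \<gamma>1 * (if gg C I V d a then RR n2 \<beta>2 n1 \<gamma>2 \<gamma>1 else 0))"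
    proof (intro sum.cong refl)
      fix n1 \<gamma>1 n2 \<beta>2 \<gamma>2 assume n1: "n1 \<in> UU" and \<gamma>1: "\<gamma>1 \<in> {..<N f n1 g}" and n2: "n2 \<in> KK a b"
        and \<beta>2: "\<beta>2 \<in> {..<N a b n2}" and \<gamma>2: "\<gamma>2 \<in> {..<N d n2 n1}"
      have n2I: "n2 \<in> I" and n1I: "n1 \<in> I" using n2 n1 KK_I UU_I by auto
      have "(\<Sum>n\<in>KK d a. \<Sum>\<beta><N d a n. C3 n \<beta> n1 \<gamma>1 n2 \<beta>2 \<gamma>2) = (if gg C I V d a then RR n2 \<beta>2 n1 \<gamma>2 \<gamma>1 else 0)"
        by (rule c3) (use n1I n2I \<gamma>1 \<beta>2 \<gamma>2 in auto)
      then show "(\<Sum>n\<in>KK d a. \<Sum>\<beta><N d a n. ?v n2 \<beta>2 n1 \<gamma>2 \<gamma>1 * C3 n \<beta> n1 \<gamma>1 n2 \<beta>2 \<gamma>2)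
          = ?v n2 \<beta>2 n1 \<gamma>2 \<gamma>1 * (if gg C I V d a then RR n2 \<beta>2 n1 \<gamma>2 \<gamma>1 else 0)"
        by (simp add: sum_distrib_left[symmetric])
    qed
    finally show ?thesis .
  qed
  have R1: "?R = (\<Sum>n2\<in>KK a b. \<Sum>\<beta>2<N a b n2. \<Sum>n1\<in>KK d n2. \<Sum>\<gamma>2<N d n2 n1. \<Sum>\<gamma>1<N f n1 g.
                 (if gg C I V d a then ?v n2 \<beta>2 n1 \<gamma>2 \<gamma>1 else 0) * RR n2 \<beta>2 n1 \<gamma>2 \<gamma>1)"
  proof (intro sum.cong refl)
    fix n2 \<beta>2 assume n2: "n2 \<in> KK a b" and \<beta>2: "\<beta>2 \<in> {..<N a b n2}"
    have n2I: "n2 \<in> I" using n2 KK_I by blast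
    have "(\<Sum>\<gamma><N p n2 g. (\<Sum>n1\<in>KK d n2. \<Sum>\<gamma>2<N d n2 n1. \<Sum>\<gamma>1<N f n1 g.
        (if gg C I V d a then ?v n2 \<beta>2 n1 \<gamma>2 \<gamma>1 else 0) * Ft f d p n2 g n1 \<gamma> \<delta>3 \<gamma>2 \<gamma>1) * Ft p a h b g n2 \<delta>1 \<delta>2 \<beta>2 \<gamma>)
      = (\<Sum>\<gamma><N p n2 g. \<Sum>n1\<in>KK d n2. \<Sum>\<gamma>2<N d n2 n1. \<Sum>\<gamma>1<N f n1 g.
        (if gg C I V d a then ?v n2 \<beta>2 n1 \<gamma>2 \<gamma>1 else 0) * (Ft f d p n2 g n1 \<gamma> \<delta>3 \<gamma>2 \<gamma>1 * Ft p a h b g n2 \<delta>1 \<delta>2 \<beta>2 \<gamma>))"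
      by (simp add: sum_distrib_right mult.assoc)
    also have "\<dots> = (\<Sum>n1\<in>KK d n2. \<Sum>\<gamma>2<N d n2 n1. \<Sum>\<gamma>1<N f n1 g. \<Sum>\<gamma><N p n2 g.
        (if gg C I V d a then ?v n2 \<beta>2 n1 \<gamma>2 \<gamma>1 else 0) * (Ft f d p n2 g n1 \<gamma> \<delta>3 \<gamma>2 \<gamma>1 * Ft p a h b g n2 \<delta>1 \<delta>2 \<beta>2 \<gamma>))"
      by (rule mv3)
    also have "\<dots> = (\<Sum>n1\<in>KK d n2. \<Sum>\<gamma>2<N d n2 n1. \<Sum>\<gamma>1<N f n1 g.
                 (if gg C I V d a then ?v n2 \<beta>2 n1 \<gamma>2 \<gamma>1 else 0) * RR n2 \<beta>2 n1 \<gamma>2 \<gamma>1)"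
    proof (intro sum.cong refl)
      fix n1 \<gamma>2 \<gamma>1 assume n1: "n1 \<in> KK d n2" and \<gamma>2: "\<gamma>2 \<in> {..<N d n2 n1}" and \<gamma>1: "\<gamma>1 \<in> {..<N f n1 g}"
      have n1I: "n1 \<in> I" using n1 KK_I by blast
      have "(\<Sum>\<gamma><N p n2 g. Ft f d p n2 g n1 \<gamma> \<delta>3 \<gamma>2 \<gamma>1 * Ft p a h b g n2 \<delta>1 \<delta>2 \<beta>2 \<gamma>) = RR n2 \<beta>2 n1 \<gamma>2 \<gamma>1"
        by (rule c4) (use n1I n2I \<gamma>1 \<beta>2 \<gamma>2 in auto)
      then show "(\<Sum>\<gamma><N p n2 g. (if gg C I V d a then ?v n2 \<beta>2 n1 \<gamma>2 \<gamma>1 else 0) *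
            (Ft f d p n2 g n1 \<gamma> \<delta>3 \<gamma>2 \<gamma>1 * Ft p a h b g n2 \<delta>1 \<delta>2 \<beta>2 \<gamma>))
          = (if gg C I V d a then ?v n2 \<beta>2 n1 \<gamma>2 \<gamma>1 else 0) * RR n2 \<beta>2 n1 \<gamma>2 \<gamma>1"
        by (simp add: sum_distrib_left[symmetric])
    qed
    finally show "(\<Sum>\<gamma><N p n2 g. (\<Sum>n1\<in>KK d n2. \<Sum>\<gamma>2<N d n2 n1. \<Sum>\<gamma>1<N f n1 g.
        (if gg C I V d a then ?v n2 \<beta>2 n1 \<gamma>2 \<gamma>1 else 0) * Ft f d p n2 g n1 \<gamma> \<delta>3 \<gamma>2 \<gamma>1) * Ft p a h b g n2 \<delta>1 \<delta>2 \<beta>2 \<gamma>)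
      = (\<Sum>n1\<in>KK d n2. \<Sum>\<gamma>2<N d n2 n1. \<Sum>\<gamma>1<N f n1 g.
                 (if gg C I V d a then ?v n2 \<beta>2 n1 \<gamma>2 \<gamma>1 else 0) * RR n2 \<beta>2 n1 \<gamma>2 \<gamma>1)" .
  qed
  have R2: "(\<Sum>n2\<in>KK a b. \<Sum>\<beta>2<N a b n2. \<Sum>n1\<in>KK d n2. \<Sum>\<gamma>2<N d n2 n1. \<Sum>\<gamma>1<N f n1 g.
                 (if gg C I V d a then ?v n2 \<beta>2 n1 \<gamma>2 \<gamma>1 else 0) * RR n2 \<beta>2 n1 \<gamma>2 \<gamma>1)
      = (\<Sum>n1\<in>UU. \<Sum>\<gamma>1<N f n1 g. \<Sum>n2\<in>KK a b. \<Sum>\<beta>2<N a b n2. \<Sum>\<gamma>2<N d n2 n1.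
                 (if gg C I V d a then ?v n2 \<beta>2 n1 \<gamma>2 \<gamma>1 else 0) * RR n2 \<beta>2 n1 \<gamma>2 \<gamma>1)"
  proof -
    have "(\<Sum>n2\<in>KK a b. \<Sum>\<beta>2<N a b n2. \<Sum>n1\<in>KK d n2. \<Sum>\<gamma>2<N d n2 n1. \<Sum>\<gamma>1<N f n1 g.
                 (if gg C I V d a then ?v n2 \<beta>2 n1 \<gamma>2 \<gamma>1 else 0) * RR n2 \<beta>2 n1 \<gamma>2 \<gamma>1)
        = (\<Sum>n2\<in>KK a b. \<Sum>\<beta>2<N a b n2. \<Sum>n1\<in>UU. \<Sum>\<gamma>1<N f n1 g. \<Sum>\<gamma>2<N d n2 n1.
                 (if gg C I V d a then ?v n2 \<beta>2 n1 \<gamma>2 \<gamma>1 else 0) * RR n2 \<beta>2 n1 \<gamma>2 \<gamma>1)"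
    proof (rule sum.cong[OF refl], rule sum.cong[OF refl])
      fix n2 \<beta>2 assume n2: "n2 \<in> KK a b" and "\<beta>2 \<in> {..<N a b n2}"
      have "(\<Sum>n1\<in>KK d n2. \<Sum>\<gamma>2<N d n2 n1. \<Sum>\<gamma>1<N f n1 g.
                 (if gg C I V d a then ?v n2 \<beta>2 n1 \<gamma>2 \<gamma>1 else 0) * RR n2 \<beta>2 n1 \<gamma>2 \<gamma>1)
          = (\<Sum>n1\<in>UU. \<Sum>\<gamma>2<N d n2 n1. \<Sum>\<gamma>1<N f n1 g.
                 (if gg C I V d a then ?v n2 \<beta>2 n1 \<gamma>2 \<gamma>1 else 0) * RR n2 \<beta>2 n1 \<gamma>2 \<gamma>1)"
        by (rule sum_extend[OF UU_fin]) (use n2 UU_I in \<open>auto simp: UU_def KK_def\<close>)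
      also have "\<dots> = (\<Sum>n1\<in>UU. \<Sum>\<gamma>1<N f n1 g. \<Sum>\<gamma>2<N d n2 n1.
                 (if gg C I V d a then ?v n2 \<beta>2 n1 \<gamma>2 \<gamma>1 else 0) * RR n2 \<beta>2 n1 \<gamma>2 \<gamma>1)"
        by (rule sum.cong[OF refl], rule sum.swap)
      finally show "(\<Sum>n1\<in>KK d n2. \<Sum>\<gamma>2<N d n2 n1. \<Sum>\<gamma>1<N f n1 g.
                 (if gg C I V d a then ?v n2 \<beta>2 n1 \<gamma>2 \<gamma>1 else 0) * RR n2 \<beta>2 n1 \<gamma>2 \<gamma>1)
          = (\<Sum>n1\<in>UU. \<Sum>\<gamma>1<N f n1 g. \<Sum>\<gamma>2<N d n2 n1.
                 (if gg C I V d a then ?v n2 \<beta>2 n1 \<gamma>2 \<gamma>1 else 0) * RR n2 \<beta>2 n1 \<gamma>2 \<gamma>1)" .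
    qed
    also have "\<dots> = (\<Sum>n2\<in>KK a b. \<Sum>n1\<in>UU. \<Sum>\<gamma>1<N f n1 g. \<Sum>\<beta>2<N a b n2. \<Sum>\<gamma>2<N d n2 n1.
                 (if gg C I V d a then ?v n2 \<beta>2 n1 \<gamma>2 \<gamma>1 else 0) * RR n2 \<beta>2 n1 \<gamma>2 \<gamma>1)"
      by (rule sum.cong[OF refl], rule mv2)
    also have "\<dots> = (\<Sum>n1\<in>UU. \<Sum>\<gamma>1<N f n1 g. \<Sum>n2\<in>KK a b. \<Sum>\<beta>2<N a b n2. \<Sum>\<gamma>2<N d n2 n1.
                 (if gg C I V d a then ?v n2 \<beta>2 n1 \<gamma>2 \<gamma>1 else 0) * RR n2 \<beta>2 n1 \<gamma>2 \<gamma>1)"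
      by (rule mv2)
    finally show ?thesis .
  qed
  show ?thesis unfolding L1 L2 L3 R1 R2 by (intro sum.cong refl) simp
qed

end


definition LF where
  "LF v f d p a h b g \<delta>1 \<delta>2 \<delta>3 = (\<Sum>n\<in>KK d a. \<Sum>\<beta><N d a n. \<Sum>\<gamma><N f n h.
     (\<Sum>n1\<in>KK n b. \<Sum>\<beta>1<N n b n1. \<Sum>\<gamma>1<N f n1 g.
       (\<Sum>n2\<in>KK a b. \<Sum>\<beta>2<N a b n2. \<Sum>\<gamma>2<N d n2 n1.
          v (a, b, n2, \<beta>2) (d, n2, n1, \<gamma>2) (f, n1, g, \<gamma>1) * Ft d a n b n1 n2 \<beta>1 \<beta> \<beta>2 \<gamma>2)
       * Ft f n h b g n1 \<delta>1 \<gamma> \<beta>1 \<gamma>1) * Ft f d p a h n \<delta>2 \<delta>3 \<beta> \<gamma>)"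

definition RF where
  "RF v f d p a h b g \<delta>1 \<delta>2 \<delta>3 = (\<Sum>n2\<in>KK a b. \<Sum>\<beta>2<N a b n2. \<Sum>\<gamma><N p n2 g.
     (\<Sum>n1\<in>KK d n2. \<Sum>\<gamma>2<N d n2 n1. \<Sum>\<gamma>1<N f n1 g.
        (if gg C I V d a then v (a, b, n2, \<beta>2) (d, n2, n1, \<gamma>2) (f, n1, g, \<gamma>1) else 0)
        * Ft f d p n2 g n1 \<gamma> \<delta>3 \<gamma>2 \<gamma>1) * Ft p a h b g n2 \<delta>1 \<delta>2 \<beta>2 \<gamma>)"

lemma LF_RF: "f \<in> I \<Longrightarrow> d \<in> I \<Longrightarrow> p \<in> I \<Longrightarrow> a \<in> I \<Longrightarrow> h \<in> I \<Longrightarrow> b \<in> I \<Longrightarrow> g \<in> I \<Longrightarrow>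
   \<delta>1 < N h b g \<Longrightarrow> \<delta>2 < N p a h \<Longrightarrow> \<delta>3 < N f d p \<Longrightarrow> LF v f d p a h b g \<delta>1 \<delta>2 \<delta>3 = RF v f d p a h b g \<delta>1 \<delta>2 \<delta>3"
  unfolding LF_def RF_def by (rule pent_core)

lemma ev_op23: "f \<in> I \<Longrightarrow> d \<in> I \<Longrightarrow> p \<in> I \<Longrightarrow> a \<in> I \<Longrightarrow> h \<in> I \<Longrightarrow> \<delta>3 < N f d p \<Longrightarrow> \<delta>2 < N p a h \<Longrightarrow>
  op23 (tau C I V N eb ed) w P1 (p, a, h, \<delta>2) (f, d, p, \<delta>3) = Rt (\<lambda>x y. w P1 x y) f d p a h \<delta>2 \<delta>3"
  by (simp add: op23_def tau_eq)
lemma ev_op13: "f \<in> I \<Longrightarrow> n \<in> I \<Longrightarrow> h \<in> I \<Longrightarrow> b \<in> I \<Longrightarrow> g \<in> I \<Longrightarrow> \<gamma> < N f n h \<Longrightarrow> \<delta>1 < N h b g \<Longrightarrow>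
  op13 (tau C I V N eb ed) w (h, b, g, \<delta>1) X (f, n, h, \<gamma>) = Rt (\<lambda>x y. w x X y) f n h b g \<delta>1 \<gamma>"
  by (simp add: op13_def tau_eq)
lemma ev_op12: "d \<in> I \<Longrightarrow> a \<in> I \<Longrightarrow> n \<in> I \<Longrightarrow> b \<in> I \<Longrightarrow> n1 \<in> I \<Longrightarrow> \<beta> < N d a n \<Longrightarrow> \<beta>1 < N n b n1 \<Longrightarrow>
  op12 (tau C I V N eb ed) w (n, b, n1, \<beta>1) (d, a, n, \<beta>) Z = Rt (\<lambda>x y. w x y Z) d a n b n1 \<beta>1 \<beta>"
  by (simp add: op12_def tau_eq)

lemma LHS_eq:
  "op23 (tau C I V N eb ed) (op13 (tau C I V N eb ed) (op12 (tau C I V N eb ed) v)) (h, b, g, \<delta>1) (p, a, h', \<delta>2) (f, d, p', \<delta>3)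
   = (if p' = p \<and> h' = h \<and> f \<in> I \<and> d \<in> I \<and> p \<in> I \<and> a \<in> I \<and> h \<in> I \<and> b \<in> I \<and> g \<in> I \<and>
         \<delta>1 < N h b g \<and> \<delta>2 < N p a h \<and> \<delta>3 < N f d p then LF v f d p a h b g \<delta>1 \<delta>2 \<delta>3 else 0)"
proof (cases "p' = p \<and> h' = h \<and> f \<in> I \<and> d \<in> I \<and> p \<in> I \<and> a \<in> I \<and> h \<in> I \<and> b \<in> I \<and> g \<in> I \<and>
         \<delta>1 < N h b g \<and> \<delta>2 < N p a h \<and> \<delta>3 < N f d p")
  case True
  then have e: "p' = p" "h' = h" and I: "f \<in> I" "d \<in> I" "p \<in> I" "a \<in> I" "h \<in> I" "b \<in> I" "g \<in> I"
    and \<delta>: "\<delta>1 < N h b g" "\<delta>2 < N p a h" "\<delta>3 < N f d p" by auto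
  let ?T = "tau C I V N eb ed"
  have "op23 ?T (op13 ?T (op12 ?T v)) (h, b, g, \<delta>1) (p, a, h', \<delta>2) (f, d, p', \<delta>3)
     = Rt (\<lambda>x y. op13 ?T (op12 ?T v) (h, b, g, \<delta>1) x y) f d p a h \<delta>2 \<delta>3"
    unfolding e by (rule ev_op23) (use I \<delta> in auto)
  also have "\<dots> = LF v f d p a h b g \<delta>1 \<delta>2 \<delta>3"
    unfolding Rt_def LF_def
  proof (rule sum.cong[OF refl], rule sum.cong[OF refl], rule sum.cong[OF refl])
    fix n \<beta> \<gamma> assume n: "n \<in> KK d a" and \<beta>: "\<beta> \<in> {..<N d a n}" and \<gamma>: "\<gamma> \<in> {..<N f n h}"
    have nI: "n \<in> I" using n KK_I by blast
    have "op13 ?T (op12 ?T v) (h, b, g, \<delta>1) (d, a, n, \<beta>) (f, n, h, \<gamma>)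
       = Rt (\<lambda>x y. op12 ?T v x (d, a, n, \<beta>) y) f n h b g \<delta>1 \<gamma>"
      by (rule ev_op13) (use I \<delta> nI \<gamma> in auto)
    also have "\<dots> = (\<Sum>n1\<in>KK n b. \<Sum>\<beta>1<N n b n1. \<Sum>\<gamma>1<N f n1 g.
       (\<Sum>n2\<in>KK a b. \<Sum>\<beta>2<N a b n2. \<Sum>\<gamma>2<N d n2 n1.
          v (a, b, n2, \<beta>2) (d, n2, n1, \<gamma>2) (f, n1, g, \<gamma>1) * Ft d a n b n1 n2 \<beta>1 \<beta> \<beta>2 \<gamma>2)
       * Ft f n h b g n1 \<delta>1 \<gamma> \<beta>1 \<gamma>1)"
      unfolding Rt_def
    proof (rule sum.cong[OF refl], rule sum.cong[OF refl], rule sum.cong[OF refl])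
      fix n1 \<beta>1 \<gamma>1 assume n1: "n1 \<in> KK n b" and \<beta>1: "\<beta>1 \<in> {..<N n b n1}" and "\<gamma>1 \<in> {..<N f n1 g}"
      have n1I: "n1 \<in> I" using n1 KK_I by blast
      have "op12 ?T v (n, b, n1, \<beta>1) (d, a, n, \<beta>) (f, n1, g, \<gamma>1) = Rt (\<lambda>x y. v x y (f, n1, g, \<gamma>1)) d a n b n1 \<beta>1 \<beta>"
        by (rule ev_op12) (use I nI n1I \<beta> \<beta>1 in auto)
      then show "op12 ?T v (n, b, n1, \<beta>1) (d, a, n, \<beta>) (f, n1, g, \<gamma>1) * Ft f n h b g n1 \<delta>1 \<gamma> \<beta>1 \<gamma>1 =
          (\<Sum>n2\<in>KK a b. \<Sum>\<beta>2<N a b n2. \<Sum>\<gamma>2<N d n2 n1.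
          v (a, b, n2, \<beta>2) (d, n2, n1, \<gamma>2) (f, n1, g, \<gamma>1) * Ft d a n b n1 n2 \<beta>1 \<beta> \<beta>2 \<gamma>2)
          * Ft f n h b g n1 \<delta>1 \<gamma> \<beta>1 \<gamma>1"
        by (simp add: Rt_def)
    qed
    finally show "op13 ?T (op12 ?T v) (h, b, g, \<delta>1) (d, a, n, \<beta>) (f, n, h, \<gamma>) * Ft f d p a h n \<delta>2 \<delta>3 \<beta> \<gamma> =
      (\<Sum>n1\<in>KK n b. \<Sum>\<beta>1<N n b n1. \<Sum>\<gamma>1<N f n1 g.
       (\<Sum>n2\<in>KK a b. \<Sum>\<beta>2<N a b n2. \<Sum>\<gamma>2<N d n2 n1.
          v (a, b, n2, \<beta>2) (d, n2, n1, \<gamma>2) (f, n1, g, \<gamma>1) * Ft d a n b n1 n2 \<beta>1 \<beta> \<beta>2 \<gamma>2)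
       * Ft f n h b g n1 \<delta>1 \<gamma> \<beta>1 \<gamma>1) * Ft f d p a h n \<delta>2 \<delta>3 \<beta> \<gamma>" by simp
  qed
  finally show ?thesis using True by simp
next
  case False
  note nc = this
  show ?thesis
  proof (cases "p' = p \<and> f \<in> I \<and> d \<in> I \<and> p \<in> I \<and> a \<in> I \<and> h' \<in> I \<and> \<delta>3 < N f d p \<and> \<delta>2 < N p a h'")
    case False
    then have "op23 (tau C I V N eb ed) (op13 (tau C I V N eb ed) (op12 (tau C I V N eb ed) v)) (h, b, g, \<delta>1) (p, a, h', \<delta>2) (f, d, p', \<delta>3) = 0"
      by (auto simp: op23_def tau_eq)
    then show ?thesis by (subst if_not_P[OF nc]) simp
  next
    case True
    with \<open>\<not> _\<close> have c: "\<not> (h' = h \<and> b \<in> I \<and> g \<in> I \<and> \<delta>1 < N h b g)" by auto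
    have "op23 (tau C I V N eb ed) (op13 (tau C I V N eb ed) (op12 (tau C I V N eb ed) v)) (h, b, g, \<delta>1) (p, a, h', \<delta>2) (f, d, p', \<delta>3) = 0"
      using True c by (auto simp: op23_def op13_def tau_eq Rt_def intro!: sum.neutral)
    then show ?thesis by (subst if_not_P[OF nc]) simp
  qed
qed

lemma ev_op12b: "p \<in> I \<Longrightarrow> a \<in> I \<Longrightarrow> h \<in> I \<Longrightarrow> b \<in> I \<Longrightarrow> g \<in> I \<Longrightarrow> \<delta>2 < N p a h \<Longrightarrow> \<delta>1 < N h b g \<Longrightarrow>
  op12 (tau C I V N eb ed) w (h, b, g, \<delta>1) (p, a, h, \<delta>2) P3 = Rt (\<lambda>x y. w x y P3) p a h b g \<delta>1 \<delta>2"
  by (simp add: op12_def tau_eq)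
lemma ev_op23b: "f \<in> I \<Longrightarrow> d \<in> I \<Longrightarrow> p \<in> I \<Longrightarrow> n2 \<in> I \<Longrightarrow> g \<in> I \<Longrightarrow> \<delta>3 < N f d p \<Longrightarrow> \<gamma> < N p n2 g \<Longrightarrow>
  op23 (tau C I V N eb ed) w X (p, n2, g, \<gamma>) (f, d, p, \<delta>3) = Rt (\<lambda>x y. w X x y) f d p n2 g \<gamma> \<delta>3"
  by (simp add: op23_def tau_eq)

lemma RHS_eq:
  "op12 (tau C I V N eb ed) (op23 (tau C I V N eb ed) (op21_3 (lpi C I V N) v)) (h, b, g, \<delta>1) (p, a, h', \<delta>2) (f, d, p', \<delta>3)
   = (if p' = p \<and> h' = h \<and> f \<in> I \<and> d \<in> I \<and> p \<in> I \<and> a \<in> I \<and> h \<in> I \<and> b \<in> I \<and> g \<in> I \<and>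
         \<delta>1 < N h b g \<and> \<delta>2 < N p a h \<and> \<delta>3 < N f d p then RF v f d p a h b g \<delta>1 \<delta>2 \<delta>3 else 0)"
proof (cases "p' = p \<and> h' = h \<and> f \<in> I \<and> d \<in> I \<and> p \<in> I \<and> a \<in> I \<and> h \<in> I \<and> b \<in> I \<and> g \<in> I \<and>
         \<delta>1 < N h b g \<and> \<delta>2 < N p a h \<and> \<delta>3 < N f d p")
  case True
  then have e: "p' = p" "h' = h" and I: "f \<in> I" "d \<in> I" "p \<in> I" "a \<in> I" "h \<in> I" "b \<in> I" "g \<in> I"
    and \<delta>: "\<delta>1 < N h b g" "\<delta>2 < N p a h" "\<delta>3 < N f d p" by auto
  let ?T = "tau C I V N eb ed"
  let ?lv = "op21_3 (lpi C I V N) v"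
  have "op12 ?T (op23 ?T ?lv) (h, b, g, \<delta>1) (p, a, h', \<delta>2) (f, d, p', \<delta>3)
     = Rt (\<lambda>x y. op23 ?T ?lv x y (f, d, p, \<delta>3)) p a h b g \<delta>1 \<delta>2"
    unfolding e by (rule ev_op12b) (use I \<delta> in auto)
  also have "\<dots> = RF v f d p a h b g \<delta>1 \<delta>2 \<delta>3"
    unfolding Rt_def RF_def
  proof (rule sum.cong[OF refl], rule sum.cong[OF refl], rule sum.cong[OF refl])
    fix n2 \<beta>2 \<gamma> assume n2: "n2 \<in> KK a b" and \<beta>2: "\<beta>2 \<in> {..<N a b n2}" and \<gamma>: "\<gamma> \<in> {..<N p n2 g}"
    have n2I: "n2 \<in> I" using n2 KK_I by blast
    have "op23 ?T ?lv (a, b, n2, \<beta>2) (p, n2, g, \<gamma>) (f, d, p, \<delta>3) = Rt (\<lambda>x y. ?lv (a, b, n2, \<beta>2) x y) f d p n2 g \<gamma> \<delta>3"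
      by (rule ev_op23b) (use I \<delta> n2I \<gamma> in auto)
    also have "\<dots> = (\<Sum>n1\<in>KK d n2. \<Sum>\<gamma>2<N d n2 n1. \<Sum>\<gamma>1<N f n1 g.
        (if gg C I V d a then v (a, b, n2, \<beta>2) (d, n2, n1, \<gamma>2) (f, n1, g, \<gamma>1) else 0)
        * Ft f d p n2 g n1 \<gamma> \<delta>3 \<gamma>2 \<gamma>1)"
      unfolding Rt_def
    proof (rule sum.cong[OF refl], rule sum.cong[OF refl], rule sum.cong[OF refl])
      fix n1 \<gamma>2 \<gamma>1 assume n1: "n1 \<in> KK d n2" and \<gamma>2: "\<gamma>2 \<in> {..<N d n2 n1}" and \<gamma>1: "\<gamma>1 \<in> {..<N f n1 g}"
      have n1I: "n1 \<in> I" using n1 KK_I by blast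
      have "?lv (a, b, n2, \<beta>2) (d, n2, n1, \<gamma>2) (f, n1, g, \<gamma>1) =
            (if gg C I V d a then v (a, b, n2, \<beta>2) (d, n2, n1, \<gamma>2) (f, n1, g, \<gamma>1) else 0)"
        using I n1I n2I \<beta>2 \<gamma>2 by (simp add: op21_3_def lpi_def bidx_def)
      then show "?lv (a, b, n2, \<beta>2) (d, n2, n1, \<gamma>2) (f, n1, g, \<gamma>1) * Ft f d p n2 g n1 \<gamma> \<delta>3 \<gamma>2 \<gamma>1 =
          (if gg C I V d a then v (a, b, n2, \<beta>2) (d, n2, n1, \<gamma>2) (f, n1, g, \<gamma>1) else 0) * Ft f d p n2 g n1 \<gamma> \<delta>3 \<gamma>2 \<gamma>1"
        by simp
    qed
    finally show "op23 ?T ?lv (a, b, n2, \<beta>2) (p, n2, g, \<gamma>) (f, d, p, \<delta>3) * Ft p a h b g n2 \<delta>1 \<delta>2 \<beta>2 \<gamma> =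
      (\<Sum>n1\<in>KK d n2. \<Sum>\<gamma>2<N d n2 n1. \<Sum>\<gamma>1<N f n1 g.
        (if gg C I V d a then v (a, b, n2, \<beta>2) (d, n2, n1, \<gamma>2) (f, n1, g, \<gamma>1) else 0)
        * Ft f d p n2 g n1 \<gamma> \<delta>3 \<gamma>2 \<gamma>1) * Ft p a h b g n2 \<delta>1 \<delta>2 \<beta>2 \<gamma>" by simp
  qed
  finally show ?thesis using True by simp
next
  case False
  note nc = this
  show ?thesis
  proof (cases "h' = h \<and> p \<in> I \<and> a \<in> I \<and> h \<in> I \<and> b \<in> I \<and> g \<in> I \<and> \<delta>2 < N p a h \<and> \<delta>1 < N h b g")
    case False
    then have "op12 (tau C I V N eb ed) (op23 (tau C I V N eb ed) (op21_3 (lpi C I V N) v)) (h, b, g, \<delta>1) (p, a, h', \<delta>2) (f, d, p', \<delta>3) = 0"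
      by (auto simp: op12_def tau_eq)
    then show ?thesis by (subst if_not_P[OF nc]) simp
  next
    case True
    with \<open>\<not> _\<close> have c: "\<not> (p' = p \<and> f \<in> I \<and> d \<in> I \<and> \<delta>3 < N f d p)" by auto
    have "op12 (tau C I V N eb ed) (op23 (tau C I V N eb ed) (op21_3 (lpi C I V N) v)) (h, b, g, \<delta>1) (p, a, h', \<delta>2) (f, d, p', \<delta>3) = 0"
      using True c by (auto simp: op12_def op23_def tau_eq Rt_def intro!: sum.neutral)
    then show ?thesis by (subst if_not_P[OF nc]) simp
  qed
qed

lemma pentagon:
  "op23 (tau C I V N eb ed) (op13 (tau C I V N eb ed) (op12 (tau C I V N eb ed) v))
   = op12 (tau C I V N eb ed) (op23 (tau C I V N eb ed) (op21_3 (lpi C I V N) v))"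
proof (intro ext)
  fix P1 P2 P3 :: "'i \<times> 'i \<times> 'i \<times> nat"
  obtain h b g \<delta>1 where p1: "P1 = (h, b, g, \<delta>1)" by (cases P1) auto
  obtain p a h' \<delta>2 where p2: "P2 = (p, a, h', \<delta>2)" by (cases P2) auto
  obtain f d p' \<delta>3 where p3: "P3 = (f, d, p', \<delta>3)" by (cases P3) auto
  show "op23 (tau C I V N eb ed) (op13 (tau C I V N eb ed) (op12 (tau C I V N eb ed) v)) P1 P2 P3
      = op12 (tau C I V N eb ed) (op23 (tau C I V N eb ed) (op21_3 (lpi C I V N) v)) P1 P2 P3"
    unfolding p1 p2 p3 LHS_eq RHS_eq using LF_RF by auto
qed

end

theorem lemma3:
  fixes C :: "('o, 'm, 'k::field) mcat"
    and I :: "'i set" and V :: "'i \<Rightarrow> 'o" and st :: "'i \<Rightarrow> 'i"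
    and b d :: "'i \<Rightarrow> 'm"
    and N :: "'i \<Rightarrow> 'i \<Rightarrow> 'i \<Rightarrow> nat"
    and eb ed :: "'i \<Rightarrow> 'i \<Rightarrow> 'i \<Rightarrow> nat \<Rightarrow> 'm"
  assumes "psi_system C I V st b d"
    and "dual_bases C I V N eb ed"
  shows "(\<forall>v. inT3 I N v \<longrightarrow>
           op23 (tau C I V N eb ed) (op13 (tau C I V N eb ed) (op12 (tau C I V N eb ed) v))
         = op12 (tau C I V N eb ed) (op23 (tau C I V N eb ed) (op21_3 (lpi C I V N) v))) \<and>
         (\<forall>v. inT2 I N v \<longrightarrow> op21 (tau C I V N eb ed) (taubar C I V N eb ed v) = rpi C I V N v) \<and>
         (\<forall>v. inT2 I N v \<longrightarrow> taubar C I V N eb ed (op21 (tau C I V N eb ed) v) = lpi C I V N v)"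
proof -
  interpret psi_ctx C I V st b d N eb ed using assms by unfold_locales
  show ?thesis using pentagon inv1 inv2 by blast
qed

end
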